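(* Let $\mathrm{HL}+(\mathrm{cut})$ be $\mathrm{HL}$ enriched with the cut rule: if $H\to A$ and $G\to B$ are graph sequents and $e_0\in E_G$ is an edge with $lab(e_0)=A$, then from $H\to A$ and $G\to B$ infer $G[e_0/H]\to B$. If a graph sequent $F\to B$ is derivable in $\mathrm{HL}+(\mathrm{cut})$, then it is derivable in $\mathrm{HL}$.
   Context: Hypergraphs: given labels $C$ with $type:C\to\mathbb{N}$, a graph is $G=\langle V,E,att,lab,ext\rangle$ with finite $V,E$, $att:E\to V^\circledast$ (strings of pairwise distinct nodes), $lab:E\to C$ with $type(lab(e))=|att(e)|$, $ext\in V^\circledast$; $type(G)=|ext|$; isomorphic graphs identified. Handle $a^\bullet$: one edge labeled $a$ attached to $v_1\dots v_n$, all external in that order. Replacement $G[e/H]$ ($type(e)=type(H)$): remove $e$, insert a disjoint copy of $H$, fuse the $i$-th external node of $H$ with the $i$-th attachment node of $e$; simultaneous replacement $G[e_1/H_1,\dots,e_k/H_k]$; relabeling $G[e:=a]$. $\mathrm{HL}$: fix primitive types $Pr$ with $type:Pr\to\mathbb{N}$ (infinitely many of each arity); symbol $\$$ of any arity. Types: primitives; $N\div D$ where $D$ is a graph with exactly one edge $d_0$ labeled $\$$ and others labeled by types, $type(N)=type(D)$, $type(N\div D)=type_D(d_0)$; $\times(M)$ for a graph $M$ labeled by types (possibly edgeless), $type(\times(M))=type(M)$. Graph sequent $H\to A$: $H$ a type-labeled graph, $A$ a type, $type(H)=type(A)$. Axioms $p^\bullet\to p$ ($p\in Pr$). Rules: $(\div\to)$: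 for a type $N\div D$ with $E_D=\{d_0,\dots,d_k\}$, $lab(d_0)=\$$, and $e\in E_H$ labeled $N$, from $H\to A$, $H_1\to lab(d_1),\dots,H_k\to lab(d_k)$ infer $H[e/D][d_0:=N\div D][d_1/H_1,\dots,d_k/H_k]\to A$; $(\to\div)$: from $D[d_0/F]\to N$ infer $F\to N\div D$; $(\times\to)$: if $e\in E_G$ is labeled $\times(F)$, from $G[e/F]\to A$ infer $G\to A$; $(\to\times)$: with $E_M=\{m_1,\dots,m_l\}$ ($l\ge0$), from $H_i\to lab(m_i)$ for all $i$ infer $M[m_1/H_1,\dots,m_l/H_l]\to\times(M)$. *)

theory Defs
  imports Main
begin

text \<open>A hypergraph: node set, edge set (edge identifiers are naturals),
  attachment and labelling functions (only meaningful on the edge set),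
  and the string of external nodes.\<close>

datatype 'l hgraph =
  HG (gV: "nat set") (gE: "nat set") (gatt: "nat \<Rightarrow> nat list")
     (glab: "nat \<Rightarrow> 'l") (gext: "nat list")

definition wf_graph :: "'l hgraph \<Rightarrow> bool" where
  "wf_graph G \<longleftrightarrow> finite (gV G) \<and> finite (gE G)
     \<and> (\<forall>e\<in>gE G. distinct (gatt G e) \<and> set (gatt G e) \<subseteq> gV G)
     \<and> distinct (gext G) \<and> set (gext G) \<subseteq> gV G"

text \<open>Isomorphism of graphs, where labels are compared up to a relation R
  (used to identify types up to isomorphism of the graphs occurring in them).\<close>

definition giso_rel :: "('a \<Rightarrow> 'b \<Rightarrow> bool) \<Rightarrow> 'a hgraph \<Rightarrow> 'b hgraph \<Rightarrow> bool" where
  "giso_rel R G G' \<longleftrightarrow> (\<exists>f g. bij_betw f (gV G) (gV G') \<and> bij_betw g (gE G) (gE G')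
     \<and> (\<forall>e\<in>gE G. gatt G' (g e) = map f (gatt G e) \<and> R (glab G e) (glab G' (g e)))
     \<and> gext G' = map f (gext G))"

lemma giso_rel_mono[mono]: "R \<le> S \<Longrightarrow> giso_rel R \<le> giso_rel S"
  unfolding giso_rel_def le_fun_def le_bool_def by blast

definition handle :: "'l \<Rightarrow> nat \<Rightarrow> 'l hgraph" where
  "handle a n = HG {0..<n} {0} (\<lambda>_. [0..<n]) (\<lambda>_. a) [0..<n]"

definition voff :: "'l hgraph \<Rightarrow> nat" where
  "voff G = Suc (Max (insert 0 (gV G)))"

definition eoff :: "'l hgraph \<Rightarrow> nat" where
  "eoff G = Suc (Max (insert 0 (gE G)))"

text \<open>Replacement \<open>G[e/H]\<close>: remove e, add a disjoint copy of H (internal nodes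
  shifted by voff G, edges shifted by eoff G), fusing the i-th external node
  of H with the i-th attachment node of e.  Edges of G other than e keep
  their identifiers.\<close>

definition repl :: "'l hgraph \<Rightarrow> nat \<Rightarrow> 'l hgraph \<Rightarrow> 'l hgraph" where
  "repl G e H = (let kV = voff G; kE = eoff G;
     h = (\<lambda>v. case map_of (zip (gext H) (gatt G e)) v of Some w \<Rightarrow> w | None \<Rightarrow> kV + v) in
     HG (gV G \<union> h ` gV H)
        ((gE G - {e}) \<union> (\<lambda>x. kE + x) ` gE H)
        (\<lambda>x. if x < kE then gatt G x else map h (gatt H (x - kE)))
        (\<lambda>x. if x < kE then glab G x else glab H (x - kE))
        (gext G))"

text \<open>Simultaneous replacement \<open>G[e1/H1,...,ek/Hk]\<close> (for distinct edges e_i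
  of G), realised as successive replacement (edge identifiers of untouched
  edges are preserved, so this is the simultaneous replacement).\<close>

definition repls :: "'l hgraph \<Rightarrow> (nat \<times> 'l hgraph) list \<Rightarrow> 'l hgraph" where
  "repls G xs = foldl (\<lambda>G' p. repl G' (fst p) (snd p)) G xs"

definition relab :: "'l hgraph \<Rightarrow> nat \<Rightarrow> 'l \<Rightarrow> 'l hgraph" where
  "relab G e a = HG (gV G) (gE G) (gatt G) ((glab G)(e := a)) (gext G)"

text \<open>Primitive types are elements of 'p with arity function ar.
  \<open>Div N D\<close> is \<open>N \<div> D\<close>, where D is labelled by \<open>'p tp option\<close>, None standing for \$.
  \<open>Times M\<close> is \<open>\<times>(M)\<close>.\<close>

datatype 'p tp = Prim 'p | Div "'p tp" "'p tp option hgraph" | Times "'p tp hgraph"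

fun tp_type :: "('p \<Rightarrow> nat) \<Rightarrow> 'p tp \<Rightarrow> nat" where
  "tp_type ar (Prim p) = ar p"
| "tp_type ar (Div N D) = length (gatt D (SOME d. d \<in> gE D \<and> glab D d = None))"
| "tp_type ar (Times M) = length (gext M)"

inductive wf_tp :: "('p \<Rightarrow> nat) \<Rightarrow> 'p tp \<Rightarrow> bool" for ar where
  wf_Prim: "wf_tp ar (Prim p)"
| wf_Div: "\<lbrakk> wf_tp ar N; wf_graph D; d0 \<in> gE D; glab D d0 = None;
     \<forall>d\<in>gE D - {d0}. \<exists>t. glab D d = Some t \<and> wf_tp ar t \<and> tp_type ar t = length (gatt D d);
     tp_type ar N = length (gext D) \<rbrakk> \<Longrightarrow> wf_tp ar (Div N D)"
| wf_Times: "\<lbrakk> wf_graph M;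
     \<forall>m\<in>gE M. wf_tp ar (glab M m) \<and> tp_type ar (glab M m) = length (gatt M m) \<rbrakk>
     \<Longrightarrow> wf_tp ar (Times M)"

inductive tp_eq :: "'p tp \<Rightarrow> 'p tp \<Rightarrow> bool" where
  "tp_eq (Prim p) (Prim p)"
| "\<lbrakk> tp_eq N N'; giso_rel (rel_option tp_eq) D D' \<rbrakk> \<Longrightarrow> tp_eq (Div N D) (Div N' D')"
| "giso_rel tp_eq M M' \<Longrightarrow> tp_eq (Times M) (Times M')"

definition wf_seq :: "('p \<Rightarrow> nat) \<Rightarrow> 'p tp hgraph \<Rightarrow> 'p tp \<Rightarrow> bool" where
  "wf_seq ar H A \<longleftrightarrow> wf_graph H
     \<and> (\<forall>e\<in>gE H. wf_tp ar (glab H e) \<and> tp_type ar (glab H e) = length (gatt H e))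
     \<and> wf_tp ar A \<and> length (gext H) = tp_type ar A"

text \<open>Every rule requires its conclusion to be a graph sequent; the rule iso
  implements the identification of isomorphic graphs/types.\<close>

inductive deriv :: "('p \<Rightarrow> nat) \<Rightarrow> bool \<Rightarrow> 'p tp hgraph \<Rightarrow> 'p tp \<Rightarrow> bool"
  for ar :: "'p \<Rightarrow> nat" and cut :: bool where
  ax: "deriv ar cut (handle (Prim p) (ar p)) (Prim p)"
| iso: "\<lbrakk> deriv ar cut H A; giso_rel tp_eq H H'; tp_eq A A'; wf_seq ar H' A' \<rbrakk>
     \<Longrightarrow> deriv ar cut H' A'"
| div_left: "\<lbrakk> deriv ar cut H A; e \<in> gE H; glab H e = N; wf_tp ar (Div N D);
     d0 \<in> gE D; glab D d0 = None;
     distinct (map fst ds); set (map fst ds) = gE D - {d0};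
     \<forall>i<length ds. deriv ar cut (snd (ds ! i)) (the (glab D (fst (ds ! i))));
     G = repls (map_hgraph the (relab (repl (map_hgraph Some H) e D) (eoff H + d0) (Some (Div N D))))
               (map (\<lambda>p. (eoff H + fst p, snd p)) ds);
     wf_seq ar G A \<rbrakk>
     \<Longrightarrow> deriv ar cut G A"
| div_right: "\<lbrakk> deriv ar cut (map_hgraph the (repl D d0 (map_hgraph Some F))) N;
     wf_tp ar (Div N D); d0 \<in> gE D; glab D d0 = None; wf_seq ar F (Div N D) \<rbrakk>
     \<Longrightarrow> deriv ar cut F (Div N D)"
| times_left: "\<lbrakk> deriv ar cut (repl G e F) A; e \<in> gE G; glab G e = Times F; wf_seq ar G A \<rbrakk>
     \<Longrightarrow> deriv ar cut G A"
| times_right: "\<lbrakk> distinct (map fst ms); set (map fst ms) = gE M;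
     \<forall>i<length ms. deriv ar cut (snd (ms ! i)) (glab M (fst (ms ! i)));
     wf_tp ar (Times M); G = repls M ms; wf_seq ar G (Times M) \<rbrakk>
     \<Longrightarrow> deriv ar cut G (Times M)"
| cut_rule: "\<lbrakk> cut; deriv ar cut H A; deriv ar cut G B; e0 \<in> gE G; glab G e0 = A;
     wf_seq ar (repl G e0 H) B \<rbrakk>
     \<Longrightarrow> deriv ar cut (repl G e0 H) B"

abbreviation HL :: "('p \<Rightarrow> nat) \<Rightarrow> 'p tp hgraph \<Rightarrow> 'p tp \<Rightarrow> bool" where
  "HL ar \<equiv> deriv ar False"

abbreviation HL_cut :: "('p \<Rightarrow> nat) \<Rightarrow> 'p tp hgraph \<Rightarrow> 'p tp \<Rightarrow> bool" where
  "HL_cut ar \<equiv> deriv ar True"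

end

theory Submission
  imports Defs
begin


definition iso_via :: "('a \<Rightarrow> 'b \<Rightarrow> bool) \<Rightarrow> (nat \<Rightarrow> nat) \<Rightarrow> (nat \<Rightarrow> nat) \<Rightarrow> 'a hgraph \<Rightarrow> 'b hgraph \<Rightarrow> bool" where
"iso_via R f g G G' \<longleftrightarrow> bij_betw f (gV G) (gV G') \<and> bij_betw g (gE G) (gE G')
  \<and> (\<forall>e\<in>gE G. gatt G' (g e) = map f (gatt G e) \<and> R (glab G e) (glab G' (g e)))
  \<and> gext G' = map f (gext G)"

lemma giso_rel_iff: "giso_rel R G G' \<longleftrightarrow> (\<exists>f g. iso_via R f g G G')"
  unfolding giso_rel_def iso_via_def by blast

lemma iso_via_mono: "iso_via R f g G G' \<Longrightarrow> (\<And>a b. R a b \<Longrightarrow> S a b) \<Longrightarrow> iso_via S f g G G'"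
  unfolding iso_via_def by blast

definition rmap :: "'a hgraph \<Rightarrow> nat \<Rightarrow> 'b hgraph \<Rightarrow> nat \<Rightarrow> nat" where
"rmap G e H v = (case map_of (zip (gext H) (gatt G e)) v of Some w \<Rightarrow> w | None \<Rightarrow> voff G + v)"

lemma gV_repl[simp]: "gV (repl G e H) = gV G \<union> rmap G e H ` gV H"
  by (simp add: repl_def rmap_def Let_def)
lemma gE_repl[simp]: "gE (repl G e H) = (gE G - {e}) \<union> (\<lambda>x. eoff G + x) ` gE H"
  by (simp add: repl_def Let_def)
lemma gatt_repl: "gatt (repl G e H) x = (if x < eoff G then gatt G x else map (rmap G e H) (gatt H (x - eoff G)))"
  by (simp add: repl_def rmap_def Let_def)
lemma glab_repl: "glab (repl G e H) x = (if x < eoff G then glab G x else glab H (x - eoff G))"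
  by (simp add: repl_def Let_def)
lemma gext_repl[simp]: "gext (repl G e H) = gext G"
  by (simp add: repl_def Let_def)

lemma voff_gt: "finite (gV G) \<Longrightarrow> v \<in> gV G \<Longrightarrow> v < voff G"
  unfolding voff_def by (simp add: le_imp_less_Suc)
lemma eoff_gt: "finite (gE G) \<Longrightarrow> x \<in> gE G \<Longrightarrow> x < eoff G"
  unfolding eoff_def by (simp add: le_imp_less_Suc)

lemma gatt_repl_old[simp]: "finite (gE G) \<Longrightarrow> x \<in> gE G \<Longrightarrow> gatt (repl G e H) x = gatt G x"
  by (simp add: gatt_repl eoff_gt)
lemma glab_repl_old[simp]: "finite (gE G) \<Longrightarrow> x \<in> gE G \<Longrightarrow> glab (repl G e H) x = glab G x"
  by (simp add: glab_repl eoff_gt)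
lemma gatt_repl_new[simp]: "gatt (repl G e H) (eoff G + y) = map (rmap G e H) (gatt H y)"
  by (simp add: gatt_repl)
lemma glab_repl_new[simp]: "glab (repl G e H) (eoff G + y) = glab H y"
  by (simp add: glab_repl)

lemma rmap_ext:
  assumes "distinct (gext H)" "length (gext H) = length (gatt G e)" "i < length (gext H)"
  shows "rmap G e H (gext H ! i) = gatt G e ! i"
  using assms by (simp add: rmap_def map_of_zip_nth)

lemma rmap_int:
  assumes "length (gext H) = length (gatt G e)" "v \<notin> set (gext H)"
  shows "rmap G e H v = voff G + v"
proof -
  have "map_of (zip (gext H) (gatt G e)) v = None" using assms by (simp add: map_of_zip_is_None)
  then show ?thesis by (simp add: rmap_def)
qed

lemma map_rmap_ext:
  assumes "distinct (gext H)" "length (gext H) = length (gatt G e)"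
  shows "map (rmap G e H) (gext H) = gatt G e"
  using assms by (auto intro!: nth_equalityI simp: rmap_ext)

lemma rmap_ext_in:
  assumes "wf_graph G" "e \<in> gE G" "distinct (gext H)" "length (gext H) = length (gatt G e)" "v \<in> set (gext H)"
  shows "rmap G e H v \<in> gV G"
proof -
  obtain i where i: "i < length (gext H)" "v = gext H ! i" using assms(5) by (metis in_set_conv_nth)
  then have "rmap G e H v = gatt G e ! i" using assms rmap_ext by metis
  moreover have "gatt G e ! i \<in> set (gatt G e)" using i assms(4) by simp
  ultimately show ?thesis using assms(1,2) unfolding wf_graph_def by force
qed

lemma rmap_int_notin:
  assumes "wf_graph G" "length (gext H) = length (gatt G e)" "v \<notin> set (gext H)"
  shows "rmap G e H v \<notin> gV G"
  using assms rmap_int[OF assms(2,3)] voff_gt[of G "voff G + v"] unfolding wf_graph_def by auto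

lemma rmap_inj:
  assumes "wf_graph G" "e \<in> gE G" "wf_graph H" "length (gext H) = length (gatt G e)"
  shows "inj_on (rmap G e H) (gV H)"
proof (rule inj_onI)
  fix v w assume v: "v \<in> gV H" and w: "w \<in> gV H" and eq: "rmap G e H v = rmap G e H w"
  have dH: "distinct (gext H)" and dG: "distinct (gatt G e)" using assms unfolding wf_graph_def by auto
  have ein: "\<And>u. u \<in> set (gext H) \<Longrightarrow> rmap G e H u \<in> gV G" using rmap_ext_in[OF assms(1,2) dH assms(4)] .
  have eout: "\<And>u. u \<notin> set (gext H) \<Longrightarrow> rmap G e H u \<notin> gV G" using rmap_int_notin[OF assms(1,4)] .
  show "v = w"
  proof (cases "v \<in> set (gext H)")
    case a1: True
    show ?thesis
    proof (cases "w \<in> set (gext H)")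
      case a2: True
      obtain i where i: "i < length (gext H)" "v = gext H ! i" using a1 by (metis in_set_conv_nth)
      obtain j where j: "j < length (gext H)" "w = gext H ! j" using a2 by (metis in_set_conv_nth)
      have "gatt G e ! i = gatt G e ! j" using eq i j rmap_ext[OF dH assms(4)] by metis
      then have "i = j" using dG i j assms(4) by (simp add: nth_eq_iff_index_eq)
      then show ?thesis using i j by simp
    next
      case False then show ?thesis using a1 eq ein eout by metis
    qed
  next
    case a1: False
    show ?thesis
    proof (cases "w \<in> set (gext H)")
      case True then show ?thesis using a1 eq ein eout by metis
    next
      case False then show ?thesis using a1 eq rmap_int[OF assms(4)] by simp
    qed
  qed
qed

lemma wf_graph_repl:
  assumes "wf_graph G" "e \<in> gE G" "wf_graph H" "length (gext H) = length (gatt G e)"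
  shows "wf_graph (repl G e H)"
proof -
  have inj: "inj_on (rmap G e H) (gV H)" by (rule rmap_inj[OF assms])
  have fin: "finite (gE G)" using assms(1) unfolding wf_graph_def by auto
  have "\<forall>x\<in>gE (repl G e H). distinct (gatt (repl G e H) x) \<and> set (gatt (repl G e H) x) \<subseteq> gV (repl G e H)"
  proof
    fix x assume x: "x \<in> gE (repl G e H)"
    show "distinct (gatt (repl G e H) x) \<and> set (gatt (repl G e H) x) \<subseteq> gV (repl G e H)"
    proof (cases "x \<in> gE G - {e}")
      case True then show ?thesis using assms(1) fin unfolding wf_graph_def by auto
    next
      case False
      then obtain y where y: "y \<in> gE H" "x = eoff G + y" using x by auto
      have "distinct (gatt H y)" "set (gatt H y) \<subseteq> gV H" using assms(3) y unfolding wf_graph_def by auto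
      then show ?thesis using y inj by (auto simp: distinct_map intro: inj_on_subset)
    qed
  qed
  then show ?thesis using assms unfolding wf_graph_def by auto
qed


definition is_sr :: "('a \<Rightarrow> 'b \<Rightarrow> bool) \<Rightarrow> 'a hgraph \<Rightarrow> nat set \<Rightarrow> (nat \<Rightarrow> 'a hgraph) \<Rightarrow> 'b hgraph
   \<Rightarrow> (nat \<Rightarrow> nat) \<Rightarrow> (nat \<Rightarrow> nat \<Rightarrow> nat) \<Rightarrow> (nat \<Rightarrow> nat) \<Rightarrow> (nat \<Rightarrow> nat \<Rightarrow> nat) \<Rightarrow> bool" where
"is_sr R G S Hs X iG iH jG jH \<longleftrightarrow>
  wf_graph G \<and> S \<subseteq> gE G \<and> (\<forall>s\<in>S. wf_graph (Hs s) \<and> length (gext (Hs s)) = length (gatt G s)) \<and>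
  gV X = iG ` gV G \<union> (\<Union>s\<in>S. iH s ` gV (Hs s)) \<and>
  inj_on iG (gV G) \<and> (\<forall>s\<in>S. inj_on (iH s) (gV (Hs s))) \<and>
  (\<forall>s\<in>S. map (iH s) (gext (Hs s)) = map iG (gatt G s)) \<and>
  (\<forall>s\<in>S. \<forall>v\<in>gV (Hs s) - set (gext (Hs s)). iH s v \<notin> iG ` gV G) \<and>
  (\<forall>s\<in>S. \<forall>t\<in>S. \<forall>v\<in>gV (Hs s) - set (gext (Hs s)). \<forall>w\<in>gV (Hs t) - set (gext (Hs t)). iH s v = iH t w \<longrightarrow> s = t) \<and>
  gE X = jG ` (gE G - S) \<union> (\<Union>s\<in>S. jH s ` gE (Hs s)) \<and>
  inj_on jG (gE G - S) \<and> (\<forall>s\<in>S. inj_on (jH s) (gE (Hs s))) \<and>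
  (\<forall>x\<in>gE G - S. \<forall>s\<in>S. \<forall>y\<in>gE (Hs s). jG x \<noteq> jH s y) \<and>
  (\<forall>s\<in>S. \<forall>t\<in>S. \<forall>y\<in>gE (Hs s). \<forall>z\<in>gE (Hs t). jH s y = jH t z \<longrightarrow> s = t) \<and>
  (\<forall>x\<in>gE G - S. gatt X (jG x) = map iG (gatt G x) \<and> R (glab G x) (glab X (jG x))) \<and>
  (\<forall>s\<in>S. \<forall>y\<in>gE (Hs s). gatt X (jH s y) = map (iH s) (gatt (Hs s) y) \<and> R (glab (Hs s) y) (glab X (jH s y))) \<and>
  gext X = map iG (gext G)"

definition bmap :: "(nat \<Rightarrow> nat) \<Rightarrow> (nat \<Rightarrow> nat \<Rightarrow> nat) \<Rightarrow> nat set \<Rightarrow> (nat \<Rightarrow> nat set) \<Rightarrow> nat set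
   \<Rightarrow> (nat \<Rightarrow> nat) \<Rightarrow> (nat \<Rightarrow> nat \<Rightarrow> nat) \<Rightarrow> nat \<Rightarrow> nat" where
"bmap i ih A Bs S i' ih' u = (if u \<in> i ` A then i' (inv_into A i u)
   else (let s = (SOME s. s \<in> S \<and> u \<in> ih s ` Bs s) in ih' s (inv_into (Bs s) (ih s) u)))"

lemma bmap_A: "inj_on i A \<Longrightarrow> a \<in> A \<Longrightarrow> bmap i ih A Bs S i' ih' (i a) = i' a"
  unfolding bmap_def by simp

lemma bmap_B:
  assumes "s \<in> S" "b \<in> Bs s" "inj_on (ih s) (Bs s)" "ih s b \<notin> i ` A"
    "\<forall>t\<in>S. \<forall>c\<in>Bs t. ih t c = ih s b \<longrightarrow> t = s"
  shows "bmap i ih A Bs S i' ih' (ih s b) = ih' s b"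
proof -
  have ex: "\<exists>t. t \<in> S \<and> ih s b \<in> ih t ` Bs t" using assms(1,2) by blast
  define t where "t = (SOME t. t \<in> S \<and> ih s b \<in> ih t ` Bs t)"
  have t: "t \<in> S \<and> ih s b \<in> ih t ` Bs t" unfolding t_def by (rule someI_ex[OF ex])
  then obtain c where "c \<in> Bs t" "ih s b = ih t c" by blast
  then have "t = s" using assms(5) t by metis
  then show ?thesis using assms(4) unfolding bmap_def t_def[symmetric] Let_def
    using assms(2,3) by simp
qed

lemma is_srR_1: "is_sr R G S Hs X iG iH jG jH \<Longrightarrow> wf_graph G"
  unfolding is_sr_def by (elim conjE) assumption

lemma is_srR_2: "is_sr R G S Hs X iG iH jG jH \<Longrightarrow> S \<subseteq> gE G"
  unfolding is_sr_def by (elim conjE) assumption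

lemma is_srR_3: "is_sr R G S Hs X iG iH jG jH \<Longrightarrow> (\<forall>s\<in>S. wf_graph (Hs s) \<and> length (gext (Hs s)) = length (gatt G s))"
  unfolding is_sr_def by (elim conjE) assumption

lemma is_srR_4: "is_sr R G S Hs X iG iH jG jH \<Longrightarrow> gV X = iG ` gV G \<union> (\<Union>s\<in>S. iH s ` gV (Hs s))"
  unfolding is_sr_def by (elim conjE) assumption

lemma is_srR_5: "is_sr R G S Hs X iG iH jG jH \<Longrightarrow> inj_on iG (gV G)"
  unfolding is_sr_def by (elim conjE) assumption

lemma is_srR_6: "is_sr R G S Hs X iG iH jG jH \<Longrightarrow> (\<forall>s\<in>S. inj_on (iH s) (gV (Hs s)))"
  unfolding is_sr_def by (elim conjE) assumption

lemma is_srR_7: "is_sr R G S Hs X iG iH jG jH \<Longrightarrow> (\<forall>s\<in>S. map (iH s) (gext (Hs s)) = map iG (gatt G s))"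
  unfolding is_sr_def by (elim conjE) assumption

lemma is_srR_8: "is_sr R G S Hs X iG iH jG jH \<Longrightarrow> (\<forall>s\<in>S. \<forall>v\<in>gV (Hs s) - set (gext (Hs s)). iH s v \<notin> iG ` gV G)"
  unfolding is_sr_def by (elim conjE) assumption

lemma is_srR_9: "is_sr R G S Hs X iG iH jG jH \<Longrightarrow> (\<forall>s\<in>S. \<forall>t\<in>S. \<forall>v\<in>gV (Hs s) - set (gext (Hs s)). \<forall>w\<in>gV (Hs t) - set (gext (Hs t)). iH s v = iH t w \<longrightarrow> s = t)"
  unfolding is_sr_def by (elim conjE) assumption

lemma is_srR_10: "is_sr R G S Hs X iG iH jG jH \<Longrightarrow> gE X = jG ` (gE G - S) \<union> (\<Union>s\<in>S. jH s ` gE (Hs s))"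
  unfolding is_sr_def by (elim conjE) assumption

lemma is_srR_11: "is_sr R G S Hs X iG iH jG jH \<Longrightarrow> inj_on jG (gE G - S)"
  unfolding is_sr_def by (elim conjE) assumption

lemma is_srR_12: "is_sr R G S Hs X iG iH jG jH \<Longrightarrow> (\<forall>s\<in>S. inj_on (jH s) (gE (Hs s)))"
  unfolding is_sr_def by (elim conjE) assumption

lemma is_srR_13: "is_sr R G S Hs X iG iH jG jH \<Longrightarrow> (\<forall>x\<in>gE G - S. \<forall>s\<in>S. \<forall>y\<in>gE (Hs s). jG x \<noteq> jH s y)"
  unfolding is_sr_def by (elim conjE) assumption

lemma is_srR_14: "is_sr R G S Hs X iG iH jG jH \<Longrightarrow> (\<forall>s\<in>S. \<forall>t\<in>S. \<forall>y\<in>gE (Hs s). \<forall>z\<in>gE (Hs t). jH s y = jH t z \<longrightarrow> s = t)"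
  unfolding is_sr_def by (elim conjE) assumption

lemma is_srR_15: "is_sr R G S Hs X iG iH jG jH \<Longrightarrow> (\<forall>x\<in>gE G - S. gatt X (jG x) = map iG (gatt G x) \<and> R (glab G x) (glab X (jG x)))"
  unfolding is_sr_def by (elim conjE) assumption

lemma is_srR_16: "is_sr R G S Hs X iG iH jG jH \<Longrightarrow> (\<forall>s\<in>S. \<forall>y\<in>gE (Hs s). gatt X (jH s y) = map (iH s) (gatt (Hs s) y) \<and> R (glab (Hs s) y) (glab X (jH s y)))"
  unfolding is_sr_def by (elim conjE) assumption

lemma is_srR_17: "is_sr R G S Hs X iG iH jG jH \<Longrightarrow> gext X = map iG (gext G)"
  unfolding is_sr_def by (elim conjE) assumption

lemma is_srD_1: assumes "is_sr R G S Hs X iG iH jG jH" shows "wf_graph G"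
  using is_srR_1[OF assms] by blast

lemma is_srD_2: assumes "is_sr R G S Hs X iG iH jG jH" shows "S \<subseteq> gE G"
  using is_srR_2[OF assms] by blast

lemma is_srD_3: assumes "is_sr R G S Hs X iG iH jG jH" shows "\<And>s. s\<in>S \<Longrightarrow> wf_graph (Hs s)"
  using is_srR_3[OF assms] by blast

lemma is_srD_4: assumes "is_sr R G S Hs X iG iH jG jH" shows "\<And>s. s\<in>S \<Longrightarrow> length (gext (Hs s)) = length (gatt G s)"
  using is_srR_3[OF assms] by blast

lemma is_srD_5: assumes "is_sr R G S Hs X iG iH jG jH" shows "gV X = iG ` gV G \<union> (\<Union>s\<in>S. iH s ` gV (Hs s))"
  using is_srR_4[OF assms] by blast

lemma is_srD_6: assumes "is_sr R G S Hs X iG iH jG jH" shows "inj_on iG (gV G)"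
  using is_srR_5[OF assms] by blast

lemma is_srD_7: assumes "is_sr R G S Hs X iG iH jG jH" shows "\<And>s. s\<in>S \<Longrightarrow> inj_on (iH s) (gV (Hs s))"
  using is_srR_6[OF assms] by blast

lemma is_srD_8: assumes "is_sr R G S Hs X iG iH jG jH" shows "\<And>s. s\<in>S \<Longrightarrow> map (iH s) (gext (Hs s)) = map iG (gatt G s)"
  using is_srR_7[OF assms] by blast

lemma is_srD_9: assumes "is_sr R G S Hs X iG iH jG jH" shows "\<And>s v. s\<in>S \<Longrightarrow> v\<in>gV (Hs s) \<Longrightarrow> v \<notin> set (gext (Hs s)) \<Longrightarrow> iH s v \<notin> iG ` gV G"
  using is_srR_8[OF assms] by blast

lemma is_srD_10: assumes "is_sr R G S Hs X iG iH jG jH" shows "\<And>s t v w. s\<in>S \<Longrightarrow> t\<in>S \<Longrightarrow> v\<in>gV (Hs s) \<Longrightarrow> v \<notin> set (gext (Hs s)) \<Longrightarrow> w\<in>gV (Hs t) \<Longrightarrow> w \<notin> set (gext (Hs t)) \<Longrightarrow> iH s v = iH t w \<Longrightarrow> s = t"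
  using is_srR_9[OF assms] by blast

lemma is_srD_11: assumes "is_sr R G S Hs X iG iH jG jH" shows "gE X = jG ` (gE G - S) \<union> (\<Union>s\<in>S. jH s ` gE (Hs s))"
  using is_srR_10[OF assms] by blast

lemma is_srD_12: assumes "is_sr R G S Hs X iG iH jG jH" shows "inj_on jG (gE G - S)"
  using is_srR_11[OF assms] by blast

lemma is_srD_13: assumes "is_sr R G S Hs X iG iH jG jH" shows "\<And>s. s\<in>S \<Longrightarrow> inj_on (jH s) (gE (Hs s))"
  using is_srR_12[OF assms] by blast

lemma is_srD_14: assumes "is_sr R G S Hs X iG iH jG jH" shows "\<And>x s y. x\<in>gE G - S \<Longrightarrow> s\<in>S \<Longrightarrow> y\<in>gE (Hs s) \<Longrightarrow> jG x \<noteq> jH s y"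
  using is_srR_13[OF assms] by blast

lemma is_srD_15: assumes "is_sr R G S Hs X iG iH jG jH" shows "\<And>s t y z. s\<in>S \<Longrightarrow> t\<in>S \<Longrightarrow> y\<in>gE (Hs s) \<Longrightarrow> z\<in>gE (Hs t) \<Longrightarrow> jH s y = jH t z \<Longrightarrow> s = t"
  using is_srR_14[OF assms] by blast

lemma is_srD_16: assumes "is_sr R G S Hs X iG iH jG jH" shows "\<And>x. x\<in>gE G - S \<Longrightarrow> gatt X (jG x) = map iG (gatt G x)"
  using is_srR_15[OF assms] by blast

lemma is_srD_17: assumes "is_sr R G S Hs X iG iH jG jH" shows "\<And>x. x\<in>gE G - S \<Longrightarrow> R (glab G x) (glab X (jG x))"
  using is_srR_15[OF assms] by blast

lemma is_srD_18: assumes "is_sr R G S Hs X iG iH jG jH" shows "\<And>s y. s\<in>S \<Longrightarrow> y\<in>gE (Hs s) \<Longrightarrow> gatt X (jH s y) = map (iH s) (gatt (Hs s) y)"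
  using is_srR_16[OF assms] by blast

lemma is_srD_19: assumes "is_sr R G S Hs X iG iH jG jH" shows "\<And>s y. s\<in>S \<Longrightarrow> y\<in>gE (Hs s) \<Longrightarrow> R (glab (Hs s) y) (glab X (jH s y))"
  using is_srR_16[OF assms] by blast

lemma is_srD_20: assumes "is_sr R G S Hs X iG iH jG jH" shows "gext X = map iG (gext G)"
  using is_srR_17[OF assms] by blast

lemmas is_srD = is_srD_1 is_srD_2 is_srD_3 is_srD_4 is_srD_5 is_srD_6 is_srD_7 is_srD_8 is_srD_9 is_srD_10 is_srD_11 is_srD_12 is_srD_13 is_srD_14 is_srD_15 is_srD_16 is_srD_17 is_srD_18 is_srD_19 is_srD_20

lemma sr_ext_node:
  assumes "is_sr R G S Hs X iG iH jG jH" "s \<in> S" "w \<in> set (gext (Hs s))"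
  shows "\<exists>v\<in>set (gatt G s). iH s w = iG v"
proof -
  obtain k where k: "k < length (gext (Hs s))" "w = gext (Hs s) ! k" using assms(3) by (metis in_set_conv_nth)
  have "map (iH s) (gext (Hs s)) ! k = map iG (gatt G s) ! k" using is_srD(8)[OF assms(1,2)] by simp
  then have "iH s w = iG (gatt G s ! k)" using k is_srD(4)[OF assms(1,2)] by simp
  moreover have "gatt G s ! k \<in> set (gatt G s)" using k is_srD(4)[OF assms(1,2)] by simp
  ultimately show ?thesis by blast
qed

lemma sr_att_sub: "is_sr R G S Hs X iG iH jG jH \<Longrightarrow> s \<in> S \<Longrightarrow> set (gatt G s) \<subseteq> gV G"
  using is_srD(1,2)[of R G S Hs X iG iH jG jH] unfolding wf_graph_def by blast

lemma sr_nmap: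
  assumes X: "is_sr R1 G S Hs X iG iH jG jH" and Y: "is_sr R2 G S Hs Y iG' iH' jG' jH'"
  defines "f \<equiv> bmap iG iH (gV G) (\<lambda>s. gV (Hs s)) S iG' iH'"
  shows "\<And>v. v \<in> gV G \<Longrightarrow> f (iG v) = iG' v"
    and "\<And>s w. s \<in> S \<Longrightarrow> w \<in> gV (Hs s) \<Longrightarrow> f (iH s w) = iH' s w"
proof -
  show A: "\<And>v. v \<in> gV G \<Longrightarrow> f (iG v) = iG' v" unfolding f_def using bmap_A is_srD(6)[OF X] by metis
  fix s w assume s: "s \<in> S" and w: "w \<in> gV (Hs s)"
  show "f (iH s w) = iH' s w"
  proof (cases "w \<in> set (gext (Hs s))")
    case True
    obtain k where k: "k < length (gext (Hs s))" "w = gext (Hs s) ! k" using True by (metis in_set_conv_nth)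
    have l: "length (gext (Hs s)) = length (gatt G s)" using is_srD(4)[OF X s] .
    have "map (iH s) (gext (Hs s)) ! k = map iG (gatt G s) ! k" using is_srD(8)[OF X s] by simp
    then have 1: "iH s w = iG (gatt G s ! k)" using k l by simp
    have "map (iH' s) (gext (Hs s)) ! k = map iG' (gatt G s) ! k" using is_srD(8)[OF Y s] by simp
    then have 2: "iH' s w = iG' (gatt G s ! k)" using k l by simp
    have "gatt G s ! k \<in> gV G" using sr_att_sub[OF X s] k l by (metis nth_mem subsetD)
    then show ?thesis using 1 2 A by simp
  next
    case False
    have n: "iH s w \<notin> iG ` gV G" using is_srD(9)[OF X s w False] .
    have u: "\<forall>t\<in>S. \<forall>c\<in>gV (Hs t). iH t c = iH s w \<longrightarrow> t = s"
    proof (intro ballI impI)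
      fix t c assume t: "t \<in> S" and c: "c \<in> gV (Hs t)" and eq: "iH t c = iH s w"
      show "t = s"
      proof (cases "c \<in> set (gext (Hs t))")
        case True
        then obtain v where "v \<in> set (gatt G t)" "iH t c = iG v" using sr_ext_node[OF X t] by blast
        then have "iH s w \<in> iG ` gV G" using eq sr_att_sub[OF X t] by (metis image_eqI subsetD)
        then show ?thesis using n by blast
      next
        case False2: False
        show ?thesis using is_srD(10)[OF X t s c False2 w False eq] .
      qed
    qed
    show ?thesis unfolding f_def by (rule bmap_B[OF s w is_srD(7)[OF X s] n u])
  qed
qed

lemma sr_emap:
  assumes X: "is_sr R1 G S Hs X iG iH jG jH" and Y: "is_sr R2 G S Hs Y iG' iH' jG' jH'"
  defines "g \<equiv> bmap jG jH (gE G - S) (\<lambda>s. gE (Hs s)) S jG' jH'"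
  shows "\<And>x. x \<in> gE G - S \<Longrightarrow> g (jG x) = jG' x"
    and "\<And>s y. s \<in> S \<Longrightarrow> y \<in> gE (Hs s) \<Longrightarrow> g (jH s y) = jH' s y"
proof -
  show "\<And>x. x \<in> gE G - S \<Longrightarrow> g (jG x) = jG' x" unfolding g_def using bmap_A is_srD(12)[OF X] by metis
  fix s y assume s: "s \<in> S" and y: "y \<in> gE (Hs s)"
  have n: "jH s y \<notin> jG ` (gE G - S)" using is_srD(14)[OF X _ s y] by (metis imageE)
  have u: "\<forall>t\<in>S. \<forall>c\<in>gE (Hs t). jH t c = jH s y \<longrightarrow> t = s" using is_srD(15)[OF X] s y by metis
  show "g (jH s y) = jH' s y" unfolding g_def by (rule bmap_B[OF s y is_srD(13)[OF X s] n u])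
qed

lemma sr_unique:
  assumes X: "is_sr R1 G S Hs X iG iH jG jH" and Y: "is_sr R2 G S Hs Y iG' iH' jG' jH'"
  shows "\<exists>f g. iso_via (\<lambda>a b. \<exists>c. R1 c a \<and> R2 c b) f g X Y
     \<and> (\<forall>x\<in>gE G - S. g (jG x) = jG' x) \<and> (\<forall>s\<in>S. \<forall>y\<in>gE (Hs s). g (jH s y) = jH' s y)"
proof -
  define f where "f = bmap iG iH (gV G) (\<lambda>s. gV (Hs s)) S iG' iH'"
  define f' where "f' = bmap iG' iH' (gV G) (\<lambda>s. gV (Hs s)) S iG iH"
  define g where "g = bmap jG jH (gE G - S) (\<lambda>s. gE (Hs s)) S jG' jH'"
  define g' where "g' = bmap jG' jH' (gE G - S) (\<lambda>s. gE (Hs s)) S jG jH"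
  note f1 = sr_nmap(1)[OF X Y, folded f_def] and f2 = sr_nmap(2)[OF X Y, folded f_def]
  note f1' = sr_nmap(1)[OF Y X, folded f'_def] and f2' = sr_nmap(2)[OF Y X, folded f'_def]
  note g1 = sr_emap(1)[OF X Y, folded g_def] and g2 = sr_emap(2)[OF X Y, folded g_def]
  note g1' = sr_emap(1)[OF Y X, folded g'_def] and g2' = sr_emap(2)[OF Y X, folded g'_def]
  have VX: "gV X = iG ` gV G \<union> (\<Union>s\<in>S. iH s ` gV (Hs s))" by (rule is_srD(5)[OF X])
  have VY: "gV Y = iG' ` gV G \<union> (\<Union>s\<in>S. iH' s ` gV (Hs s))" by (rule is_srD(5)[OF Y])
  have EX: "gE X = jG ` (gE G - S) \<union> (\<Union>s\<in>S. jH s ` gE (Hs s))" by (rule is_srD(11)[OF X])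
  have EY: "gE Y = jG' ` (gE G - S) \<union> (\<Union>s\<in>S. jH' s ` gE (Hs s))" by (rule is_srD(11)[OF Y])
  have bf: "bij_betw f (gV X) (gV Y)"
  proof (rule bij_betw_byWitness[where f'=f'])
    show "\<forall>a\<in>gV X. f' (f a) = a" unfolding VX using f1 f2 f1' f2' by auto
    show "\<forall>a\<in>gV Y. f (f' a) = a" unfolding VY using f1 f2 f1' f2' by auto
    show "f ` gV X \<subseteq> gV Y" unfolding VX VY using f1 f2 by auto
    show "f' ` gV Y \<subseteq> gV X" unfolding VX VY using f1' f2' by auto
  qed
  have bg: "bij_betw g (gE X) (gE Y)"
  proof (rule bij_betw_byWitness[where f'=g'])
    show "\<forall>a\<in>gE X. g' (g a) = a" unfolding EX using g1 g2 g1' g2' by auto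
    show "\<forall>a\<in>gE Y. g (g' a) = a" unfolding EY using g1 g2 g1' g2' by auto
    show "g ` gE X \<subseteq> gE Y" unfolding EX EY using g1 g2 by auto
    show "g' ` gE Y \<subseteq> gE X" unfolding EX EY using g1' g2' by auto
  qed
  have ae: "\<forall>e\<in>gE X. gatt Y (g e) = map f (gatt X e) \<and> (\<exists>c. R1 c (glab X e) \<and> R2 c (glab Y (g e)))"
  proof
    fix e assume "e \<in> gE X"
    then consider (a) x where "x \<in> gE G - S" "e = jG x" | (b) s y where "s \<in> S" "y \<in> gE (Hs s)" "e = jH s y"
      unfolding EX by blast
    then show "gatt Y (g e) = map f (gatt X e) \<and> (\<exists>c. R1 c (glab X e) \<and> R2 c (glab Y (g e)))"
    proof cases
      case a
      have sub: "set (gatt G x) \<subseteq> gV G" using is_srD(1)[OF X] a(1) unfolding wf_graph_def by blast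
      have "map f (gatt X e) = map iG' (gatt G x)" using a is_srD(16)[OF X] f1 sub by (auto)
      then show ?thesis using a g1 is_srD(16,17)[OF X] is_srD(16,17)[OF Y] by metis
    next
      case b
      have sub: "set (gatt (Hs s) y) \<subseteq> gV (Hs s)" using is_srD(3)[OF X b(1)] b(2) unfolding wf_graph_def by blast
      have "map f (gatt X e) = map (iH' s) (gatt (Hs s) y)" using b is_srD(18)[OF X] f2 sub by (auto)
      then show ?thesis using b g2 is_srD(18,19)[OF X] is_srD(18,19)[OF Y] by metis
    qed
  qed
  have ext: "gext Y = map f (gext X)"
  proof -
    have sub: "set (gext G) \<subseteq> gV G" using is_srD(1)[OF X] unfolding wf_graph_def by blast
    show ?thesis using is_srD(20)[OF X] is_srD(20)[OF Y] f1 sub by auto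
  qed
  show ?thesis unfolding iso_via_def using bf bg ae ext g1 g2 by blast
qed


lemma sr_wf:
  assumes X: "is_sr R G S Hs X iG iH jG jH"
  shows "wf_graph X"
proof -
  have wfG: "wf_graph G" by (rule is_srD(1)[OF X])
  have finS: "finite S" using is_srD(2)[OF X] wfG unfolding wf_graph_def by (metis finite_subset)
  have wfH: "\<And>s. s \<in> S \<Longrightarrow> wf_graph (Hs s)" by (rule is_srD(3)[OF X])
  have fV: "finite (gV X)" unfolding is_srD(5)[OF X] using finS wfG wfH unfolding wf_graph_def by auto
  have fE: "finite (gE X)" unfolding is_srD(11)[OF X] using finS wfG wfH unfolding wf_graph_def by auto
  have att: "\<forall>e\<in>gE X. distinct (gatt X e) \<and> set (gatt X e) \<subseteq> gV X"
  proof
    fix e assume "e \<in> gE X"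
    then consider (a) x where "x \<in> gE G - S" "e = jG x" | (b) s y where "s \<in> S" "y \<in> gE (Hs s)" "e = jH s y"
      unfolding is_srD(11)[OF X] by blast
    then show "distinct (gatt X e) \<and> set (gatt X e) \<subseteq> gV X"
    proof cases
      case a
      have "distinct (gatt G x)" "set (gatt G x) \<subseteq> gV G" using wfG a(1) unfolding wf_graph_def by auto
      then show ?thesis using a is_srD(16)[OF X a(1)] is_srD(6)[OF X] unfolding is_srD(5)[OF X]
        by (auto simp: distinct_map intro: inj_on_subset)
    next
      case b
      have "distinct (gatt (Hs s) y)" "set (gatt (Hs s) y) \<subseteq> gV (Hs s)" using wfH[OF b(1)] b(2) unfolding wf_graph_def by auto
      then show ?thesis using b is_srD(18)[OF X b(1,2)] is_srD(7)[OF X b(1)] unfolding is_srD(5)[OF X]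
        by (auto simp: distinct_map intro: inj_on_subset)
    qed
  qed
  have "distinct (gext G)" "set (gext G) \<subseteq> gV G" using wfG unfolding wf_graph_def by auto
  then have "distinct (gext X) \<and> set (gext X) \<subseteq> gV X"
    using is_srD(20)[OF X] is_srD(6)[OF X] unfolding is_srD(5)[OF X] by (auto simp: distinct_map intro: inj_on_subset)
  then show ?thesis using fV fE att unfolding wf_graph_def by blast
qed

lemma sr_base:
  assumes "iso_via R f g G G'" "wf_graph G"
  shows "is_sr R G {} Hs G' f iH g jH"
  using assms unfolding iso_via_def is_sr_def bij_betw_def by auto

lemma iso_wf: "iso_via R f g G G' \<Longrightarrow> wf_graph G \<Longrightarrow> wf_graph G'"
  using sr_wf[OF sr_base] by blast

lemma iso_via_id: "wf_graph G \<Longrightarrow> (\<And>e. e \<in> gE G \<Longrightarrow> R (glab G e) (glab G e)) \<Longrightarrow> iso_via R id id G G"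
  unfolding iso_via_def by auto

lemma sr_E_lt: "is_sr R G S Hs X iG iH jG jH \<Longrightarrow> e \<in> gE X \<Longrightarrow> e < eoff X"
  using sr_wf eoff_gt unfolding wf_graph_def by blast
lemma sr_V_lt: "is_sr R G S Hs X iG iH jG jH \<Longrightarrow> v \<in> gV X \<Longrightarrow> v < voff X"
  using sr_wf voff_gt unfolding wf_graph_def by blast

lemma sr_step1:
  assumes X: "is_sr R G S Hs X iG iH jG jH" and e: "e \<in> gE G" "e \<notin> S"
    and H0: "wf_graph H0" "length (gext H0) = length (gatt G e)"
    and iso: "iso_via R \<phi> \<psi> H0 H"
  shows "is_sr R G (insert e S) (Hs(e := H0)) (repl X (jG e) H) iG (iH(e := rmap X (jG e) H \<circ> \<phi>)) jG (jH(e := \<lambda>y. eoff X + \<psi> y))"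
proof -
  define e' where "e' = jG e"
  define h where "h = rmap X e' H"
  have wfX: "wf_graph X" by (rule sr_wf[OF X])
  have wfH: "wf_graph H" by (rule iso_wf[OF iso H0(1)])
  have wfG: "wf_graph G" by (rule is_srD(1)[OF X])
  have eS: "e \<in> gE G - S" using e by blast
  have e'X: "e' \<in> gE X" unfolding e'_def is_srD(11)[OF X] using eS by blast
  have attX: "gatt X e' = map iG (gatt G e)" unfolding e'_def by (rule is_srD(16)[OF X eS])
  have bphi: "bij_betw \<phi> (gV H0) (gV H)" and bpsi: "bij_betw \<psi> (gE H0) (gE H)"
    and extH: "gext H = map \<phi> (gext H0)" and attH: "\<And>y. y \<in> gE H0 \<Longrightarrow> gatt H (\<psi> y) = map \<phi> (gatt H0 y)"
    and labH: "\<And>y. y \<in> gE H0 \<Longrightarrow> R (glab H0 y) (glab H (\<psi> y))"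
    using iso unfolding iso_via_def by auto
  have len: "length (gext H) = length (gatt X e')" using extH attX H0(2) by simp
  have dH: "distinct (gext H)" using wfH unfolding wf_graph_def by blast
  have hinj: "inj_on h (gV H)" unfolding h_def by (rule rmap_inj[OF wfX e'X wfH len])
  have hext: "map h (gext H) = gatt X e'" unfolding h_def by (rule map_rmap_ext[OF dH len])
  have hint: "\<And>v. v \<in> gV H \<Longrightarrow> v \<notin> set (gext H) \<Longrightarrow> h v \<notin> gV X"
    unfolding h_def using rmap_int_notin[OF wfX len] by blast
  have ext0: "set (gext H0) \<subseteq> gV H0" using H0(1) unfolding wf_graph_def by blast
  have phi_int: "\<And>w. w \<in> gV H0 \<Longrightarrow> w \<notin> set (gext H0) \<Longrightarrow> \<phi> w \<notin> set (gext H)"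
  proof
    fix w assume w: "w \<in> gV H0" "w \<notin> set (gext H0)" and "\<phi> w \<in> set (gext H)"
    then obtain w' where "w' \<in> set (gext H0)" "\<phi> w = \<phi> w'" using extH by auto
    then show False using w ext0 bphi unfolding bij_betw_def inj_on_def by blast
  qed
  have VH: "gV H = \<phi> ` gV H0" using bphi unfolding bij_betw_def by blast
  have EH: "gE H = \<psi> ` gE H0" using bpsi unfolding bij_betw_def by blast
  have fEX: "finite (gE X)" using wfX unfolding wf_graph_def by blast
  have Elt: "\<And>x. x \<in> gE X \<Longrightarrow> x < eoff X" using eoff_gt[OF fEX] .
  have jGX: "\<And>x. x \<in> gE G - S \<Longrightarrow> jG x \<in> gE X" unfolding is_srD(11)[OF X] by blast
  have jHX: "\<And>s y. s \<in> S \<Longrightarrow> y \<in> gE (Hs s) \<Longrightarrow> jH s y \<in> gE X" unfolding is_srD(11)[OF X] by blast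
  have iGX: "\<And>v. v \<in> gV G \<Longrightarrow> iG v \<in> gV X" unfolding is_srD(5)[OF X] by blast
  have iHX: "\<And>s v. s \<in> S \<Longrightarrow> v \<in> gV (Hs s) \<Longrightarrow> iH s v \<in> gV X" unfolding is_srD(5)[OF X] by blast
  have jGe: "\<And>x. x \<in> gE G - S \<Longrightarrow> x \<noteq> e \<Longrightarrow> jG x \<noteq> e'"
    unfolding e'_def using is_srD(12)[OF X] eS unfolding inj_on_def by blast
  have jHe: "\<And>s y. s \<in> S \<Longrightarrow> y \<in> gE (Hs s) \<Longrightarrow> jH s y \<noteq> e'"
    unfolding e'_def using is_srD(14)[OF X eS] by metis
  show ?thesis
    unfolding is_sr_def e'_def[symmetric] h_def[symmetric]
  proof (intro conjI ballI impI)
    show "wf_graph G" by fact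
    show "insert e S \<subseteq> gE G" using e is_srD(2)[OF X] by blast
  next
    fix s assume s: "s \<in> insert e S"
    show "wf_graph ((Hs(e := H0)) s)" using s H0 is_srD(3)[OF X] by auto
    show "length (gext ((Hs(e := H0)) s)) = length (gatt G s)" using s H0 is_srD(4)[OF X] by auto
    show "inj_on ((iH(e := h \<circ> \<phi>)) s) (gV ((Hs(e := H0)) s))"
    proof (cases "s = e")
      case True
      have "inj_on (h \<circ> \<phi>) (gV H0)" using hinj bphi VH by (metis bij_betw_def comp_inj_on)
      then show ?thesis using True by simp
    next
      case False then show ?thesis using s is_srD(7)[OF X] by auto
    qed
    show "map ((iH(e := h \<circ> \<phi>)) s) (gext ((Hs(e := H0)) s)) = map iG (gatt G s)"
    proof (cases "s = e")
      case True
      have "map (h \<circ> \<phi>) (gext H0) = map iG (gatt G e)" using hext extH attX by simp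
      then show ?thesis using True by simp
    next
      case False then show ?thesis using s is_srD(8)[OF X] by auto
    qed
  next
    fix s v assume s: "s \<in> insert e S" and v: "v \<in> gV ((Hs(e := H0)) s) - set (gext ((Hs(e := H0)) s))"
    show "(iH(e := h \<circ> \<phi>)) s v \<notin> iG ` gV G"
    proof (cases "s = e")
      case True
      then have "v \<in> gV H0" "v \<notin> set (gext H0)" using v by auto
      then have "h (\<phi> v) \<notin> gV X" using hint phi_int VH by blast
      then show ?thesis using True iGX by auto
    next
      case False then show ?thesis using s v is_srD(9)[OF X] by auto
    qed
  next
    fix s t v w assume s: "s \<in> insert e S" and t: "t \<in> insert e S"
      and v: "v \<in> gV ((Hs(e := H0)) s) - set (gext ((Hs(e := H0)) s))"
      and w: "w \<in> gV ((Hs(e := H0)) t) - set (gext ((Hs(e := H0)) t))"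
      and eq: "(iH(e := h \<circ> \<phi>)) s v = (iH(e := h \<circ> \<phi>)) t w"
    have nin: "\<And>u. u \<in> gV H0 \<Longrightarrow> u \<notin> set (gext H0) \<Longrightarrow> h (\<phi> u) \<notin> gV X" using hint phi_int VH by blast
    show "s = t"
    proof (cases "s = e"; cases "t = e")
      assume "s = e" "t = e" then show ?thesis by simp
    next
      assume a: "s = e" "t \<noteq> e"
      then have "h (\<phi> v) = iH t w" "t \<in> S" "w \<in> gV (Hs t)" using eq t w by auto
      moreover have "h (\<phi> v) \<notin> gV X" using nin v a by auto
      ultimately show ?thesis using iHX by metis
    next
      assume a: "s \<noteq> e" "t = e"
      then have "iH s v = h (\<phi> w)" "s \<in> S" "v \<in> gV (Hs s)" using eq s v by auto
      moreover have "h (\<phi> w) \<notin> gV X" using nin w a by auto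
      ultimately show ?thesis using iHX by metis
    next
      assume a: "s \<noteq> e" "t \<noteq> e"
      then show ?thesis using is_srD(10)[OF X] s t v w eq by auto
    qed
  next
    show "gV (repl X e' H) = iG ` gV G \<union> (\<Union>s\<in>insert e S. (iH(e := h \<circ> \<phi>)) s ` gV ((Hs(e := H0)) s))"
    proof -
      have "(\<Union>s\<in>insert e S. (iH(e := h \<circ> \<phi>)) s ` gV ((Hs(e := H0)) s)) = h ` \<phi> ` gV H0 \<union> (\<Union>s\<in>S. iH s ` gV (Hs s))"
      proof -
        have "(\<Union>s\<in>S. (iH(e := h \<circ> \<phi>)) s ` gV ((Hs(e := H0)) s)) = (\<Union>s\<in>S. iH s ` gV (Hs s))"
          using e(2) by (intro SUP_cong) auto
        then show ?thesis by (simp add: image_comp)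
      qed
      then show ?thesis using VH unfolding gV_repl h_def is_srD(5)[OF X] by auto
    qed
    show "inj_on iG (gV G)" by (rule is_srD(6)[OF X])
  next
    show "gE (repl X e' H) = jG ` (gE G - insert e S) \<union> (\<Union>s\<in>insert e S. (jH(e := \<lambda>y. eoff X + \<psi> y)) s ` gE ((Hs(e := H0)) s))"
    proof -
      have 1: "(\<Union>s\<in>insert e S. (jH(e := \<lambda>y. eoff X + \<psi> y)) s ` gE ((Hs(e := H0)) s)) = (\<lambda>y. eoff X + y) ` \<psi> ` gE H0 \<union> (\<Union>s\<in>S. jH s ` gE (Hs s))"
      proof -
        have "(\<Union>s\<in>S. (jH(e := \<lambda>y. eoff X + \<psi> y)) s ` gE ((Hs(e := H0)) s)) = (\<Union>s\<in>S. jH s ` gE (Hs s))"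
          using e(2) by (intro SUP_cong) auto
        then show ?thesis by (simp add: image_comp)
      qed
      have 2: "jG ` (gE G - insert e S) = jG ` (gE G - S) - {e'}"
        using jGe unfolding e'_def by auto
      have 3: "e' \<notin> (\<Union>s\<in>S. jH s ` gE (Hs s))" using jHe by blast
      show ?thesis unfolding gE_repl 1 2 EH[symmetric] is_srD(11)[OF X] using 3 by blast
    qed
    show "inj_on jG (gE G - insert e S)" using is_srD(12)[OF X] by (auto intro: inj_on_subset)
  next
    fix s assume s: "s \<in> insert e S"
    show "inj_on ((jH(e := \<lambda>y. eoff X + \<psi> y)) s) (gE ((Hs(e := H0)) s))"
    proof (cases "s = e")
      case True
      have "inj_on \<psi> (gE H0)" using bpsi unfolding bij_betw_def by blast
      then show ?thesis using True by (auto simp: inj_on_def)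
    next
      case False then show ?thesis using s is_srD(13)[OF X] by auto
    qed
  next
    fix x s y assume x: "x \<in> gE G - insert e S" and s: "s \<in> insert e S" and y: "y \<in> gE ((Hs(e := H0)) s)"
    show "jG x \<noteq> (jH(e := \<lambda>y. eoff X + \<psi> y)) s y"
    proof (cases "s = e")
      case True
      have "jG x < eoff X" using Elt jGX x by blast
      then show ?thesis using True by auto
    next
      case False then show ?thesis using x s y is_srD(14)[OF X] by auto
    qed
  next
    fix s t y z assume s: "s \<in> insert e S" and t: "t \<in> insert e S" and y: "y \<in> gE ((Hs(e := H0)) s)"
      and z: "z \<in> gE ((Hs(e := H0)) t)" and eq: "(jH(e := \<lambda>y. eoff X + \<psi> y)) s y = (jH(e := \<lambda>y. eoff X + \<psi> y)) t z"
    show "s = t"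
    proof (cases "s = e"; cases "t = e")
      assume "s = e" "t = e" then show ?thesis by simp
    next
      assume a: "s = e" "t \<noteq> e"
      then have "jH t z < eoff X" using Elt jHX t z by auto
      then show ?thesis using eq a by auto
    next
      assume a: "s \<noteq> e" "t = e"
      then have "jH s y < eoff X" using Elt jHX s y by auto
      then show ?thesis using eq a by auto
    next
      assume a: "s \<noteq> e" "t \<noteq> e"
      then show ?thesis using is_srD(15)[OF X] s t y z eq by auto
    qed
  next
    fix x assume x: "x \<in> gE G - insert e S"
    then have x': "x \<in> gE G - S" by blast
    have "jG x \<in> gE X" using jGX x' .
    then show "gatt (repl X e' H) (jG x) = map iG (gatt G x)" "R (glab G x) (glab (repl X e' H) (jG x))"
      using fEX is_srD(16,17)[OF X x'] by auto
  next
    fix s y assume s: "s \<in> insert e S" and y: "y \<in> gE ((Hs(e := H0)) s)"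
    show "gatt (repl X e' H) ((jH(e := \<lambda>y. eoff X + \<psi> y)) s y) = map ((iH(e := h \<circ> \<phi>)) s) (gatt ((Hs(e := H0)) s) y)"
    proof (cases "s = e")
      case True
      then show ?thesis using y attH unfolding h_def by auto
    next
      case False
      then have "jH s y \<in> gE X" using jHX s y by auto
      then show ?thesis using False fEX is_srD(18)[OF X] s y by auto
    qed
    show "R (glab ((Hs(e := H0)) s) y) (glab (repl X e' H) ((jH(e := \<lambda>y. eoff X + \<psi> y)) s y))"
    proof (cases "s = e")
      case True
      then show ?thesis using y labH by auto
    next
      case False
      then have "jH s y \<in> gE X" using jHX s y by auto
      then show ?thesis using False fEX is_srD(19)[OF X] s y by auto
    qed
  next
    show "gext (repl X e' H) = map iG (gext G)" using is_srD(20)[OF X] by simp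
  qed
qed


lemma sr_step2:
  assumes X: "is_sr R G S Hs X iG iH jG jH" and s: "s \<in> S" and y: "y \<in> gE (Hs s)"
    and K: "wf_graph K" "length (gext K) = length (gatt (Hs s) y)"
    and Kr: "\<And>z. z \<in> gE K \<Longrightarrow> R (glab K z) (glab K z)"
  shows "is_sr R G S (Hs(s := repl (Hs s) y K)) (repl X (jH s y) K) iG
     (iH(s := \<lambda>u. if u \<in> gV (Hs s) then iH s u else voff X + (u - voff (Hs s)))) jG
     (jH(s := \<lambda>z. if z < eoff (Hs s) then jH s z else eoff X + (z - eoff (Hs s))))"
proof -
  define \<Sigma> where "\<Sigma> = Hs s"
  define y' where "y' = jH s y"
  define \<iota> where "\<iota> = (\<lambda>u. if u \<in> gV \<Sigma> then iH s u else voff X + (u - voff \<Sigma>))"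
  define \<kappa> where "\<kappa> = (\<lambda>z. if z < eoff \<Sigma> then jH s z else eoff X + (z - eoff \<Sigma>))"
  define hS where "hS = rmap \<Sigma> y K"
  define hX where "hX = rmap X y' K"
  have wfX: "wf_graph X" by (rule sr_wf[OF X])
  have wfG: "wf_graph G" by (rule is_srD(1)[OF X])
  have wfS: "wf_graph \<Sigma>" unfolding \<Sigma>_def by (rule is_srD(3)[OF X s])
  have yS: "y \<in> gE \<Sigma>" using y unfolding \<Sigma>_def .
  have y'X: "y' \<in> gE X" unfolding y'_def is_srD(11)[OF X] using s y by blast
  have attX: "gatt X y' = map (iH s) (gatt \<Sigma> y)" unfolding y'_def \<Sigma>_def by (rule is_srD(18)[OF X s y])
  have lenS: "length (gext K) = length (gatt \<Sigma> y)" using K(2) unfolding \<Sigma>_def .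
  have lenX: "length (gext K) = length (gatt X y')" using lenS attX by simp
  have dK: "distinct (gext K)" using K(1) unfolding wf_graph_def by blast
  have extK: "set (gext K) \<subseteq> gV K" using K(1) unfolding wf_graph_def by blast
  have fVS: "finite (gV \<Sigma>)" and fES: "finite (gE \<Sigma>)" using wfS unfolding wf_graph_def by auto
  have fVX: "finite (gV X)" and fEX: "finite (gE X)" using wfX unfolding wf_graph_def by auto
  have attSV: "set (gatt \<Sigma> y) \<subseteq> gV \<Sigma>" using wfS yS unfolding wf_graph_def by blast
  have injs: "inj_on (iH s) (gV \<Sigma>)" unfolding \<Sigma>_def by (rule is_srD(7)[OF X s])
  have iHX: "\<And>t v. t \<in> S \<Longrightarrow> v \<in> gV (Hs t) \<Longrightarrow> iH t v \<in> gV X" unfolding is_srD(5)[OF X] by blast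
  have jHX: "\<And>t z. t \<in> S \<Longrightarrow> z \<in> gE (Hs t) \<Longrightarrow> jH t z \<in> gE X" unfolding is_srD(11)[OF X] by blast
  have jGX: "\<And>x. x \<in> gE G - S \<Longrightarrow> jG x \<in> gE X" unfolding is_srD(11)[OF X] by blast
  have iGX: "\<And>v. v \<in> gV G \<Longrightarrow> iG v \<in> gV X" unfolding is_srD(5)[OF X] by blast
  have Vlt: "\<And>v. v \<in> gV X \<Longrightarrow> v < voff X" using voff_gt[OF fVX] .
  have Elt: "\<And>x. x \<in> gE X \<Longrightarrow> x < eoff X" using eoff_gt[OF fEX] .
  have VSlt: "\<And>v. v \<in> gV \<Sigma> \<Longrightarrow> v < voff \<Sigma>" using voff_gt[OF fVS] .
  have ESlt: "\<And>x. x \<in> gE \<Sigma> \<Longrightarrow> x < eoff \<Sigma>" using eoff_gt[OF fES] .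
  have key: "\<And>w. w \<in> gV K \<Longrightarrow> \<iota> (hS w) = hX w"
  proof -
    fix w assume w: "w \<in> gV K"
    show "\<iota> (hS w) = hX w"
    proof (cases "w \<in> set (gext K)")
      case True
      then obtain i where i: "i < length (gext K)" "w = gext K ! i" by (metis in_set_conv_nth)
      have 1: "hS w = gatt \<Sigma> y ! i" unfolding hS_def using rmap_ext[OF dK lenS i(1)] i(2) by simp
      have 2: "hX w = gatt X y' ! i" unfolding hX_def using rmap_ext[OF dK lenX i(1)] i(2) by simp
      have 3: "gatt \<Sigma> y ! i \<in> gV \<Sigma>" using attSV i lenS by (metis nth_mem subsetD)
      show ?thesis using 1 2 3 attX i lenS unfolding \<iota>_def by simp
    next
      case False
      have 1: "hS w = voff \<Sigma> + w" unfolding hS_def by (rule rmap_int[OF lenS False])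
      have 2: "hX w = voff X + w" unfolding hX_def by (rule rmap_int[OF lenX False])
      have "voff \<Sigma> + w \<notin> gV \<Sigma>" using VSlt by fastforce
      then show ?thesis using 1 2 unfolding \<iota>_def by simp
    qed
  qed
  have iota_old: "\<And>u. u \<in> gV \<Sigma> \<Longrightarrow> \<iota> u = iH s u" unfolding \<iota>_def by simp
  have VS': "gV (repl \<Sigma> y K) = gV \<Sigma> \<union> hS ` gV K" unfolding hS_def by simp
  have newnode: "\<And>u. u \<in> gV (repl \<Sigma> y K) \<Longrightarrow> u \<notin> gV \<Sigma> \<Longrightarrow> \<exists>w\<in>gV K. w \<notin> set (gext K) \<and> u = voff \<Sigma> + w \<and> \<iota> u = voff X + w"
  proof -
    fix u assume u: "u \<in> gV (repl \<Sigma> y K)" "u \<notin> gV \<Sigma>"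
    then obtain w where w: "w \<in> gV K" "u = hS w" unfolding VS' by blast
    have "w \<notin> set (gext K)"
    proof
      assume "w \<in> set (gext K)"
      then have "hS w \<in> gV \<Sigma>" unfolding hS_def using rmap_ext_in[OF wfS yS dK lenS] by blast
      then show False using u w by simp
    qed
    moreover have "u = voff \<Sigma> + w" using w rmap_int[OF lenS \<open>w \<notin> set (gext K)\<close>] unfolding hS_def by simp
    ultimately show "\<exists>w\<in>gV K. w \<notin> set (gext K) \<and> u = voff \<Sigma> + w \<and> \<iota> u = voff X + w"
      using w u unfolding \<iota>_def by auto
  qed
  have newX: "\<And>w. voff X + w \<notin> gV X" using Vlt by fastforce
  have inj_iota: "inj_on \<iota> (gV (repl \<Sigma> y K))"
  proof (rule inj_onI)
    fix a b assume a: "a \<in> gV (repl \<Sigma> y K)" and b: "b \<in> gV (repl \<Sigma> y K)" and eq: "\<iota> a = \<iota> b"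
    show "a = b"
    proof (cases "a \<in> gV \<Sigma>"; cases "b \<in> gV \<Sigma>")
      assume "a \<in> gV \<Sigma>" "b \<in> gV \<Sigma>" then show ?thesis using eq injs iota_old unfolding inj_on_def by metis
    next
      assume ab: "a \<in> gV \<Sigma>" "b \<notin> gV \<Sigma>"
      then obtain w where "\<iota> b = voff X + w" using newnode b by blast
      moreover have "\<iota> a \<in> gV X" using ab iota_old iHX s unfolding \<Sigma>_def by metis
      ultimately show ?thesis using eq newX by metis
    next
      assume ab: "a \<notin> gV \<Sigma>" "b \<in> gV \<Sigma>"
      then obtain w where "\<iota> a = voff X + w" using newnode a by blast
      moreover have "\<iota> b \<in> gV X" using ab iota_old iHX s unfolding \<Sigma>_def by metis
      ultimately show ?thesis using eq newX by metis
    next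
      assume ab: "a \<notin> gV \<Sigma>" "b \<notin> gV \<Sigma>"
      obtain w where w: "a = voff \<Sigma> + w" "\<iota> a = voff X + w" using newnode a ab by blast
      obtain w' where w': "b = voff \<Sigma> + w'" "\<iota> b = voff X + w'" using newnode b ab by blast
      show ?thesis using w w' eq by simp
    qed
  qed
  have iota_new_notX: "\<And>u. u \<in> gV (repl \<Sigma> y K) \<Longrightarrow> u \<notin> gV \<Sigma> \<Longrightarrow> \<iota> u \<notin> gV X"
    using newnode newX by metis
  have ES': "gE (repl \<Sigma> y K) = (gE \<Sigma> - {y}) \<union> (\<lambda>x. eoff \<Sigma> + x) ` gE K" by simp
  have kappa_old: "\<And>z. z \<in> gE \<Sigma> \<Longrightarrow> \<kappa> z = jH s z" unfolding \<kappa>_def using ESlt by simp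
  have kappa_new: "\<And>z. \<kappa> (eoff \<Sigma> + z) = eoff X + z" unfolding \<kappa>_def by simp
  have injjs: "inj_on (jH s) (gE \<Sigma>)" unfolding \<Sigma>_def by (rule is_srD(13)[OF X s])
  have jHy: "\<And>z. z \<in> gE \<Sigma> \<Longrightarrow> z \<noteq> y \<Longrightarrow> jH s z \<noteq> y'" unfolding y'_def using injjs yS unfolding inj_on_def by blast
  have kappa_img: "\<kappa> ` gE (repl \<Sigma> y K) = (jH s ` gE \<Sigma> - {y'}) \<union> (\<lambda>x. eoff X + x) ` gE K"
  proof -
    have "\<kappa> ` (gE \<Sigma> - {y}) = jH s ` gE \<Sigma> - {y'}"
      using kappa_old jHy unfolding y'_def by (auto simp: image_iff)
    moreover have "\<kappa> ` ((\<lambda>x. eoff \<Sigma> + x) ` gE K) = (\<lambda>x. eoff X + x) ` gE K"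
      using kappa_new by (auto simp: image_iff)
    ultimately show ?thesis unfolding ES' image_Un by simp
  qed
  have newE: "\<And>z. eoff X + z \<notin> gE X" using Elt by fastforce
  have yothers: "\<And>t z. t \<in> S \<Longrightarrow> t \<noteq> s \<Longrightarrow> z \<in> gE (Hs t) \<Longrightarrow> jH t z \<noteq> y'"
    unfolding y'_def using is_srD(15)[OF X _ s _ y] by metis
  have yG: "\<And>x. x \<in> gE G - S \<Longrightarrow> jG x \<noteq> y'"
    unfolding y'_def using is_srD(14)[OF X _ s y] by metis
  show ?thesis
    unfolding is_sr_def \<Sigma>_def[symmetric] y'_def[symmetric] \<iota>_def[symmetric] \<kappa>_def[symmetric]
  proof (intro conjI ballI impI)
    show "wf_graph G" by fact
    show "S \<subseteq> gE G" by (rule is_srD(2)[OF X])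
  next
    fix t assume t: "t \<in> S"
    have wfK': "wf_graph (repl \<Sigma> y K)" by (rule wf_graph_repl[OF wfS yS K(1) lenS])
    show "wf_graph ((Hs(s := repl \<Sigma> y K)) t)" using t wfK' is_srD(3)[OF X] by auto
    show "length (gext ((Hs(s := repl \<Sigma> y K)) t)) = length (gatt G t)"
      using t is_srD(4)[OF X] unfolding \<Sigma>_def by auto
    show "inj_on ((iH(s := \<iota>)) t) (gV ((Hs(s := repl \<Sigma> y K)) t))"
      using t inj_iota is_srD(7)[OF X] by auto
    show "map ((iH(s := \<iota>)) t) (gext ((Hs(s := repl \<Sigma> y K)) t)) = map iG (gatt G t)"
    proof (cases "t = s")
      case True
      have "set (gext \<Sigma>) \<subseteq> gV \<Sigma>" using wfS unfolding wf_graph_def by blast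
      then have "map \<iota> (gext \<Sigma>) = map (iH s) (gext \<Sigma>)" using iota_old by (auto intro: map_cong)
      then show ?thesis using True is_srD(8)[OF X s] unfolding \<Sigma>_def by simp
    next
      case False then show ?thesis using t is_srD(8)[OF X] by auto
    qed
    show "inj_on ((jH(s := \<kappa>)) t) (gE ((Hs(s := repl \<Sigma> y K)) t))"
    proof (cases "t = s")
      case True
      have "inj_on \<kappa> (gE (repl \<Sigma> y K))"
      proof (rule inj_onI)
        fix a b assume a: "a \<in> gE (repl \<Sigma> y K)" and b: "b \<in> gE (repl \<Sigma> y K)" and eq: "\<kappa> a = \<kappa> b"
        consider (o) "a \<in> gE \<Sigma> - {y}" | (n) z where "z \<in> gE K" "a = eoff \<Sigma> + z" using a unfolding ES' by blast
        moreover consider (o) "b \<in> gE \<Sigma> - {y}" | (n) z where "z \<in> gE K" "b = eoff \<Sigma> + z" using b unfolding ES' by blast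
        ultimately show "a = b"
        proof cases
          case o
          note ao = o
          show ?thesis
          proof (cases "b \<in> gE \<Sigma> - {y}")
            case True then show ?thesis using ao eq kappa_old injjs unfolding inj_on_def by auto
          next
            case False
            then obtain z where "b = eoff \<Sigma> + z" using b unfolding ES' by blast
            then have "\<kappa> b \<notin> gE X" using kappa_new newE by simp
            moreover have "\<kappa> a \<in> gE X" using ao kappa_old jHX s unfolding \<Sigma>_def by auto
            ultimately show ?thesis using eq by simp
          qed
        next
          case (n z)
          note an = n
          show ?thesis
          proof (cases "b \<in> gE \<Sigma> - {y}")
            case True
            have "\<kappa> a \<notin> gE X" using an kappa_new newE by simp
            moreover have "\<kappa> b \<in> gE X" using True kappa_old jHX s unfolding \<Sigma>_def by auto
            ultimately show ?thesis using eq by simp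
          next
            case False
            then obtain z' where "b = eoff \<Sigma> + z'" using b unfolding ES' by blast
            then show ?thesis using an eq kappa_new by simp
          qed
        qed
      qed
      then show ?thesis using True by simp
    next
      case False then show ?thesis using t is_srD(13)[OF X] by auto
    qed
  next
    fix t v assume t: "t \<in> S" and v: "v \<in> gV ((Hs(s := repl \<Sigma> y K)) t) - set (gext ((Hs(s := repl \<Sigma> y K)) t))"
    show "(iH(s := \<iota>)) t v \<notin> iG ` gV G"
    proof (cases "t = s")
      case True
      show ?thesis
      proof (cases "v \<in> gV \<Sigma>")
        case True2: True
        then show ?thesis using True v iota_old is_srD(9)[OF X s] unfolding \<Sigma>_def by auto
      next
        case False
        then have "\<iota> v \<notin> gV X" using iota_new_notX v True by auto
        then show ?thesis using True iGX by auto
      qed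
    next
      case False then show ?thesis using t v is_srD(9)[OF X] by auto
    qed
  next
    fix t t' v w assume t: "t \<in> S" and t': "t' \<in> S"
      and v: "v \<in> gV ((Hs(s := repl \<Sigma> y K)) t) - set (gext ((Hs(s := repl \<Sigma> y K)) t))"
      and w: "w \<in> gV ((Hs(s := repl \<Sigma> y K)) t') - set (gext ((Hs(s := repl \<Sigma> y K)) t'))"
      and eq: "(iH(s := \<iota>)) t v = (iH(s := \<iota>)) t' w"
    have img: "\<And>r u. r \<in> S \<Longrightarrow> u \<in> gV ((Hs(s := repl \<Sigma> y K)) r) \<Longrightarrow> (r = s \<and> u \<notin> gV \<Sigma>) \<or> (u \<in> gV (Hs r) \<and> (iH(s := \<iota>)) r u = iH r u)"
      using iota_old unfolding \<Sigma>_def by auto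
    have extsame: "\<And>r. set (gext ((Hs(s := repl \<Sigma> y K)) r)) = set (gext (Hs r))" unfolding \<Sigma>_def by simp
    show "t = t'"
    proof (cases "t = s \<and> v \<notin> gV \<Sigma>"; cases "t' = s \<and> w \<notin> gV \<Sigma>")
      assume "t = s \<and> v \<notin> gV \<Sigma>" "t' = s \<and> w \<notin> gV \<Sigma>" then show ?thesis by simp
    next
      assume a: "t = s \<and> v \<notin> gV \<Sigma>" "\<not> (t' = s \<and> w \<notin> gV \<Sigma>)"
      then have "(iH(s := \<iota>)) t' w \<in> gV X" using img[OF t'] w iHX t' by (metis DiffD1)
      moreover have "(iH(s := \<iota>)) t v \<notin> gV X" using a v iota_new_notX by auto
      ultimately show ?thesis using eq by simp
    next
      assume a: "\<not> (t = s \<and> v \<notin> gV \<Sigma>)" "t' = s \<and> w \<notin> gV \<Sigma>"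
      then have "(iH(s := \<iota>)) t v \<in> gV X" using img[OF t] v iHX t by (metis DiffD1)
      moreover have "(iH(s := \<iota>)) t' w \<notin> gV X" using a w iota_new_notX by auto
      ultimately show ?thesis using eq by simp
    next
      assume a: "\<not> (t = s \<and> v \<notin> gV \<Sigma>)" "\<not> (t' = s \<and> w \<notin> gV \<Sigma>)"
      then have 1: "v \<in> gV (Hs t) - set (gext (Hs t))" "(iH(s := \<iota>)) t v = iH t v"
        using img[OF t] v extsame by auto
      have 2: "w \<in> gV (Hs t') - set (gext (Hs t'))" "(iH(s := \<iota>)) t' w = iH t' w"
        using img[OF t'] w extsame a by auto
      show ?thesis using is_srD(10)[OF X t t'] 1 2 eq by auto
    qed
  next
    show "gV (repl X y' K) = iG ` gV G \<union> (\<Union>t\<in>S. (iH(s := \<iota>)) t ` gV ((Hs(s := repl \<Sigma> y K)) t))"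
    proof -
      have 1: "(\<Union>t\<in>S. (iH(s := \<iota>)) t ` gV ((Hs(s := repl \<Sigma> y K)) t)) = \<iota> ` gV (repl \<Sigma> y K) \<union> (\<Union>t\<in>S - {s}. iH t ` gV (Hs t))"
      proof -
        have "(\<Union>t\<in>S - {s}. (iH(s := \<iota>)) t ` gV ((Hs(s := repl \<Sigma> y K)) t)) = (\<Union>t\<in>S - {s}. iH t ` gV (Hs t))"
          by (intro SUP_cong) auto
        moreover have "S = insert s (S - {s})" using s by blast
        ultimately show ?thesis by (metis (no_types, lifting) UN_insert fun_upd_same)
      qed
      have 2: "\<iota> ` gV (repl \<Sigma> y K) = iH s ` gV \<Sigma> \<union> hX ` gV K"
        unfolding VS' image_Un using iota_old key by (auto simp: image_iff) 
      have 3: "(\<Union>t\<in>S. iH t ` gV (Hs t)) = iH s ` gV \<Sigma> \<union> (\<Union>t\<in>S - {s}. iH t ` gV (Hs t))"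
        using s unfolding \<Sigma>_def by blast
      have 4: "gV (repl X y' K) = gV X \<union> hX ` gV K" unfolding hX_def by simp
      have 5: "gV X = iG ` gV G \<union> (iH s ` gV \<Sigma> \<union> (\<Union>t\<in>S - {s}. iH t ` gV (Hs t)))"
        using is_srD(5)[OF X] 3 by simp
      show ?thesis unfolding 4 1 2 5 by (simp add: Un_ac)
    qed
    show "inj_on iG (gV G)" by (rule is_srD(6)[OF X])
  next
    show "gE (repl X y' K) = jG ` (gE G - S) \<union> (\<Union>t\<in>S. (jH(s := \<kappa>)) t ` gE ((Hs(s := repl \<Sigma> y K)) t))"
    proof -
      have 1: "(\<Union>t\<in>S. (jH(s := \<kappa>)) t ` gE ((Hs(s := repl \<Sigma> y K)) t)) = \<kappa> ` gE (repl \<Sigma> y K) \<union> (\<Union>t\<in>S - {s}. jH t ` gE (Hs t))"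
      proof -
        have "(\<Union>t\<in>S - {s}. (jH(s := \<kappa>)) t ` gE ((Hs(s := repl \<Sigma> y K)) t)) = (\<Union>t\<in>S - {s}. jH t ` gE (Hs t))"
          by (intro SUP_cong) auto
        moreover have "S = insert s (S - {s})" using s by blast
        ultimately show ?thesis by (metis (no_types, lifting) UN_insert fun_upd_same)
      qed
      have 3: "(\<Union>t\<in>S. jH t ` gE (Hs t)) = jH s ` gE \<Sigma> \<union> (\<Union>t\<in>S - {s}. jH t ` gE (Hs t))"
        using s unfolding \<Sigma>_def by blast
      have 4: "y' \<notin> jG ` (gE G - S)" using yG by blast
      have 5: "y' \<notin> (\<Union>t\<in>S - {s}. jH t ` gE (Hs t))" using yothers by blast
      have 6: "jG ` (gE G - S) - {y'} = jG ` (gE G - S)" using 4 by blast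
      have 7: "(\<Union>t\<in>S - {s}. jH t ` gE (Hs t)) - {y'} = (\<Union>t\<in>S - {s}. jH t ` gE (Hs t))" using 5 by blast
      have 8: "gE X = jG ` (gE G - S) \<union> (jH s ` gE \<Sigma> \<union> (\<Union>t\<in>S - {s}. jH t ` gE (Hs t)))"
        using is_srD(11)[OF X] 3 by simp
      show ?thesis unfolding 1 unfolding kappa_img unfolding gE_repl 8 by (simp only: Un_Diff 6 7 Un_ac)
    qed
    show "inj_on jG (gE G - S)" by (rule is_srD(12)[OF X])
  next
    fix x t z assume x: "x \<in> gE G - S" and t: "t \<in> S" and z: "z \<in> gE ((Hs(s := repl \<Sigma> y K)) t)"
    show "jG x \<noteq> (jH(s := \<kappa>)) t z"
    proof (cases "t = s")
      case True
      show ?thesis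
      proof (cases "z \<in> gE \<Sigma>")
        case True2: True
        then show ?thesis using True kappa_old is_srD(14)[OF X x s] unfolding \<Sigma>_def by auto
      next
        case False
        then obtain w where "z = eoff \<Sigma> + w" using z True unfolding ES' by auto
        then have "\<kappa> z \<notin> gE X" using kappa_new newE by simp
        moreover have "jG x \<in> gE X" using jGX x by blast
        ultimately show ?thesis using True by auto
      qed
    next
      case False then show ?thesis using x t z is_srD(14)[OF X] by auto
    qed
  next
    fix t t' a b assume t: "t \<in> S" and t': "t' \<in> S" and a: "a \<in> gE ((Hs(s := repl \<Sigma> y K)) t)"
      and b: "b \<in> gE ((Hs(s := repl \<Sigma> y K)) t')" and eq: "(jH(s := \<kappa>)) t a = (jH(s := \<kappa>)) t' b"
    have img: "\<And>r u. r \<in> S \<Longrightarrow> u \<in> gE ((Hs(s := repl \<Sigma> y K)) r) \<Longrightarrow> (r = s \<and> u \<notin> gE \<Sigma> \<and> (jH(s := \<kappa>)) r u \<notin> gE X) \<or> (u \<in> gE (Hs r) \<and> (jH(s := \<kappa>)) r u = jH r u)"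
    proof -
      fix r u assume r: "r \<in> S" and u: "u \<in> gE ((Hs(s := repl \<Sigma> y K)) r)"
      show "(r = s \<and> u \<notin> gE \<Sigma> \<and> (jH(s := \<kappa>)) r u \<notin> gE X) \<or> (u \<in> gE (Hs r) \<and> (jH(s := \<kappa>)) r u = jH r u)"
      proof (cases "r = s")
        case True
        show ?thesis
        proof (cases "u \<in> gE \<Sigma>")
          case True2: True then show ?thesis using True kappa_old unfolding \<Sigma>_def by auto
        next
          case False
          then obtain w where "u = eoff \<Sigma> + w" using u True unfolding ES' by auto
          then show ?thesis using True False kappa_new newE by simp
        qed
      next
        case False then show ?thesis using u by simp
      qed
    qed
    show "t = t'"
    proof (cases "t = s \<and> a \<notin> gE \<Sigma>"; cases "t' = s \<and> b \<notin> gE \<Sigma>")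
      assume "t = s \<and> a \<notin> gE \<Sigma>" "t' = s \<and> b \<notin> gE \<Sigma>" then show ?thesis by simp
    next
      assume c: "t = s \<and> a \<notin> gE \<Sigma>" "\<not> (t' = s \<and> b \<notin> gE \<Sigma>)"
      then show ?thesis using img[OF t a] img[OF t' b] jHX t' eq unfolding \<Sigma>_def by metis
    next
      assume c: "\<not> (t = s \<and> a \<notin> gE \<Sigma>)" "t' = s \<and> b \<notin> gE \<Sigma>"
      then show ?thesis using img[OF t a] img[OF t' b] jHX t eq unfolding \<Sigma>_def by metis
    next
      assume c: "\<not> (t = s \<and> a \<notin> gE \<Sigma>)" "\<not> (t' = s \<and> b \<notin> gE \<Sigma>)"
      then have "a \<in> gE (Hs t)" "b \<in> gE (Hs t')" "jH t a = jH t' b"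
        using img[OF t a] img[OF t' b] eq unfolding \<Sigma>_def by auto
      then show ?thesis using is_srD(15)[OF X t t'] by blast
    qed
  next
    fix x assume x: "x \<in> gE G - S"
    have "jG x \<in> gE X" using jGX x .
    then show "gatt (repl X y' K) (jG x) = map iG (gatt G x)" "R (glab G x) (glab (repl X y' K) (jG x))"
      using fEX is_srD(16,17)[OF X x] by auto
  next
    fix t z assume t: "t \<in> S" and z: "z \<in> gE ((Hs(s := repl \<Sigma> y K)) t)"
    have "(gatt (repl X y' K) ((jH(s := \<kappa>)) t z) = map ((iH(s := \<iota>)) t) (gatt ((Hs(s := repl \<Sigma> y K)) t) z))
       \<and> R (glab ((Hs(s := repl \<Sigma> y K)) t) z) (glab (repl X y' K) ((jH(s := \<kappa>)) t z))"
    proof (cases "t = s")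
      case True
      show ?thesis
      proof (cases "z \<in> gE \<Sigma>")
        case True2: True
        have zz: "z \<in> gE \<Sigma>" "z \<noteq> y" using z True True2 ESlt by fastforce+
        have inX: "jH s z \<in> gE X" using jHX s zz unfolding \<Sigma>_def by auto
        have sub: "set (gatt \<Sigma> z) \<subseteq> gV \<Sigma>" using wfS zz unfolding wf_graph_def by blast
        have "map \<iota> (gatt \<Sigma> z) = map (iH s) (gatt \<Sigma> z)" using sub iota_old by (auto intro: map_cong)
        then show ?thesis using True zz inX fEX fES kappa_old is_srD(18,19)[OF X s] unfolding \<Sigma>_def by auto
      next
        case False
        then obtain w where w: "w \<in> gE K" "z = eoff \<Sigma> + w" using z True unfolding ES' by auto
        have sub: "set (gatt K w) \<subseteq> gV K" using K(1) w unfolding wf_graph_def by blast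
        have "map \<iota> (map hS (gatt K w)) = map hX (gatt K w)" using sub key by auto
        then show ?thesis using True w kappa_new Kr unfolding hS_def hX_def by auto
      qed
    next
      case False
      then have "jH t z \<in> gE X" using jHX t z by auto
      then show ?thesis using False fEX is_srD(18,19)[OF X t] z by auto
    qed
    then show "gatt (repl X y' K) ((jH(s := \<kappa>)) t z) = map ((iH(s := \<iota>)) t) (gatt ((Hs(s := repl \<Sigma> y K)) t) z)"
      "R (glab ((Hs(s := repl \<Sigma> y K)) t) z) (glab (repl X y' K) ((jH(s := \<kappa>)) t z))" by auto
  next
    show "gext (repl X y' K) = map iG (gext G)" using is_srD(20)[OF X] by simp
  qed
qed


definition ovr :: "(nat \<Rightarrow> 'a hgraph) \<Rightarrow> (nat \<times> 'a hgraph) list \<Rightarrow> nat \<Rightarrow> 'a hgraph" where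
"ovr Hs ds s = (case map_of ds s of Some H \<Rightarrow> H | None \<Rightarrow> Hs s)"

lemma ovr_Nil[simp]: "ovr Hs [] = Hs" unfolding ovr_def by auto

lemma ovr_Cons: "fst p \<notin> set (map fst ds) \<Longrightarrow> ovr Hs (p # ds) = ovr (Hs(fst p := snd p)) ds"
proof -
  assume a: "fst p \<notin> set (map fst ds)"
  then have n: "map_of ds (fst p) = None" by (simp add: map_of_eq_None_iff)
  show ?thesis unfolding ovr_def
  proof
    fix s show "(case map_of (p # ds) s of None \<Rightarrow> Hs s | Some H \<Rightarrow> H) = (case map_of ds s of None \<Rightarrow> (Hs(fst p := snd p)) s | Some H \<Rightarrow> H)"
      using n by (cases p) (auto split: option.split)
  qed
qed

lemma repls_Nil[simp]: "repls X [] = X" unfolding repls_def by simp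
lemma repls_Cons[simp]: "repls X (p # ds) = repls (repl X (fst p) (snd p)) ds" unfolding repls_def by simp

lemma ovr_update:
  assumes "distinct (map fst ds)" "j < length ds" "fst (ds ! j) = d"
  shows "ovr Hs (ds[j := (d, H')]) = (ovr Hs ds)(d := H')"
  using assms
proof (induction ds arbitrary: j Hs)
  case Nil then show ?case by simp
next
  case (Cons p ds)
  show ?case
  proof (cases j)
    case 0
    then show ?thesis using Cons.prems by (cases p) (auto simp: ovr_def fun_eq_iff map_of_eq_None_iff split: option.splits)
  next
    case (Suc k)
    have "fst p \<notin> set (map fst ds)" using Cons.prems(1) by simp
    have k: "k < length ds" using Cons.prems(2) Suc by simp
    have dk: "fst (ds ! k) = d" using Cons.prems(3) Suc by simp
    have "d \<in> set (map fst ds)" using k dk by (metis length_map nth_map nth_mem)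
    moreover have "map fst (ds[k := (d, H')]) = map fst ds" using k dk by (metis list_update_id map_update nth_map prod.collapse fst_conv)
    ultimately have "fst p \<noteq> d" "fst p \<notin> set (map fst (ds[k := (d, H')]))" using \<open>fst p \<notin> set (map fst ds)\<close> by auto
    note nn = this
    have IH: "ovr (Hs(fst p := snd p)) (ds[k := (d, H')]) = (ovr (Hs(fst p := snd p)) ds)(d := H')"
      by (rule Cons.IH) (use Cons.prems(1) k dk in auto)
    have "(p # ds)[j := (d, H')] = p # ds[k := (d, H')]" using Suc by simp
    then have "ovr Hs ((p # ds)[j := (d, H')]) = ovr (Hs(fst p := snd p)) (ds[k := (d, H')])"
      using ovr_Cons[OF nn(2)] by simp
    also have "\<dots> = (ovr (Hs(fst p := snd p)) ds)(d := H')" by (rule IH)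
    also have "\<dots> = (ovr Hs (p # ds))(d := H')" using ovr_Cons[OF \<open>fst p \<notin> set (map fst ds)\<close>] by simp
    finally show ?thesis .
  qed
qed

lemma ovr_nth:
  assumes "distinct (map fst ds)" "j < length ds"
  shows "ovr Hs ds (fst (ds ! j)) = snd (ds ! j)"
proof -
  have "(fst (ds ! j), snd (ds ! j)) \<in> set ds" using assms(2) by simp
  then have "map_of ds (fst (ds ! j)) = Some (snd (ds ! j))" using assms(1) by (simp add: map_of_eq_Some_iff)
  then show ?thesis unfolding ovr_def by simp
qed

lemma iter1:
  assumes "is_sr R G S Hs X iG iH jG jH" "distinct (map fst ds)" "set (map fst ds) \<subseteq> gE G - S"
    "\<forall>p\<in>set ds. wf_graph (snd p) \<and> length (gext (snd p)) = length (gatt G (fst p)) \<and> (\<forall>z\<in>gE (snd p). R (glab (snd p) z) (glab (snd p) z))"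
  shows "\<exists>iH' jH'. is_sr R G (S \<union> set (map fst ds)) (ovr Hs ds) (repls X (map (\<lambda>p. (jG (fst p), snd p)) ds)) iG iH' jG jH'"
  using assms
proof (induction ds arbitrary: S Hs X iH jH)
  case Nil then show ?case by auto
next
  case (Cons p ds)
  obtain d H where p: "p = (d, H)" by (cases p)
  have d: "d \<in> gE G" "d \<notin> S" using Cons.prems(3) p by auto
  have H: "wf_graph H" "length (gext H) = length (gatt G d)" "\<And>z. z \<in> gE H \<Longrightarrow> R (glab H z) (glab H z)"
    using Cons.prems(4) p by auto
  have st: "is_sr R G (insert d S) (Hs(d := H)) (repl X (jG d) H) iG (iH(d := rmap X (jG d) H \<circ> id)) jG (jH(d := \<lambda>y. eoff X + id y))"
  proof -
    have isoH: "iso_via R id id H H" by (rule iso_via_id[OF H(1)]) (rule H(3))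
    show ?thesis by (rule sr_step1[OF Cons.prems(1) d H(1,2) isoH])
  qed
  have "\<exists>iH' jH'. is_sr R G (insert d S \<union> set (map fst ds)) (ovr (Hs(d := H)) ds) (repls (repl X (jG d) H) (map (\<lambda>p. (jG (fst p), snd p)) ds)) iG iH' jG jH'"
    apply (rule Cons.IH[OF st])
    using Cons.prems p by auto
  moreover have "ovr Hs (p # ds) = ovr (Hs(d := H)) ds" using ovr_Cons[of p ds Hs] Cons.prems(2) p by simp
  ultimately show ?case using p by simp
qed

lemma iter2:
  assumes "is_sr R G S Hs X iG iH jG jH" "s \<in> S" "distinct (map fst ds)" "set (map fst ds) \<subseteq> gE (Hs s)"
    "\<forall>p\<in>set ds. wf_graph (snd p) \<and> length (gext (snd p)) = length (gatt (Hs s) (fst p)) \<and> (\<forall>z\<in>gE (snd p). R (glab (snd p) z) (glab (snd p) z))"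
  shows "\<exists>iH' jH'. is_sr R G S (Hs(s := repls (Hs s) ds)) (repls X (map (\<lambda>p. (jH s (fst p), snd p)) ds)) iG iH' jG jH'
     \<and> (\<forall>z\<in>gE (Hs s) - set (map fst ds). jH' s z = jH s z)"
  using assms
proof (induction ds arbitrary: Hs X iH jH)
  case Nil
  have "Hs(s := Hs s) = Hs" by simp
  then show ?case using Nil by auto
next
  case (Cons p ds)
  obtain d K where p: "p = (d, K)" by (cases p)
  have d: "d \<in> gE (Hs s)" using Cons.prems(4) p by auto
  have K: "wf_graph K" "length (gext K) = length (gatt (Hs s) d)" "\<And>z. z \<in> gE K \<Longrightarrow> R (glab K z) (glab K z)"
    using Cons.prems(5) p by auto
  define jH2 where "jH2 = jH(s := \<lambda>z. if z < eoff (Hs s) then jH s z else eoff X + (z - eoff (Hs s)))"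
  have st: "is_sr R G S (Hs(s := repl (Hs s) d K)) (repl X (jH s d) K) iG
     (iH(s := \<lambda>u. if u \<in> gV (Hs s) then iH s u else voff X + (u - voff (Hs s)))) jG jH2"
    unfolding jH2_def by (rule sr_step2[OF Cons.prems(1,2) d K])
  have wfS: "wf_graph (Hs s)" using is_srD(3)[OF Cons.prems(1,2)] .
  have fES: "finite (gE (Hs s))" using wfS unfolding wf_graph_def by blast
  have rest: "set (map fst ds) \<subseteq> gE (Hs s) - {d}" using Cons.prems(3,4) p by auto
  have jH2eq: "\<And>z. z \<in> set (map fst ds) \<Longrightarrow> jH2 s z = jH s z"
    unfolding jH2_def using rest eoff_gt[OF fES] by auto
  have IH: "\<exists>iH' jH'. is_sr R G S ((Hs(s := repl (Hs s) d K))(s := repls ((Hs(s := repl (Hs s) d K)) s) ds))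
      (repls (repl X (jH s d) K) (map (\<lambda>p. (jH2 s (fst p), snd p)) ds)) iG iH' jG jH'
      \<and> (\<forall>z\<in>gE ((Hs(s := repl (Hs s) d K)) s) - set (map fst ds). jH' s z = jH2 s z)"
    apply (rule Cons.IH[OF st Cons.prems(2)])
    using Cons.prems(3) rest Cons.prems(5) p fES by (auto simp: gatt_repl_old)
  have meq: "map (\<lambda>p. (jH2 s (fst p), snd p)) ds = map (\<lambda>p. (jH s (fst p), snd p)) ds"
    using jH2eq by auto
  have jH2old: "\<And>z. z \<in> gE (Hs s) \<Longrightarrow> jH2 s z = jH s z" unfolding jH2_def using eoff_gt[OF fES] by auto
  have sub: "gE (Hs s) - set (map fst (p # ds)) \<subseteq> gE ((Hs(s := repl (Hs s) d K)) s) - set (map fst ds)"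
    using p by auto
  obtain iH' jH' where A: "is_sr R G S ((Hs(s := repl (Hs s) d K))(s := repls ((Hs(s := repl (Hs s) d K)) s) ds))
      (repls (repl X (jH s d) K) (map (\<lambda>p. (jH s (fst p), snd p)) ds)) iG iH' jG jH'"
    and Bp: "\<forall>z\<in>gE ((Hs(s := repl (Hs s) d K)) s) - set (map fst ds). jH' s z = jH2 s z"
    using IH[unfolded meq] by blast
  have fe: "(Hs(s := repl (Hs s) d K))(s := repls ((Hs(s := repl (Hs s) d K)) s) ds) = Hs(s := repls (Hs s) (p # ds))"
    using p by simp
  have "is_sr R G S (Hs(s := repls (Hs s) (p # ds))) (repls X (map (\<lambda>p. (jH s (fst p), snd p)) (p # ds))) iG iH' jG jH'"
    using A p unfolding fe by simp
  moreover have "\<forall>z\<in>gE (Hs s) - set (map fst (p # ds)). jH' s z = jH s z"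
  proof
    fix z assume z: "z \<in> gE (Hs s) - set (map fst (p # ds))"
    then have "z \<in> gE ((Hs(s := repl (Hs s) d K)) s) - set (map fst ds)" using sub by blast
    then have "jH' s z = jH2 s z" using Bp by blast
    then show "jH' s z = jH s z" using jH2old z by simp
  qed
  ultimately show ?case by blast
qed

lemma sr_self: "wf_graph G \<Longrightarrow> is_sr (=) G {} Hs G id iH id jH"
  by (rule sr_base[OF iso_via_id]) auto

lemma repls_sr:
  assumes "wf_graph B" "distinct (map fst ds)" "set (map fst ds) \<subseteq> gE B"
    "\<forall>p\<in>set ds. wf_graph (snd p) \<and> length (gext (snd p)) = length (gatt B (fst p))"
  shows "\<exists>iG iH jH. is_sr (=) B (set (map fst ds)) (ovr Hs ds) (repls B ds) iG iH id jH"
proof -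
  have "\<exists>iH' jH'. is_sr (=) B ({} \<union> set (map fst ds)) (ovr Hs ds) (repls B (map (\<lambda>p. (id (fst p), snd p)) ds)) id iH' id jH'"
    by (rule iter1[OF sr_self[OF assms(1)] assms(2)]) (use assms(3,4) in auto)
  then show ?thesis by auto
qed

lemma sr_iso_eq:
  assumes "is_sr (=) G S Hs X iG iH jG jH" "is_sr (=) G S Hs Y iG' iH' jG' jH'"
  shows "\<exists>f g. iso_via (=) f g X Y \<and> (\<forall>x\<in>gE G - S. g (jG x) = jG' x) \<and> (\<forall>s\<in>S. \<forall>y\<in>gE (Hs s). g (jH s y) = jH' s y)"
proof -
  obtain f g where "iso_via (\<lambda>a b. \<exists>c. c = a \<and> c = b) f g X Y" "(\<forall>x\<in>gE G - S. g (jG x) = jG' x)" "(\<forall>s\<in>S. \<forall>y\<in>gE (Hs s). g (jH s y) = jH' s y)"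
    using sr_unique[OF assms] by blast
  moreover have "\<And>a b. (\<exists>c. c = a \<and> c = b) \<Longrightarrow> a = b" by blast
  ultimately show ?thesis using iso_via_mono by metis
qed

lemma iso_agree:
  assumes "gV G = gV G'" "gE G = gE G'" "gext G = gext G'" "\<And>x. x \<in> gE G \<Longrightarrow> gatt G x = gatt G' x \<and> glab G x = glab G' x"
  shows "iso_via (=) id id G G'"
  using assms unfolding iso_via_def by auto

lemma voff_map[simp]: "voff (map_hgraph f G) = voff G" by (cases G) (simp add: voff_def)
lemma eoff_map[simp]: "eoff (map_hgraph f G) = eoff G" by (cases G) (simp add: eoff_def)
lemma gV_map[simp]: "gV (map_hgraph f G) = gV G" by (cases G) simp
lemma gE_map[simp]: "gE (map_hgraph f G) = gE G" by (cases G) simp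
lemma gatt_map[simp]: "gatt (map_hgraph f G) = gatt G" by (cases G) simp
lemma gext_map[simp]: "gext (map_hgraph f G) = gext G" by (cases G) simp
lemma glab_map[simp]: "glab (map_hgraph f G) = f \<circ> glab G" by (cases G) simp
lemma voff_relab[simp]: "voff (relab G e a) = voff G" by (simp add: relab_def voff_def)
lemma eoff_relab[simp]: "eoff (relab G e a) = eoff G" by (simp add: relab_def eoff_def)
lemma gV_relab[simp]: "gV (relab G e a) = gV G" by (simp add: relab_def)
lemma gE_relab[simp]: "gE (relab G e a) = gE G" by (simp add: relab_def)
lemma gatt_relab[simp]: "gatt (relab G e a) = gatt G" by (simp add: relab_def)
lemma gext_relab[simp]: "gext (relab G e a) = gext G" by (simp add: relab_def)
lemma glab_relab[simp]: "glab (relab G e a) = (glab G)(e := a)" by (simp add: relab_def)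

lemma hgraph_eqI: "gV G = gV G' \<Longrightarrow> gE G = gE G' \<Longrightarrow> gatt G = gatt G' \<Longrightarrow> glab G = glab G' \<Longrightarrow> gext G = gext G' \<Longrightarrow> G = G'"
  by (cases G; cases G') auto

lemma rmap_map[simp]: "rmap (map_hgraph f G) e (map_hgraph g H) = rmap G e H"
  unfolding rmap_def by (simp add: fun_eq_iff split: option.split)
lemma rmap_relab1[simp]: "rmap (relab G x a) e H = rmap G e H" unfolding rmap_def by (simp add: fun_eq_iff split: option.split)
lemma rmap_relab2[simp]: "rmap G e (relab H x a) = rmap G e H" unfolding rmap_def by (simp add: fun_eq_iff split: option.split)

lemma map_repl: "map_hgraph f (repl G e H) = repl (map_hgraph f G) e (map_hgraph f H)"
  by (rule hgraph_eqI) (auto simp: gatt_repl glab_repl fun_eq_iff)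

lemma relab_repl_new: "relab (repl G e H) (eoff G + d) a = repl G e (relab H d a)"
  by (rule hgraph_eqI) (auto simp: gatt_repl glab_repl fun_eq_iff)

lemma map_the_Some: "map_hgraph the (map_hgraph Some K) = K"
  by (cases K) (simp add: comp_def)

lemma div_left_norm:
  "map_hgraph the (relab (repl (map_hgraph Some H) e D) (eoff H + d0) (Some L))
   = repl H e (map_hgraph the (relab D d0 (Some L)))"
proof -
  have "relab (repl (map_hgraph Some H) e D) (eoff H + d0) (Some L) = repl (map_hgraph Some H) e (relab D d0 (Some L))"
    using relab_repl_new[of "map_hgraph Some H" e D d0 "Some L"] by simp
  then show ?thesis by (simp add: map_repl map_the_Some)
qed

lemma div_right_norm: "map_hgraph the (repl D d0 (map_hgraph Some F)) = repl (map_hgraph the D) d0 F"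
  by (simp add: map_repl map_the_Some)


lemma iso_via_comp:
  assumes "iso_via R f g G G'" "iso_via S f' g' G' G''"
  shows "iso_via (R OO S) (f' \<circ> f) (g' \<circ> g) G G''"
proof -
  have "bij_betw (f' \<circ> f) (gV G) (gV G'')" using assms unfolding iso_via_def by (blast intro: bij_betw_trans)
  moreover have "bij_betw (g' \<circ> g) (gE G) (gE G'')" using assms unfolding iso_via_def by (blast intro: bij_betw_trans)
  moreover have "\<forall>e\<in>gE G. gatt G'' ((g' \<circ> g) e) = map (f' \<circ> f) (gatt G e) \<and> (R OO S) (glab G e) (glab G'' ((g' \<circ> g) e))"
  proof
    fix e assume e: "e \<in> gE G"
    then have ge: "g e \<in> gE G'" using assms(1) unfolding iso_via_def bij_betw_def by blast
    show "gatt G'' ((g' \<circ> g) e) = map (f' \<circ> f) (gatt G e) \<and> (R OO S) (glab G e) (glab G'' ((g' \<circ> g) e))"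
      using assms e ge unfolding iso_via_def by auto
  qed
  moreover have "gext G'' = map (f' \<circ> f) (gext G)" using assms unfolding iso_via_def by simp
  ultimately show ?thesis unfolding iso_via_def by blast
qed

lemma giso_rel_trans:
  "giso_rel R G G' \<Longrightarrow> giso_rel S G' G'' \<Longrightarrow> giso_rel (R OO S) G G''"
  unfolding giso_rel_iff using iso_via_comp by blast

lemma iso_via_inv:
  assumes "iso_via R f g G G'" "wf_graph G"
  shows "iso_via (\<lambda>a b. R b a) (inv_into (gV G) f) (inv_into (gE G) g) G' G"
proof -
  have bf: "bij_betw f (gV G) (gV G')" and bg: "bij_betw g (gE G) (gE G')"
    and att: "\<And>e. e \<in> gE G \<Longrightarrow> gatt G' (g e) = map f (gatt G e)"
    and lab: "\<And>e. e \<in> gE G \<Longrightarrow> R (glab G e) (glab G' (g e))"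
    and ext: "gext G' = map f (gext G)" using assms(1) unfolding iso_via_def by auto
  have bf': "bij_betw (inv_into (gV G) f) (gV G') (gV G)" by (rule bij_betw_inv_into[OF bf])
  have bg': "bij_betw (inv_into (gE G) g) (gE G') (gE G)" by (rule bij_betw_inv_into[OF bg])
  have injf: "inj_on f (gV G)" using bf unfolding bij_betw_def by blast
  have injg: "inj_on g (gE G)" using bg unfolding bij_betw_def by blast
  have mapinv: "\<And>xs. set xs \<subseteq> gV G \<Longrightarrow> map (inv_into (gV G) f) (map f xs) = xs"
  proof -
    fix xs :: "nat list" assume "set xs \<subseteq> gV G"
    then show "map (inv_into (gV G) f) (map f xs) = xs" by (induct xs) (auto simp: inv_into_f_f[OF injf])
  qed
  have wf: "\<And>e. e \<in> gE G \<Longrightarrow> set (gatt G e) \<subseteq> gV G" "set (gext G) \<subseteq> gV G" using assms(2) unfolding wf_graph_def by auto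
  have "\<forall>e'\<in>gE G'. gatt G (inv_into (gE G) g e') = map (inv_into (gV G) f) (gatt G' e') \<and> R (glab G (inv_into (gE G) g e')) (glab G' e')"
  proof
    fix e' assume e': "e' \<in> gE G'"
    then obtain e where e: "e \<in> gE G" "e' = g e" using bg unfolding bij_betw_def by blast
    have ie: "inv_into (gE G) g e' = e" using e injg by (simp add: inv_into_f_f)
    show "gatt G (inv_into (gE G) g e') = map (inv_into (gV G) f) (gatt G' e') \<and> R (glab G (inv_into (gE G) g e')) (glab G' e')"
      using ie e att lab mapinv wf by simp
  qed
  moreover have "gext G = map (inv_into (gV G) f) (gext G')" using ext mapinv wf by simp
  ultimately show ?thesis unfolding iso_via_def using bf' bg' by blast
qed

lemma tp_eq_refl: "tp_eq t t"
proof (induction t)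
  case (Prim x) then show ?case by (rule tp_eq.intros)
next
  case (Div N D)
  have "iso_via (rel_option tp_eq) id id D D"
    unfolding iso_via_def
  proof (intro conjI ballI)
    fix e assume "e \<in> gE D"
    show "rel_option tp_eq (glab D e) (glab D (id e))"
    proof (cases "glab D e")
      case None then show ?thesis by simp
    next
      case (Some t)
      have "Some t \<in> set_hgraph D" using Some by (cases D) (auto simp: image_iff, metis)
      then have "tp_eq t t" using Div.IH(2)[of "Some t" t] by simp
      then show ?thesis using Some by simp
    qed
  qed auto
  then have "giso_rel (rel_option tp_eq) D D" unfolding giso_rel_iff by blast
  then show ?case using Div.IH(1) by (rule tp_eq.intros(2)[rotated])
next
  case (Times M)
  have "iso_via tp_eq id id M M"
    unfolding iso_via_def
  proof (intro conjI ballI)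
    fix e assume "e \<in> gE M"
    show "tp_eq (glab M e) (glab M (id e))"
      using Times.IH by (cases M) auto
  qed auto
  then have "giso_rel tp_eq M M" unfolding giso_rel_iff by blast
  then show ?case by (rule tp_eq.intros(3))
qed

lemma tp_eq_trans: "tp_eq a b \<Longrightarrow> tp_eq b c \<Longrightarrow> tp_eq a c"
proof (induction a b arbitrary: c rule: tp_eq.induct)
  case (1 p) then show ?case by simp
next
  case (2 N N' D D')
  from 2(4) obtain N'' D'' where c: "c = Div N'' D''" "tp_eq N' N''" "giso_rel (rel_option tp_eq) D' D''"
    by (cases rule: tp_eq.cases) auto
  have g: "giso_rel (rel_option (\<lambda>x1 x2. tp_eq x1 x2 \<and> (\<forall>c. tp_eq x2 c \<longrightarrow> tp_eq x1 c)) OO rel_option tp_eq) D D''"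
    by (rule giso_rel_trans[OF 2(3) c(3)])
  have le: "rel_option (\<lambda>x1 x2. tp_eq x1 x2 \<and> (\<forall>c. tp_eq x2 c \<longrightarrow> tp_eq x1 c)) OO rel_option tp_eq \<le> rel_option tp_eq"
    by (auto simp: option.rel_sel relcompp_apply le_fun_def)
  have "giso_rel (rel_option tp_eq) D D''" by (rule giso_rel_mono[OF le, THEN predicate2D, OF g])
  then show ?case using c 2(2) by (auto intro: tp_eq.intros)
next
  case (3 M M')
  from 3(2) obtain M'' where c: "c = Times M''" "giso_rel tp_eq M' M''"
    by (cases rule: tp_eq.cases) auto
  have g: "giso_rel ((\<lambda>x1 x2. tp_eq x1 x2 \<and> (\<forall>c. tp_eq x2 c \<longrightarrow> tp_eq x1 c)) OO tp_eq) M M''"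
    by (rule giso_rel_trans[OF 3(1) c(2)])
  have le: "((\<lambda>x1 x2. tp_eq x1 x2 \<and> (\<forall>c. tp_eq x2 c \<longrightarrow> tp_eq x1 c)) OO tp_eq) \<le> tp_eq"
    by (auto simp: relcompp_apply le_fun_def)
  have "giso_rel tp_eq M M''" by (rule giso_rel_mono[OF le, THEN predicate2D, OF g])
  then show ?case using c by (auto intro: tp_eq.intros)
qed


inductive_cases wf_DivE: "wf_tp ar (Div N D)"
inductive_cases wf_TimesE: "wf_tp ar (Times M)"
inductive_cases tp_eq_PrimE1: "tp_eq (Prim p) b"
inductive_cases tp_eq_PrimE2: "tp_eq a (Prim p)"
inductive_cases tp_eq_DivE1: "tp_eq (Div N D) b"
inductive_cases tp_eq_DivE2: "tp_eq a (Div N D)"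
inductive_cases tp_eq_TimesE1: "tp_eq (Times M) b"
inductive_cases tp_eq_TimesE2: "tp_eq a (Times M)"

lemma div_d0:
  assumes "wf_tp ar (Div N D)" "d \<in> gE D" "glab D d = None"
  shows "tp_type ar (Div N D) = length (gatt D d)" "\<And>d'. d' \<in> gE D \<Longrightarrow> glab D d' = None \<Longrightarrow> d' = d"
proof -
  obtain d0 where d0: "d0 \<in> gE D" "glab D d0 = None"
    and oth: "\<forall>d\<in>gE D - {d0}. \<exists>t. glab D d = Some t \<and> wf_tp ar t \<and> tp_type ar t = length (gatt D d)"
    using assms(1) by (rule wf_DivE) blast
  have u: "\<And>d'. d' \<in> gE D \<Longrightarrow> glab D d' = None \<Longrightarrow> d' = d0" using oth by (metis DiffI option.simps(3) singletonD)
  show "\<And>d'. d' \<in> gE D \<Longrightarrow> glab D d' = None \<Longrightarrow> d' = d" using u assms(2,3) by metis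
  have "(SOME d. d \<in> gE D \<and> glab D d = None) = d0"
    using someI_ex[of "\<lambda>d. d \<in> gE D \<and> glab D d = None"] d0 u by blast
  then show "tp_type ar (Div N D) = length (gatt D d)" using u assms(2,3) by simp
qed

lemma iso_via_strengthen:
  "iso_via R f g G G' \<Longrightarrow> (\<And>e. e \<in> gE G \<Longrightarrow> P (glab G e) (glab G' (g e))) \<Longrightarrow> iso_via (\<lambda>a b. R a b \<and> P a b) f g G G'"
  unfolding iso_via_def by blast

lemma iso_via_edge: "iso_via R f g G G' \<Longrightarrow> e \<in> gE G \<Longrightarrow> g e \<in> gE G'"
  unfolding iso_via_def bij_betw_def by blast
lemma iso_via_edge_inv: "iso_via R f g G G' \<Longrightarrow> e' \<in> gE G' \<Longrightarrow> \<exists>e\<in>gE G. e' = g e"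
  unfolding iso_via_def bij_betw_def by blast
lemma iso_via_inj: "iso_via R f g G G' \<Longrightarrow> e \<in> gE G \<Longrightarrow> e' \<in> gE G \<Longrightarrow> g e = g e' \<Longrightarrow> e = e'"
  unfolding iso_via_def bij_betw_def inj_on_def by blast
lemma iso_via_att: "iso_via R f g G G' \<Longrightarrow> e \<in> gE G \<Longrightarrow> gatt G' (g e) = map f (gatt G e)"
  unfolding iso_via_def by blast
lemma iso_via_lab: "iso_via R f g G G' \<Longrightarrow> e \<in> gE G \<Longrightarrow> R (glab G e) (glab G' (g e))"
  unfolding iso_via_def by blast
lemma iso_via_ext: "iso_via R f g G G' \<Longrightarrow> gext G' = map f (gext G)"
  unfolding iso_via_def by blast

lemma tp_eq_wf: "tp_eq a b \<Longrightarrow> wf_tp ar a \<Longrightarrow> wf_tp ar b \<and> tp_type ar b = tp_type ar a"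
proof (induction a b rule: tp_eq.induct)
  case (1 p) then show ?case by simp
next
  case (2 N N' D D')
  obtain d0 where d0: "d0 \<in> gE D" "glab D d0 = None" and wfN: "wf_tp ar N" and wfD: "wf_graph D"
    and oth: "\<forall>d\<in>gE D - {d0}. \<exists>t. glab D d = Some t \<and> wf_tp ar t \<and> tp_type ar t = length (gatt D d)"
    and tN: "tp_type ar N = length (gext D)"
    using 2(4) by (rule wf_DivE) blast
  obtain f g where iso: "iso_via (rel_option (\<lambda>x1 x2. tp_eq x1 x2 \<and> (wf_tp ar x1 \<longrightarrow> wf_tp ar x2 \<and> tp_type ar x2 = tp_type ar x1))) f g D D'"
    using 2(3) unfolding giso_rel_iff by blast
  have wfD': "wf_graph D'" by (rule iso_wf[OF iso wfD])
  have gd0: "g d0 \<in> gE D'" "glab D' (g d0) = None" using iso_via_edge[OF iso d0(1)] iso_via_lab[OF iso d0(1)] d0(2) by auto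
  have oth': "\<forall>d\<in>gE D' - {g d0}. \<exists>t. glab D' d = Some t \<and> wf_tp ar t \<and> tp_type ar t = length (gatt D' d)"
  proof
    fix d' assume d': "d' \<in> gE D' - {g d0}"
    then obtain d where d: "d \<in> gE D" "d' = g d" using iso_via_edge_inv[OF iso] by blast
    then have "d \<noteq> d0" using d' by auto
    then obtain t where t: "glab D d = Some t" "wf_tp ar t" "tp_type ar t = length (gatt D d)" using oth d by blast
    have r: "rel_option (\<lambda>x1 x2. tp_eq x1 x2 \<and> (wf_tp ar x1 \<longrightarrow> wf_tp ar x2 \<and> tp_type ar x2 = tp_type ar x1)) (glab D d) (glab D' d')"
      using iso_via_lab[OF iso d(1)] d(2) by simp
    then obtain t' where t': "glab D' d' = Some t'" "wf_tp ar t'" "tp_type ar t' = tp_type ar t"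
      using t by (cases "glab D' d'") auto
    have "length (gatt D' d') = length (gatt D d)" using iso_via_att[OF iso d(1)] d(2) by simp
    then show "\<exists>t. glab D' d' = Some t \<and> wf_tp ar t \<and> tp_type ar t = length (gatt D' d')" using t t' by auto
  qed
  have N': "wf_tp ar N' \<and> tp_type ar N' = tp_type ar N" using 2(2) wfN by blast
  have "length (gext D') = length (gext D)" using iso_via_ext[OF iso] by simp
  then have wf': "wf_tp ar (Div N' D')" using N' tN by (intro wf_Div[OF _ wfD' gd0 oth']) auto
  have "tp_type ar (Div N' D') = length (gatt D' (g d0))" by (rule div_d0(1)[OF wf' gd0])
  also have "\<dots> = length (gatt D d0)" using iso_via_att[OF iso d0(1)] by simp
  also have "\<dots> = tp_type ar (Div N D)" by (rule div_d0(1)[OF 2(4) d0, symmetric])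
  finally show ?case using wf' by simp
next
  case (3 M M')
  have wfM: "wf_graph M" and oth: "\<forall>m\<in>gE M. wf_tp ar (glab M m) \<and> tp_type ar (glab M m) = length (gatt M m)"
    using 3(2) by (rule wf_TimesE, blast)+
  obtain f g where iso: "iso_via (\<lambda>x1 x2. tp_eq x1 x2 \<and> (wf_tp ar x1 \<longrightarrow> wf_tp ar x2 \<and> tp_type ar x2 = tp_type ar x1)) f g M M'"
    using 3(1) unfolding giso_rel_iff by blast
  have wfM': "wf_graph M'" by (rule iso_wf[OF iso wfM])
  have oth': "\<forall>m\<in>gE M'. wf_tp ar (glab M' m) \<and> tp_type ar (glab M' m) = length (gatt M' m)"
  proof
    fix m' assume "m' \<in> gE M'"
    then obtain m where m: "m \<in> gE M" "m' = g m" using iso_via_edge_inv[OF iso] by blast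
    show "wf_tp ar (glab M' m') \<and> tp_type ar (glab M' m') = length (gatt M' m')"
      using iso_via_lab[OF iso m(1)] iso_via_att[OF iso m(1)] oth m by auto
  qed
  have "wf_tp ar (Times M')" by (rule wf_Times[OF wfM' oth'])
  then show ?case using iso_via_ext[OF iso] by simp
qed

lemma tp_eq_sym: "tp_eq a b \<Longrightarrow> wf_tp ar a \<Longrightarrow> tp_eq b a"
proof (induction a b rule: tp_eq.induct)
  case (1 p) show ?case by (rule tp_eq.intros)
next
  case (2 N N' D D')
  obtain d0 where d0: "d0 \<in> gE D" "glab D d0 = None" and wfN: "wf_tp ar N" and wfD: "wf_graph D"
    and oth: "\<forall>d\<in>gE D - {d0}. \<exists>t. glab D d = Some t \<and> wf_tp ar t \<and> tp_type ar t = length (gatt D d)"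
    using 2(4) by (rule wf_DivE) blast
  obtain f g where iso: "iso_via (rel_option (\<lambda>x1 x2. tp_eq x1 x2 \<and> (wf_tp ar x1 \<longrightarrow> tp_eq x2 x1))) f g D D'"
    using 2(3) unfolding giso_rel_iff by blast
  have wl: "\<And>d t. d \<in> gE D \<Longrightarrow> glab D d = Some t \<Longrightarrow> wf_tp ar t"
    using oth d0 by (metis DiffI option.distinct(1) option.inject singletonD)
  have iso2: "iso_via (\<lambda>a b. rel_option (\<lambda>x1 x2. tp_eq x1 x2 \<and> (wf_tp ar x1 \<longrightarrow> tp_eq x2 x1)) b a \<and> (\<forall>t. b = Some t \<longrightarrow> wf_tp ar t))
     (inv_into (gV D) f) (inv_into (gE D) g) D' D"
  proof (rule iso_via_strengthen[OF iso_via_inv[OF iso wfD]])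
    fix e' assume "e' \<in> gE D'"
    then have "inv_into (gE D) g e' \<in> gE D" using iso_via_edge[OF iso_via_inv[OF iso wfD]] by blast
    then show "\<forall>t. glab D (inv_into (gE D) g e') = Some t \<longrightarrow> wf_tp ar t" using wl by blast
  qed
  have "iso_via (rel_option tp_eq) (inv_into (gV D) f) (inv_into (gE D) g) D' D"
    by (rule iso_via_mono[OF iso2]) (auto simp: option.rel_sel)
  then have "giso_rel (rel_option tp_eq) D' D" unfolding giso_rel_iff by blast
  then show ?case using 2(2) wfN by (auto intro: tp_eq.intros)
next
  case (3 M M')
  have wfM: "wf_graph M" and oth: "\<forall>m\<in>gE M. wf_tp ar (glab M m) \<and> tp_type ar (glab M m) = length (gatt M m)"
    using 3(2) by (rule wf_TimesE, blast)+
  obtain f g where iso: "iso_via (\<lambda>x1 x2. tp_eq x1 x2 \<and> (wf_tp ar x1 \<longrightarrow> tp_eq x2 x1)) f g M M'"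
    using 3(1) unfolding giso_rel_iff by blast
  have iso2: "iso_via (\<lambda>a b. (\<lambda>x1 x2. tp_eq x1 x2 \<and> (wf_tp ar x1 \<longrightarrow> tp_eq x2 x1)) b a \<and> wf_tp ar b)
     (inv_into (gV M) f) (inv_into (gE M) g) M' M"
  proof (rule iso_via_strengthen[OF iso_via_inv[OF iso wfM]])
    fix e' assume "e' \<in> gE M'"
    then have "inv_into (gE M) g e' \<in> gE M" using iso_via_edge[OF iso_via_inv[OF iso wfM]] by blast
    then show "wf_tp ar (glab M (inv_into (gE M) g e'))" using oth by blast
  qed
  have "iso_via tp_eq (inv_into (gV M) f) (inv_into (gE M) g) M' M"
    by (rule iso_via_mono[OF iso2]) auto
  then have "giso_rel tp_eq M' M" unfolding giso_rel_iff by blast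
  then show ?case by (auto intro: tp_eq.intros)
qed


definition isoE :: "'a hgraph \<Rightarrow> 'a hgraph \<Rightarrow> bool" where
"isoE X Y \<longleftrightarrow> (\<exists>f g. iso_via (=) f g X Y) \<and> (\<exists>f g. iso_via (=) f g Y X)"

lemma isoE_sym: "isoE X Y \<Longrightarrow> isoE Y X" unfolding isoE_def by blast

lemma isoE_trans: "isoE X Y \<Longrightarrow> isoE Y Z \<Longrightarrow> isoE X Z"
proof -
  have eq: "\<And>R. ((=) OO (=)) = ((=) :: 'a \<Rightarrow> 'a \<Rightarrow> bool)" by (auto simp: fun_eq_iff)
  assume "isoE X Y" "isoE Y Z"
  then show "isoE X Z" unfolding isoE_def using iso_via_comp[where R="(=)" and S="(=)"] eq by metis
qed

lemma sr_isoE: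
  assumes "is_sr (=) G S Hs X iG iH jG jH" "is_sr (=) G S Hs Y iG' iH' jG' jH'"
  shows "isoE X Y"
  unfolding isoE_def using sr_iso_eq[OF assms] sr_iso_eq[OF assms(2,1)] by blast

lemma isoE_giso: "isoE X Y \<Longrightarrow> giso_rel tp_eq X Y"
  unfolding isoE_def giso_rel_iff using iso_via_mono[of "(=)" _ _ X Y tp_eq] tp_eq_refl by blast

lemma self_step1:
  assumes "wf_graph G" "e \<in> gE G" "wf_graph H" "length (gext H) = length (gatt G e)"
  shows "\<exists>iH jH. is_sr (=) G {e} (Hs(e := H)) (repl G e H) id iH id jH \<and> (\<forall>y. jH e y = eoff G + y)"
proof -
  have isoH: "iso_via (=) id id H H" by (rule iso_via_id[OF assms(3)]) simp
  have "is_sr (=) G (insert e {}) (Hs(e := H)) (repl G (id e) H) id ((iH0)(e := rmap G (id e) H \<circ> id)) id ((jH0)(e := \<lambda>y. eoff G + id y))"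
    by (rule sr_step1[OF sr_self[OF assms(1)] assms(2) _ assms(3) assms(4) isoH]) simp
  then show ?thesis by fastforce
qed

lemma wf_repls:
  assumes "wf_graph B" "distinct (map fst ds)" "set (map fst ds) \<subseteq> gE B"
    "\<forall>p\<in>set ds. wf_graph (snd p) \<and> length (gext (snd p)) = length (gatt B (fst p))"
  shows "wf_graph (repls B ds)"
  using repls_sr[OF assms, of "\<lambda>_. B"] sr_wf by blast

lemma gext_repls[simp]: "gext (repls B ds) = gext B"
  by (induction ds arbitrary: B) auto

lemma ovr_upd_out: "e \<notin> set (map fst ds) \<Longrightarrow> ovr (Hs(e := H)) ds = (ovr Hs ds)(e := H)"
proof -
  assume "e \<notin> set (map fst ds)"
  then have n: "map_of ds e = None" by (simp add: map_of_eq_None_iff)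
  show ?thesis unfolding ovr_def by (auto simp: fun_eq_iff n split: option.split)
qed

lemma L_cong:
  assumes iso: "iso_via tp_eq f g G0 G" and wf0: "wf_graph G0" and e: "e \<in> gE G0"
    and isoH: "iso_via tp_eq \<phi> \<psi> H0 H" and wfH0: "wf_graph H0" and len: "length (gext H0) = length (gatt G0 e)"
  shows "giso_rel tp_eq (repl G0 e H0) (repl G (g e) H)"
proof -
  obtain iH jH where X: "is_sr (=) G0 {e} ((\<lambda>_. H0)(e := H0)) (repl G0 e H0) id iH id jH"
    using self_step1[OF wf0 e wfH0 len] by blast
  have Y: "is_sr tp_eq G0 (insert e {}) ((\<lambda>_. H0)(e := H0)) (repl G (g e) H) f ((\<lambda>_. id)(e := rmap G (g e) H \<circ> \<phi>)) g ((\<lambda>_. id)(e := \<lambda>y. eoff G + \<psi> y))"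
    by (rule sr_step1[OF sr_base[OF iso wf0] e _ wfH0 len isoH]) simp
  obtain f' g' where "iso_via (\<lambda>a b. \<exists>c. c = a \<and> tp_eq c b) f' g' (repl G0 e H0) (repl G (g e) H)"
    using sr_unique[OF X] Y by fastforce
  then have "iso_via tp_eq f' g' (repl G0 e H0) (repl G (g e) H)" by (rule iso_via_mono) blast
  then show ?thesis unfolding giso_rel_iff by blast
qed

lemma L_assoc:
  assumes wfG: "wf_graph G" and e: "e \<in> gE G" and wfH: "wf_graph H" and lenH: "length (gext H) = length (gatt G e)"
    and y: "y \<in> gE H" and wfK: "wf_graph K" and lenK: "length (gext K) = length (gatt H y)"
  shows "isoE (repl (repl G e H) (eoff G + y) K) (repl G e (repl H y K))"
proof -
  obtain iH jH where X0: "is_sr (=) G {e} ((\<lambda>_. H)(e := H)) (repl G e H) id iH id jH" and jH: "\<forall>y. jH e y = eoff G + y"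
    using self_step1[OF wfG e wfH lenH] by blast
  have X: "is_sr (=) G {e} (((\<lambda>_. H)(e := H))(e := repl (((\<lambda>_. H)(e := H)) e) y K)) (repl (repl G e H) (jH e y) K) id
     (iH(e := \<lambda>u. if u \<in> gV (((\<lambda>_. H)(e := H)) e) then iH e u else voff (repl G e H) + (u - voff (((\<lambda>_. H)(e := H)) e)))) id
     (jH(e := \<lambda>z. if z < eoff (((\<lambda>_. H)(e := H)) e) then jH e z else eoff (repl G e H) + (z - eoff (((\<lambda>_. H)(e := H)) e))))"
    by (rule sr_step2[OF X0]) (use y wfK lenK in auto)
  have wfHK: "wf_graph (repl H y K)" by (rule wf_graph_repl[OF wfH y wfK lenK])
  have "\<exists>iH jH. is_sr (=) G {e} ((\<lambda>_. H)(e := repl H y K)) (repl G e (repl H y K)) id iH id jH \<and> (\<forall>y. jH e y = eoff G + y)"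
    by (rule self_step1[OF wfG e wfHK]) (simp add: lenH)
  then obtain iH' jH' where Y: "is_sr (=) G {e} ((\<lambda>_. H)(e := repl H y K)) (repl G e (repl H y K)) id iH' id jH'" by blast
  show ?thesis by (rule sr_isoE[OF _ Y]) (use X jH in simp)
qed

lemma L_comm:
  assumes wfG: "wf_graph G" and e1: "e1 \<in> gE G" and e2: "e2 \<in> gE G" and ne: "e1 \<noteq> e2"
    and wf1: "wf_graph H1" and len1: "length (gext H1) = length (gatt G e1)"
    and wf2: "wf_graph H2" and len2: "length (gext H2) = length (gatt G e2)"
  shows "isoE (repl (repl G e1 H1) e2 H2) (repl (repl G e2 H2) e1 H1)"
proof -
  have i1: "iso_via (=) id id H1 H1" by (rule iso_via_id[OF wf1]) simp
  have i2: "iso_via (=) id id H2 H2" by (rule iso_via_id[OF wf2]) simp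
  obtain iH jH where X0: "is_sr (=) G {e1} ((\<lambda>_. H1)(e1 := H1)) (repl G e1 H1) id iH id jH"
    using self_step1[OF wfG e1 wf1 len1] by blast
  have X: "is_sr (=) G (insert e2 {e1}) (((\<lambda>_. H1)(e1 := H1))(e2 := H2)) (repl (repl G e1 H1) (id e2) H2) id
      (iH(e2 := rmap (repl G e1 H1) (id e2) H2 \<circ> id)) id (jH(e2 := \<lambda>y. eoff (repl G e1 H1) + id y))"
    by (rule sr_step1[OF X0 e2 _ wf2 len2 i2]) (use ne in simp)
  obtain iH' jH' where Y0: "is_sr (=) G {e2} ((\<lambda>_. H1)(e2 := H2)) (repl G e2 H2) id iH' id jH'"
    using self_step1[OF wfG e2 wf2 len2] by blast
  have Y: "is_sr (=) G (insert e1 {e2}) (((\<lambda>_. H1)(e2 := H2))(e1 := H1)) (repl (repl G e2 H2) (id e1) H1) id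
      (iH'(e1 := rmap (repl G e2 H2) (id e1) H1 \<circ> id)) id (jH'(e1 := \<lambda>y. eoff (repl G e2 H2) + id y))"
    by (rule sr_step1[OF Y0 e1 _ wf1 len1 i1]) (use ne in simp)
  have "insert e1 {e2} = insert e2 {e1}" by blast
  moreover have "((\<lambda>_. H1)(e2 := H2))(e1 := H1) = ((\<lambda>_. H1)(e1 := H1))(e2 := H2)" using ne by (auto simp: fun_eq_iff)
  ultimately show ?thesis using sr_isoE[OF X] Y by simp
qed

lemma handle_simps[simp]: "gV (handle a n) = {0..<n}" "gE (handle a n) = {0}" "gatt (handle a n) x = [0..<n]"
  "glab (handle a n) x = a" "gext (handle a n) = [0..<n]"
  by (simp_all add: handle_def)

lemma wf_handle: "wf_graph (handle a n)" unfolding wf_graph_def by simp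

lemma L_ax:
  assumes wfG: "wf_graph G" and e: "e \<in> gE G" and lab: "glab G e = a" and len: "length (gatt G e) = n"
  shows "isoE G (repl G e (handle a n))"
proof -
  have attV: "set (gatt G e) \<subseteq> gV G" and dis: "distinct (gatt G e)" using wfG e unfolding wf_graph_def by auto
  have inj: "inj_on (\<lambda>i. gatt G e ! i) {0..<n}" using dis len by (auto simp: inj_on_def nth_eq_iff_index_eq)
  have img: "(\<lambda>i. gatt G e ! i) ` {0..<n} \<subseteq> gV G" using attV len by (auto)
  have mapn: "map (\<lambda>i. gatt G e ! i) [0..<n] = gatt G e" using len map_nth[of "gatt G e"] by simp
  have X: "is_sr (=) G {e} (\<lambda>_. handle a n) G id (\<lambda>_ i. gatt G e ! i) id (\<lambda>_ _. e)"
    unfolding is_sr_def using wfG e inj img mapn lab len by (auto simp: wf_handle)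
  have "\<exists>iH jH. is_sr (=) G {e} ((\<lambda>_. handle a n)(e := handle a n)) (repl G e (handle a n)) id iH id jH \<and> (\<forall>y. jH e y = eoff G + y)"
    by (rule self_step1[OF wfG e wf_handle]) (simp add: len)
  then obtain iH jH where Y: "is_sr (=) G {e} ((\<lambda>_. handle a n)(e := handle a n)) (repl G e (handle a n)) id iH id jH" by blast
  have "(\<lambda>_. handle a n)(e := handle a n) = (\<lambda>_. handle a n)" by (auto simp: fun_eq_iff)
  then show ?thesis using sr_isoE[OF X] Y by metis
qed


abbreviation shift :: "nat \<Rightarrow> (nat \<times> 'a) list \<Rightarrow> (nat \<times> 'a) list" where
"shift k ds \<equiv> map (\<lambda>p. (k + fst p, snd p)) ds"

lemma map_fst_update: "j < length ds \<Longrightarrow> map fst (ds[j := (fst (ds ! j), H)]) = map fst ds"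
  by (metis fst_conv list_update_id map_update nth_map)

lemma set_update_sub: "set (xs[j := x]) \<subseteq> insert x (set xs)"
  by (rule set_update_subset_insert)

lemma repls_cases:
  assumes wfB: "wf_graph B" and dis: "distinct (map fst ds)" and sub: "set (map fst ds) \<subseteq> gE B"
    and comp: "\<forall>p\<in>set ds. wf_graph (snd p) \<and> length (gext (snd p)) = length (gatt B (fst p))"
    and e0: "e0 \<in> gE (repls B ds)"
  shows "(e0 \<in> gE B - set (map fst ds) \<and> glab (repls B ds) e0 = glab B e0
      \<and> (\<forall>H. wf_graph H \<longrightarrow> length (gext H) = length (gatt B e0) \<longrightarrow> isoE (repl (repls B ds) e0 H) (repls (repl B e0 H) ds)))
    \<or> (\<exists>j<length ds. \<exists>y\<in>gE (snd (ds ! j)). glab (repls B ds) e0 = glab (snd (ds ! j)) y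
      \<and> (\<forall>H. wf_graph H \<longrightarrow> length (gext H) = length (gatt (snd (ds ! j)) y) \<longrightarrow>
          isoE (repl (repls B ds) e0 H) (repls B (ds[j := (fst (ds ! j), repl (snd (ds ! j)) y H)]))))"
proof -
  define S where "S = set (map fst ds)"
  define Hs0 where "Hs0 = (\<lambda>_::nat. B)"
  obtain iG iH jH where G: "is_sr (=) B S (ovr Hs0 ds) (repls B ds) iG iH id jH"
    using repls_sr[OF wfB dis sub comp] unfolding S_def by blast
  have E: "gE (repls B ds) = id ` (gE B - S) \<union> (\<Union>s\<in>S. jH s ` gE (ovr Hs0 ds s))" by (rule is_srD(11)[OF G])
  from e0 consider (a) "e0 \<in> gE B - S" | (b) s y where "s \<in> S" "y \<in> gE (ovr Hs0 ds s)" "e0 = jH s y"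
    unfolding E by auto
  then show ?thesis
  proof cases
    case a
    have lab: "glab (repls B ds) e0 = glab B e0" using is_srD(17)[OF G a] by simp
    have "\<forall>H. wf_graph H \<longrightarrow> length (gext H) = length (gatt B e0) \<longrightarrow> isoE (repl (repls B ds) e0 H) (repls (repl B e0 H) ds)"
    proof (intro allI impI)
      fix H :: "'a hgraph" assume wfH: "wf_graph H" and len: "length (gext H) = length (gatt B e0)"
      have isoH: "iso_via (=) id id H H" by (rule iso_via_id[OF wfH]) simp
      have X: "is_sr (=) B (insert e0 S) ((ovr Hs0 ds)(e0 := H)) (repl (repls B ds) (id e0) H) iG (iH(e0 := rmap (repls B ds) (id e0) H \<circ> id)) id (jH(e0 := \<lambda>y. eoff (repls B ds) + id y))"
        by (rule sr_step1[OF G _ _ wfH len isoH]) (use a in auto)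
      obtain iH1 jH1 where Y0: "is_sr (=) B {e0} (Hs0(e0 := H)) (repl B e0 H) id iH1 id jH1"
        using self_step1[OF wfB _ wfH len] a by blast
      have "\<exists>iH' jH'. is_sr (=) B ({e0} \<union> set (map fst ds)) (ovr (Hs0(e0 := H)) ds) (repls (repl B e0 H) (map (\<lambda>p. (id (fst p), snd p)) ds)) id iH' id jH'"
        by (rule iter1[OF Y0 dis]) (use a sub comp in \<open>auto simp: S_def\<close>)
      then obtain iH2 jH2 where Y: "is_sr (=) B ({e0} \<union> S) ((ovr Hs0 ds)(e0 := H)) (repls (repl B e0 H) ds) id iH2 id jH2"
        using ovr_upd_out[of e0 ds Hs0 H] a unfolding S_def by auto
      have "insert e0 S = {e0} \<union> S" by blast
      then show "isoE (repl (repls B ds) e0 H) (repls (repl B e0 H) ds)" using sr_isoE[OF X] Y by simp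
    qed
    then show ?thesis using a lab unfolding S_def by blast
  next
    case b
    obtain j where j: "j < length ds" "fst (ds ! j) = s" using b(1) unfolding S_def by (metis in_set_conv_nth length_map nth_map)
    have Hj: "ovr Hs0 ds s = snd (ds ! j)" using ovr_nth[OF dis j(1)] j(2) by simp
    have y: "y \<in> gE (snd (ds ! j))" using b(2) Hj by simp
    have lab: "glab (repls B ds) e0 = glab (snd (ds ! j)) y" using is_srD(19)[OF G b(1,2)] Hj b(3) by simp
    have "\<forall>H. wf_graph H \<longrightarrow> length (gext H) = length (gatt (snd (ds ! j)) y) \<longrightarrow>
          isoE (repl (repls B ds) e0 H) (repls B (ds[j := (fst (ds ! j), repl (snd (ds ! j)) y H)]))"
    proof (intro allI impI)
      fix H :: "'a hgraph" assume wfH: "wf_graph H" and len: "length (gext H) = length (gatt (snd (ds ! j)) y)"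
      have X: "is_sr (=) B S ((ovr Hs0 ds)(s := repl (ovr Hs0 ds s) y H)) (repl (repls B ds) (jH s y) H) iG
         (iH(s := \<lambda>u. if u \<in> gV (ovr Hs0 ds s) then iH s u else voff (repls B ds) + (u - voff (ovr Hs0 ds s)))) id
         (jH(s := \<lambda>z. if z < eoff (ovr Hs0 ds s) then jH s z else eoff (repls B ds) + (z - eoff (ovr Hs0 ds s))))"
        by (rule sr_step2[OF G b(1,2) wfH]) (use len Hj in auto)
      define ds2 where "ds2 = ds[j := (fst (ds ! j), repl (snd (ds ! j)) y H)]"
      have mf: "map fst ds2 = map fst ds" unfolding ds2_def by (rule map_fst_update[OF j(1)])
      have cj: "wf_graph (snd (ds ! j))" "length (gext (snd (ds ! j))) = length (gatt B (fst (ds ! j)))"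
        using comp j(1) nth_mem by blast+
      have comp2: "\<forall>p\<in>set ds2. wf_graph (snd p) \<and> length (gext (snd p)) = length (gatt B (fst p))"
      proof
        fix p assume "p \<in> set ds2"
        then have "p \<in> insert (fst (ds ! j), repl (snd (ds ! j)) y H) (set ds)" unfolding ds2_def using set_update_sub by fast
        then show "wf_graph (snd p) \<and> length (gext (snd p)) = length (gatt B (fst p))"
        proof
          assume p: "p = (fst (ds ! j), repl (snd (ds ! j)) y H)"
          show ?thesis using p cj wf_graph_repl[OF cj(1) y wfH len] by simp
        qed (use comp in blast)
      qed
      obtain iG2 iH2 jH2 where Y: "is_sr (=) B (set (map fst ds2)) (ovr Hs0 ds2) (repls B ds2) iG2 iH2 id jH2"
        using repls_sr[OF wfB _ _ comp2] dis sub mf by fastforce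
      have "ovr Hs0 ds2 = (ovr Hs0 ds)(s := repl (ovr Hs0 ds s) y H)"
        unfolding ds2_def using ovr_update[OF dis j(1) refl] Hj j(2) by simp
      then show "isoE (repl (repls B ds) e0 H) (repls B (ds[j := (fst (ds ! j), repl (snd (ds ! j)) y H)]))"
        using sr_isoE[OF X] Y mf b(3) unfolding ds2_def S_def by simp
    qed
    then show ?thesis using j y lab by blast
  qed
qed


lemma distinct_shift: "distinct (map fst ds) \<Longrightarrow> distinct (map fst (shift k ds))"
  by (simp add: distinct_map inj_on_def comp_def)

lemma fst_shift: "map fst (shift k ds) = map (\<lambda>x. k + x) (map fst ds)" by simp

lemma L_divleft_K:
  assumes wfK: "wf_graph K" and e: "e \<in> gE K" and wfDt: "wf_graph Dt" and lenDt: "length (gext Dt) = length (gatt K e)"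
    and dis: "distinct (map fst ds0)" and sub: "set (map fst ds0) \<subseteq> gE Dt"
    and comp: "\<forall>p\<in>set ds0. wf_graph (snd p) \<and> length (gext (snd p)) = length (gatt Dt (fst p)) "
    and e0: "e0 \<in> gE K" and ne: "e0 \<noteq> e" and wfH: "wf_graph H" and lenH: "length (gext H) = length (gatt K e0)"
  shows "isoE (repls (repl (repl K e Dt) e0 H) (shift (eoff K) ds0)) (repls (repl (repl K e0 H) e Dt) (shift (eoff (repl K e0 H)) ds0))"
proof -
  define Hs0 where "Hs0 = (\<lambda>_::nat. K)"
  have compR: "\<forall>p\<in>set ds0. wf_graph (snd p) \<and> length (gext (snd p)) = length (gatt Dt (fst p)) \<and> (\<forall>z\<in>gE (snd p). glab (snd p) z = glab (snd p) z)"
    using comp by simp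
  have isoH: "iso_via (=) id id H H" by (rule iso_via_id[OF wfH]) simp
  have isoD: "iso_via (=) id id Dt Dt" by (rule iso_via_id[OF wfDt]) simp
  obtain iH jH where X0: "is_sr (=) K {e} (Hs0(e := Dt)) (repl K e Dt) id iH id jH" and jH: "\<forall>y. jH e y = eoff K + y"
    using self_step1[OF wfK e wfDt lenDt] by blast
  have X1: "is_sr (=) K (insert e0 {e}) ((Hs0(e := Dt))(e0 := H)) (repl (repl K e Dt) (id e0) H) id (iH(e0 := rmap (repl K e Dt) (id e0) H \<circ> id)) id (jH(e0 := \<lambda>y. eoff (repl K e Dt) + id y))"
    by (rule sr_step1[OF X0 e0 _ wfH lenH isoH]) (use ne in simp)
  have "\<exists>iH' jH'. is_sr (=) K (insert e0 {e}) (((Hs0(e := Dt))(e0 := H))(e := repls (((Hs0(e := Dt))(e0 := H)) e) ds0))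
      (repls (repl (repl K e Dt) (id e0) H) (map (\<lambda>p. ((jH(e0 := \<lambda>y. eoff (repl K e Dt) + id y)) e (fst p), snd p)) ds0)) id iH' id jH'
     \<and> (\<forall>z\<in>gE (((Hs0(e := Dt))(e0 := H)) e) - set (map fst ds0). jH' e z = (jH(e0 := \<lambda>y. eoff (repl K e Dt) + id y)) e z)"
    by (rule iter2[OF X1 _ dis]) (use ne sub compR in auto)
  then obtain iHx jHx where X: "is_sr (=) K (insert e0 {e}) (Hs0(e0 := H, e := repls Dt ds0))
      (repls (repl (repl K e Dt) e0 H) (shift (eoff K) ds0)) id iHx id jHx"
    using ne jH by (auto simp: fun_upd_twist)
  obtain iH' jH' where Y0: "is_sr (=) K {e0} (Hs0(e0 := H)) (repl K e0 H) id iH' id jH'"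
    using self_step1[OF wfK e0 wfH lenH] by blast
  have Y1: "is_sr (=) K (insert e {e0}) ((Hs0(e0 := H))(e := Dt)) (repl (repl K e0 H) (id e) Dt) id (iH'(e := rmap (repl K e0 H) (id e) Dt \<circ> id)) id (jH'(e := \<lambda>y. eoff (repl K e0 H) + id y))"
    by (rule sr_step1[OF Y0 e _ wfDt lenDt isoD]) (use ne in simp)
  have "\<exists>iH' jH'a. is_sr (=) K (insert e {e0}) (((Hs0(e0 := H))(e := Dt))(e := repls (((Hs0(e0 := H))(e := Dt)) e) ds0))
      (repls (repl (repl K e0 H) (id e) Dt) (map (\<lambda>p. ((jH'(e := \<lambda>y. eoff (repl K e0 H) + id y)) e (fst p), snd p)) ds0)) id iH' id jH'a
     \<and> (\<forall>z\<in>gE (((Hs0(e0 := H))(e := Dt)) e) - set (map fst ds0). jH'a e z = (jH'(e := \<lambda>y. eoff (repl K e0 H) + id y)) e z)"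
    by (rule iter2[OF Y1 _ dis]) (use sub compR in auto)
  then obtain iHy jHy where Y: "is_sr (=) K (insert e {e0}) (Hs0(e0 := H, e := repls Dt ds0))
      (repls (repl (repl K e0 H) e Dt) (shift (eoff (repl K e0 H)) ds0)) id iHy id jHy"
    by auto
  have "insert e {e0} = insert e0 {e}" by blast
  then show ?thesis using sr_isoE[OF X] Y by simp
qed

lemma L_divleft_princ:
  assumes wfK: "wf_graph K" and e: "e \<in> gE K" and wfDt: "wf_graph Dt" and lenDt: "length (gext Dt) = length (gatt K e)"
    and d0: "d0 \<in> gE Dt" and dis: "distinct (map fst ds0)" and sub: "set (map fst ds0) \<subseteq> gE Dt - {d0}"
    and comp: "\<forall>p\<in>set ds0. wf_graph (snd p) \<and> length (gext (snd p)) = length (gatt Dt (fst p)) "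
    and wfH: "wf_graph H" and lenH: "length (gext H) = length (gatt Dt d0)"
  shows "isoE (repls (repl (repl K e Dt) (eoff K + d0) H) (shift (eoff K) ds0)) (repl K e (repls (repl Dt d0 H) ds0))"
proof -
  define Hs0 where "Hs0 = (\<lambda>_::nat. K)"
  have fE: "finite (gE Dt)" using wfDt unfolding wf_graph_def by blast
  obtain iH jH where X0: "is_sr (=) K {e} (Hs0(e := Dt)) (repl K e Dt) id iH id jH" and jH: "\<forall>y. jH e y = eoff K + y"
    using self_step1[OF wfK e wfDt lenDt] by blast
  define jH1 where "jH1 = jH(e := \<lambda>z. if z < eoff ((Hs0(e := Dt)) e) then jH e z else eoff (repl K e Dt) + (z - eoff ((Hs0(e := Dt)) e)))"
  have X1: "is_sr (=) K {e} ((Hs0(e := Dt))(e := repl ((Hs0(e := Dt)) e) d0 H)) (repl (repl K e Dt) (jH e d0) H) id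
     (iH(e := \<lambda>u. if u \<in> gV ((Hs0(e := Dt)) e) then iH e u else voff (repl K e Dt) + (u - voff ((Hs0(e := Dt)) e)))) id jH1"
    unfolding jH1_def by (rule sr_step2[OF X0]) (use d0 wfH lenH in auto)
  have wfDH: "wf_graph (repl Dt d0 H)" by (rule wf_graph_repl[OF wfDt d0 wfH lenH])
  have compR: "\<forall>p\<in>set ds0. wf_graph (snd p) \<and> length (gext (snd p)) = length (gatt (repl Dt d0 H) (fst p)) \<and> (\<forall>z\<in>gE (snd p). glab (snd p) z = glab (snd p) z)"
    using comp sub fE by (auto simp: gatt_repl_old)
  have "\<exists>iH' jH'. is_sr (=) K {e} (((Hs0(e := Dt))(e := repl ((Hs0(e := Dt)) e) d0 H))(e := repls (((Hs0(e := Dt))(e := repl ((Hs0(e := Dt)) e) d0 H)) e) ds0))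
      (repls (repl (repl K e Dt) (jH e d0) H) (map (\<lambda>p. (jH1 e (fst p), snd p)) ds0)) id iH' id jH'
     \<and> (\<forall>z\<in>gE (((Hs0(e := Dt))(e := repl ((Hs0(e := Dt)) e) d0 H)) e) - set (map fst ds0). jH' e z = jH1 e z)"
    by (rule iter2[OF X1 _ dis]) (use sub compR in auto)
  then obtain iHx jHx where X: "is_sr (=) K {e} (Hs0(e := repls (repl Dt d0 H) ds0))
      (repls (repl (repl K e Dt) (eoff K + d0) H) (map (\<lambda>p. (jH1 e (fst p), snd p)) ds0)) id iHx id jHx"
    using jH by auto
  have meq: "map (\<lambda>p. (jH1 e (fst p), snd p)) ds0 = shift (eoff K) ds0"
  proof (rule map_cong[OF refl])
    fix p assume "p \<in> set ds0"
    then have "fst p \<in> gE Dt" using sub by auto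
    then have "fst p < eoff Dt" using eoff_gt[OF fE] by blast
    then show "(jH1 e (fst p), snd p) = (eoff K + fst p, snd p)" unfolding jH1_def using jH by simp
  qed
  have X': "is_sr (=) K {e} (Hs0(e := repls (repl Dt d0 H) ds0))
      (repls (repl (repl K e Dt) (eoff K + d0) H) (shift (eoff K) ds0)) id iHx id jHx" by (rule X[unfolded meq])
  have wfW: "wf_graph (repls (repl Dt d0 H) ds0)"
    by (rule wf_repls[OF wfDH dis]) (use sub compR in auto)
  have "\<exists>iH jH. is_sr (=) K {e} (Hs0(e := repls (repl Dt d0 H) ds0)) (repl K e (repls (repl Dt d0 H) ds0)) id iH id jH \<and> (\<forall>y. jH e y = eoff K + y)"
    by (rule self_step1[OF wfK e wfW]) (simp add: lenDt)
  then obtain iHy jHy where Y: "is_sr (=) K {e} (Hs0(e := repls (repl Dt d0 H) ds0)) (repl K e (repls (repl Dt d0 H) ds0)) id iHy id jHy" by blast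
  show ?thesis by (rule sr_isoE[OF X' Y])
qed

lemma L_divleft_left:
  assumes wfG: "wf_graph G" and e0: "e0 \<in> gE G" and wfK: "wf_graph K" and lenK: "length (gext K) = length (gatt G e0)"
    and e: "e \<in> gE K" and wfDt: "wf_graph Dt" and lenDt: "length (gext Dt) = length (gatt K e)"
    and dis: "distinct (map fst ds0)" and sub: "set (map fst ds0) \<subseteq> gE Dt"
    and comp: "\<forall>p\<in>set ds0. wf_graph (snd p) \<and> length (gext (snd p)) = length (gatt Dt (fst p)) "
  shows "isoE (repl G e0 (repls (repl K e Dt) (shift (eoff K) ds0)))
     (repls (repl (repl G e0 K) (eoff G + e) Dt) (shift (eoff (repl G e0 K)) ds0))"
proof -
  define Hs0 where "Hs0 = (\<lambda>_::nat. K)"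
  define C where "C = repls (repl K e Dt) (shift (eoff K) ds0)"
  have wfKD: "wf_graph (repl K e Dt)" by (rule wf_graph_repl[OF wfK e wfDt lenDt])
  have compS: "\<forall>p\<in>set (shift (eoff K) ds0). wf_graph (snd p) \<and> length (gext (snd p)) = length (gatt (repl K e Dt) (fst p)) \<and> (\<forall>z\<in>gE (snd p). glab (snd p) z = glab (snd p) z)"
    using comp by auto
  have subS: "set (map fst (shift (eoff K) ds0)) \<subseteq> gE (repl K e Dt)" using sub by auto
  have wfC: "wf_graph C" unfolding C_def by (rule wf_repls[OF wfKD distinct_shift[OF dis] subS]) (use compS in blast)
  have "\<exists>iH jH. is_sr (=) G {e0} (Hs0(e0 := C)) (repl G e0 C) id iH id jH \<and> (\<forall>y. jH e0 y = eoff G + y)"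
    by (rule self_step1[OF wfG e0 wfC]) (simp add: C_def lenK)
  then obtain iHx jHx where X: "is_sr (=) G {e0} (Hs0(e0 := C)) (repl G e0 C) id iHx id jHx" by blast
  obtain iH jH where Y0: "is_sr (=) G {e0} (Hs0(e0 := K)) (repl G e0 K) id iH id jH" and jH: "\<forall>y. jH e0 y = eoff G + y"
    using self_step1[OF wfG e0 wfK lenK] by blast
  define jH1 where "jH1 = jH(e0 := \<lambda>z. if z < eoff ((Hs0(e0 := K)) e0) then jH e0 z else eoff (repl G e0 K) + (z - eoff ((Hs0(e0 := K)) e0)))"
  have Y1: "is_sr (=) G {e0} ((Hs0(e0 := K))(e0 := repl ((Hs0(e0 := K)) e0) e Dt)) (repl (repl G e0 K) (jH e0 e) Dt) id
     (iH(e0 := \<lambda>u. if u \<in> gV ((Hs0(e0 := K)) e0) then iH e0 u else voff (repl G e0 K) + (u - voff ((Hs0(e0 := K)) e0)))) id jH1"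
    unfolding jH1_def by (rule sr_step2[OF Y0]) (use e wfDt lenDt in auto)
  have "\<exists>iH' jH'. is_sr (=) G {e0} (((Hs0(e0 := K))(e0 := repl ((Hs0(e0 := K)) e0) e Dt))(e0 := repls (((Hs0(e0 := K))(e0 := repl ((Hs0(e0 := K)) e0) e Dt)) e0) (shift (eoff K) ds0)))
      (repls (repl (repl G e0 K) (jH e0 e) Dt) (map (\<lambda>p. (jH1 e0 (fst p), snd p)) (shift (eoff K) ds0))) id iH' id jH'
     \<and> (\<forall>z\<in>gE (((Hs0(e0 := K))(e0 := repl ((Hs0(e0 := K)) e0) e Dt)) e0) - set (map fst (shift (eoff K) ds0)). jH' e0 z = jH1 e0 z)"
    by (rule iter2[OF Y1 _ distinct_shift[OF dis]]) (use subS compS in auto)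
  then obtain iHy jHy where Y0': "is_sr (=) G {e0} (((Hs0(e0 := K))(e0 := repl ((Hs0(e0 := K)) e0) e Dt))(e0 := repls (((Hs0(e0 := K))(e0 := repl ((Hs0(e0 := K)) e0) e Dt)) e0) (shift (eoff K) ds0)))
      (repls (repl (repl G e0 K) (jH e0 e) Dt) (map (\<lambda>p. (jH1 e0 (fst p), snd p)) (shift (eoff K) ds0))) id iHy id jHy"
    by blast
  have heq: "((Hs0(e0 := K))(e0 := repl ((Hs0(e0 := K)) e0) e Dt))(e0 := repls (((Hs0(e0 := K))(e0 := repl ((Hs0(e0 := K)) e0) e Dt)) e0) (shift (eoff K) ds0)) = Hs0(e0 := C)"
    unfolding C_def by simp
  have meq: "map (\<lambda>p. (jH1 e0 (fst p), snd p)) (shift (eoff K) ds0) = shift (eoff (repl G e0 K)) ds0"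
    unfolding jH1_def by simp
  have Y: "is_sr (=) G {e0} (Hs0(e0 := C)) (repls (repl (repl G e0 K) (eoff G + e) Dt) (shift (eoff (repl G e0 K)) ds0)) id iHy id jHy"
    using Y0'[unfolded heq meq] jH by simp
  show ?thesis using sr_isoE[OF X Y] unfolding C_def .
qed

lemma L_times_princ:
  assumes wfG: "wf_graph G" and e0: "e0 \<in> gE G" and wfM: "wf_graph M" and lenM: "length (gext M) = length (gatt G e0)"
    and dis: "distinct (map fst ms)" and sub: "set (map fst ms) \<subseteq> gE M"
    and comp: "\<forall>p\<in>set ms. wf_graph (snd p) \<and> length (gext (snd p)) = length (gatt M (fst p))"
  shows "isoE (repls (repl G e0 M) (shift (eoff G) ms)) (repl G e0 (repls M ms))"
proof -
  define Hs0 where "Hs0 = (\<lambda>_::nat. M)"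
  obtain iH jH where X0: "is_sr (=) G {e0} (Hs0(e0 := M)) (repl G e0 M) id iH id jH" and jH: "\<forall>y. jH e0 y = eoff G + y"
    using self_step1[OF wfG e0 wfM lenM] by blast
  have "\<exists>iH' jH'. is_sr (=) G {e0} ((Hs0(e0 := M))(e0 := repls ((Hs0(e0 := M)) e0) ms))
      (repls (repl G e0 M) (map (\<lambda>p. (jH e0 (fst p), snd p)) ms)) id iH' id jH'
     \<and> (\<forall>z\<in>gE ((Hs0(e0 := M)) e0) - set (map fst ms). jH' e0 z = jH e0 z)"
    by (rule iter2[OF X0 _ dis]) (use sub comp in auto)
  then obtain iHx jHx where X: "is_sr (=) G {e0} (Hs0(e0 := repls M ms)) (repls (repl G e0 M) (shift (eoff G) ms)) id iHx id jHx"
    using jH by auto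
  have wfR: "wf_graph (repls M ms)" by (rule wf_repls[OF wfM dis sub comp])
  have "\<exists>iH jH. is_sr (=) G {e0} (Hs0(e0 := repls M ms)) (repl G e0 (repls M ms)) id iH id jH \<and> (\<forall>y. jH e0 y = eoff G + y)"
    by (rule self_step1[OF wfG e0 wfR]) (simp add: lenM)
  then obtain iHy jHy where Y: "is_sr (=) G {e0} (Hs0(e0 := repls M ms)) (repl G e0 (repls M ms)) id iHy id jHy" by blast
  show ?thesis by (rule sr_isoE[OF X Y])
qed


lemma wf_graph_map[simp]: "wf_graph (map_hgraph f G) = wf_graph G" unfolding wf_graph_def by simp
lemma wf_graph_relab[simp]: "wf_graph (relab G e a) = wf_graph G" unfolding wf_graph_def by simp

lemma wf_seq_handle: "wf_seq ar (handle (Prim p) (ar p)) (Prim p)"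
  unfolding wf_seq_def by (simp add: wf_handle wf_Prim)

lemma deriv_wf: "deriv ar c H A \<Longrightarrow> wf_seq ar H A"
  by (induction rule: deriv.induct) (auto simp: wf_seq_handle)

lemma wf_seqD: assumes "wf_seq ar G B"
  shows "wf_graph G" "\<And>e. e \<in> gE G \<Longrightarrow> wf_tp ar (glab G e)" "\<And>e. e \<in> gE G \<Longrightarrow> tp_type ar (glab G e) = length (gatt G e)"
    "wf_tp ar B" "length (gext G) = tp_type ar B"
  using assms unfolding wf_seq_def by auto

lemma wf_seq_repl:
  assumes G: "wf_seq ar G B" and e: "e \<in> gE G" and H: "wf_seq ar H A" and len: "tp_type ar A = length (gatt G e)"
  shows "wf_seq ar (repl G e H) B"
proof -
  have wfG: "wf_graph G" and wfH: "wf_graph H" using G H by (auto dest: wf_seqD)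
  have l: "length (gext H) = length (gatt G e)" using wf_seqD(5)[OF H] len by simp
  have fE: "finite (gE G)" using wfG unfolding wf_graph_def by blast
  have "wf_graph (repl G e H)" by (rule wf_graph_repl[OF wfG e wfH l])
  moreover have "\<forall>x\<in>gE (repl G e H). wf_tp ar (glab (repl G e H) x) \<and> tp_type ar (glab (repl G e H) x) = length (gatt (repl G e H) x)"
    using wf_seqD(2,3)[OF G] wf_seqD(2,3)[OF H] fE by auto
  ultimately show ?thesis using wf_seqD(4,5)[OF G] unfolding wf_seq_def by simp
qed

lemma wf_seq_iso:
  assumes iso: "iso_via tp_eq f g G G'" and G: "wf_seq ar G B"
  shows "wf_seq ar G' B"
proof -
  have "wf_graph G'" by (rule iso_wf[OF iso wf_seqD(1)[OF G]])
  moreover have "\<forall>x\<in>gE G'. wf_tp ar (glab G' x) \<and> tp_type ar (glab G' x) = length (gatt G' x)"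
  proof
    fix x assume "x \<in> gE G'"
    then obtain y where y: "y \<in> gE G" "x = g y" using iso_via_edge_inv[OF iso] by blast
    have "tp_eq (glab G y) (glab G' x)" using iso_via_lab[OF iso y(1)] y by simp
    then show "wf_tp ar (glab G' x) \<and> tp_type ar (glab G' x) = length (gatt G' x)"
      using tp_eq_wf wf_seqD(2,3)[OF G y(1)] iso_via_att[OF iso y(1)] y by fastforce
  qed
  ultimately show ?thesis using wf_seqD(4,5)[OF G] iso_via_ext[OF iso] unfolding wf_seq_def by simp
qed

lemma deriv_giso:
  assumes "deriv ar c X A" "giso_rel tp_eq X Y" "tp_eq A A'"
  shows "deriv ar c Y A'"
proof -
  have wX: "wf_seq ar X A" by (rule deriv_wf[OF assms(1)])
  obtain f g where iso: "iso_via tp_eq f g X Y" using assms(2) unfolding giso_rel_iff by blast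
  have wY: "wf_seq ar Y A" by (rule wf_seq_iso[OF iso wX])
  have "wf_tp ar A' \<and> tp_type ar A' = tp_type ar A" using tp_eq_wf[OF assms(3) wf_seqD(4)[OF wX]] .
  then have "wf_seq ar Y A'" using wY unfolding wf_seq_def by simp
  then show ?thesis by (rule deriv.iso[OF assms(1,2,3)])
qed

lemma deriv_isoE: "deriv ar c X A \<Longrightarrow> isoE X Y \<Longrightarrow> deriv ar c Y A"
  using deriv_giso[OF _ isoE_giso tp_eq_refl] by blast

lemma len_match: "wf_tp ar A \<Longrightarrow> tp_eq A T1 \<Longrightarrow> tp_eq A T2 \<Longrightarrow> tp_type ar T1 = tp_type ar T2"
  using tp_eq_wf by metis

definition dtg :: "'p tp \<Rightarrow> 'p tp option hgraph \<Rightarrow> nat \<Rightarrow> 'p tp hgraph" where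
"dtg N D d0 = map_hgraph the (relab D d0 (Some (Div N D)))"

lemma div_left_n:
  assumes "deriv ar c K A" "e \<in> gE K" "glab K e = N" "wf_tp ar (Div N D)" "d0 \<in> gE D" "glab D d0 = None"
    "distinct (map fst ds)" "set (map fst ds) = gE D - {d0}"
    "\<forall>i<length ds. deriv ar c (snd (ds ! i)) (the (glab D (fst (ds ! i))))"
    "wf_seq ar (repls (repl K e (dtg N D d0)) (shift (eoff K) ds)) A"
  shows "deriv ar c (repls (repl K e (dtg N D d0)) (shift (eoff K) ds)) A"
  using deriv.div_left[OF assms(1-9)] assms(10) unfolding dtg_def div_left_norm by simp

lemma div_right_n:
  assumes "deriv ar c (repl (map_hgraph the D) d0 F) N" "wf_tp ar (Div N D)" "d0 \<in> gE D" "glab D d0 = None" "wf_seq ar F (Div N D)"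
  shows "deriv ar c F (Div N D)"
  using deriv.div_right[of ar c D d0 F N] assms unfolding div_right_norm by simp

definition cutP :: "('p \<Rightarrow> nat) \<Rightarrow> 'p tp \<Rightarrow> bool" where
"cutP ar A \<longleftrightarrow> (\<forall>H A1 G B e0. HL ar H A1 \<longrightarrow> tp_eq A A1 \<longrightarrow> HL ar G B \<longrightarrow> e0 \<in> gE G \<longrightarrow> tp_eq A (glab G e0) \<longrightarrow> HL ar (repl G e0 H) B)"

lemma cutP_eq: "cutP ar A \<Longrightarrow> tp_eq A T \<Longrightarrow> cutP ar T"
  unfolding cutP_def using tp_eq_trans by blast

lemma cutP_use: "cutP ar A \<Longrightarrow> HL ar H A1 \<Longrightarrow> tp_eq A A1 \<Longrightarrow> HL ar G B \<Longrightarrow> e0 \<in> gE G \<Longrightarrow> tp_eq A (glab G e0) \<Longrightarrow> HL ar (repl G e0 H) B"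
  unfolding cutP_def by blast

lemma seq_cut:
  assumes "HL ar X N" "distinct (map fst ds)" "set (map fst ds) \<subseteq> gE X"
    "\<forall>i<length ds. HL ar (snd (ds ! i)) (glab X (fst (ds ! i))) \<and> cutP ar (glab X (fst (ds ! i)))"
  shows "HL ar (repls X ds) N"
  using assms
proof (induction ds arbitrary: X)
  case Nil then show ?case by simp
next
  case (Cons p ds)
  have h0: "HL ar (snd p) (glab X (fst p))" "cutP ar (glab X (fst p))" using Cons.prems(4) by (metis length_greater_0_conv list.discI nth_Cons_0)+
  have X1: "HL ar (repl X (fst p) (snd p)) N"
    by (rule cutP_use[OF h0(2) h0(1) tp_eq_refl Cons.prems(1) _ tp_eq_refl]) (use Cons.prems(3) in simp)
  have fE: "finite (gE X)" using wf_seqD(1)[OF deriv_wf[OF Cons.prems(1)]] unfolding wf_graph_def by blast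
  have sub: "set (map fst ds) \<subseteq> gE (repl X (fst p) (snd p))" using Cons.prems(2,3) by (fastforce simp: image_iff)
  have lab: "\<And>d. d \<in> set (map fst ds) \<Longrightarrow> glab (repl X (fst p) (snd p)) d = glab X d"
    using Cons.prems(3) fE by auto
  show ?case
    apply simp
    apply (rule Cons.IH[OF X1])
    using Cons.prems(2) sub apply simp_all
    using Cons.prems(4) lab by (metis Suc_less_eq length_Cons nth_Cons_Suc nth_mem length_map nth_map)
qed

lemma repls_case_base:
  assumes wfB: "wf_graph B" and dis: "distinct (map fst ds)" and sub: "set (map fst ds) \<subseteq> gE B"
    and comp: "\<forall>p\<in>set ds. wf_graph (snd p) \<and> length (gext (snd p)) = length (gatt B (fst p))"
    and e0: "e0 \<in> gE B" "e0 \<notin> set (map fst ds)" and wfH: "wf_graph H" and len: "length (gext H) = length (gatt B e0)"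
  shows "isoE (repl (repls B ds) e0 H) (repls (repl B e0 H) ds)"
proof -
  define S where "S = set (map fst ds)"
  define Hs0 where "Hs0 = (\<lambda>_::nat. B)"
  obtain iG iH jH where G: "is_sr (=) B S (ovr Hs0 ds) (repls B ds) iG iH id jH"
    using repls_sr[OF wfB dis sub comp] unfolding S_def by blast
  have isoH: "iso_via (=) id id H H" by (rule iso_via_id[OF wfH]) simp
  have X: "is_sr (=) B (insert e0 S) ((ovr Hs0 ds)(e0 := H)) (repl (repls B ds) (id e0) H) iG (iH(e0 := rmap (repls B ds) (id e0) H \<circ> id)) id (jH(e0 := \<lambda>y. eoff (repls B ds) + id y))"
    by (rule sr_step1[OF G _ _ wfH len isoH]) (use e0 in \<open>auto simp: S_def\<close>)
  obtain iH1 jH1 where Y0: "is_sr (=) B {e0} (Hs0(e0 := H)) (repl B e0 H) id iH1 id jH1"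
    using self_step1[OF wfB e0(1) wfH len] by blast
  have "\<exists>iH' jH'. is_sr (=) B ({e0} \<union> set (map fst ds)) (ovr (Hs0(e0 := H)) ds) (repls (repl B e0 H) (map (\<lambda>p. (id (fst p), snd p)) ds)) id iH' id jH'"
    by (rule iter1[OF Y0 dis]) (use e0 sub comp in \<open>auto simp: S_def\<close>)
  then obtain iH2 jH2 where Y: "is_sr (=) B ({e0} \<union> S) ((ovr Hs0 ds)(e0 := H)) (repls (repl B e0 H) ds) id iH2 id jH2"
    using ovr_upd_out[of e0 ds Hs0 H] e0 unfolding S_def by auto
  have "insert e0 S = {e0} \<union> S" by blast
  then show ?thesis using sr_isoE[OF X] Y by simp
qed

lemma iso_the_relab:
  assumes iso: "iso_via (rel_option tp_eq) f g D1 D" and d1: "d1 \<in> gE D1" and gd: "g d1 = d0"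
    and some: "\<forall>x\<in>gE D1 - {d1}. glab D1 x \<noteq> None"
  shows "iso_via tp_eq f g (relab (map_hgraph the D1) d1 L) (map_hgraph the (relab D d0 (Some L)))"
  unfolding iso_via_def
proof (intro conjI ballI)
  show "bij_betw f (gV (relab (map_hgraph the D1) d1 L)) (gV (map_hgraph the (relab D d0 (Some L))))"
    "bij_betw g (gE (relab (map_hgraph the D1) d1 L)) (gE (map_hgraph the (relab D d0 (Some L))))"
    "gext (map_hgraph the (relab D d0 (Some L))) = map f (gext (relab (map_hgraph the D1) d1 L))"
    using iso unfolding iso_via_def by auto
next
  fix x assume x: "x \<in> gE (relab (map_hgraph the D1) d1 L)"
  then have x': "x \<in> gE D1" by simp
  show "gatt (map_hgraph the (relab D d0 (Some L))) (g x) = map f (gatt (relab (map_hgraph the D1) d1 L) x)"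
    using iso_via_att[OF iso x'] by simp
  show "tp_eq (glab (relab (map_hgraph the D1) d1 L) x) (glab (map_hgraph the (relab D d0 (Some L))) (g x))"
  proof (cases "x = d1")
    case True then show ?thesis using gd by (simp add: tp_eq_refl)
  next
    case False
    have "g x \<noteq> d0" using iso_via_inj[OF iso x' d1] False gd by auto
    moreover have r: "rel_option tp_eq (glab D1 x) (glab D (g x))" using iso_via_lab[OF iso x'] .
    moreover have "glab D1 x \<noteq> None" using some x' False by blast
    ultimately show ?thesis using False by (cases "glab D1 x"; cases "glab D (g x)") auto
  qed
qed


lemma dtg_facts:
  assumes wfd: "wf_tp ar (Div N D)" and d0: "d0 \<in> gE D" "glab D d0 = None"
  shows "wf_graph (dtg N D d0)" "gE (dtg N D d0) = gE D" "gatt (dtg N D d0) = gatt D" "gext (dtg N D d0) = gext D"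
    "glab (dtg N D d0) d0 = Div N D" "\<And>d. d \<noteq> d0 \<Longrightarrow> glab (dtg N D d0) d = the (glab D d)"
    "length (gext D) = tp_type ar N" "\<And>d. d \<in> gE D - {d0} \<Longrightarrow> wf_tp ar (the (glab D d)) \<and> tp_type ar (the (glab D d)) = length (gatt D d)"
    "wf_graph D" "wf_tp ar N"
proof -
  obtain d1 where d1: "d1 \<in> gE D" "glab D d1 = None" and wfN: "wf_tp ar N" and wfD: "wf_graph D"
    and oth: "\<forall>d\<in>gE D - {d1}. \<exists>t. glab D d = Some t \<and> wf_tp ar t \<and> tp_type ar t = length (gatt D d)"
    and tN: "tp_type ar N = length (gext D)"
    using wfd by (rule wf_DivE) blast
  have "d1 = d0" using div_d0(2)[OF wfd d1] d0 by metis
  then have oth': "\<forall>d\<in>gE D - {d0}. \<exists>t. glab D d = Some t \<and> wf_tp ar t \<and> tp_type ar t = length (gatt D d)" using oth by simp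
  show "wf_graph (dtg N D d0)" "gE (dtg N D d0) = gE D" "gatt (dtg N D d0) = gatt D" "gext (dtg N D d0) = gext D"
    "glab (dtg N D d0) d0 = Div N D" "\<And>d. d \<noteq> d0 \<Longrightarrow> glab (dtg N D d0) d = the (glab D d)"
    "length (gext D) = tp_type ar N" "wf_graph D" "wf_tp ar N"
    using wfD tN wfN unfolding dtg_def by auto
  show "\<And>d. d \<in> gE D - {d0} \<Longrightarrow> wf_tp ar (the (glab D d)) \<and> tp_type ar (the (glab D d)) = length (gatt D d)"
  proof -
    fix d assume "d \<in> gE D - {d0}"
    then obtain t where "glab D d = Some t" "wf_tp ar t" "tp_type ar t = length (gatt D d)" using oth' by blast
    then show "wf_tp ar (the (glab D d)) \<and> tp_type ar (the (glab D d)) = length (gatt D d)" by simp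
  qed
qed

lemma dl_setup:
  assumes K: "wf_seq ar K B" and e: "e \<in> gE K" and lab: "glab K e = N" and wfd: "wf_tp ar (Div N D)"
    and d0: "d0 \<in> gE D" "glab D d0 = None" and dis: "distinct (map fst ds)" and ids: "set (map fst ds) = gE D - {d0}"
    and ders: "\<forall>i<length ds. deriv ar c (snd (ds ! i)) (the (glab D (fst (ds ! i))))"
  shows "length (gext (dtg N D d0)) = length (gatt K e)"
    "\<forall>p\<in>set ds. wf_graph (snd p) \<and> length (gext (snd p)) = length (gatt (dtg N D d0) (fst p))"
    "wf_graph (repl K e (dtg N D d0))"
    "distinct (map fst (shift (eoff K) ds))"
    "set (map fst (shift (eoff K) ds)) \<subseteq> gE (repl K e (dtg N D d0))"
    "\<forall>p\<in>set (shift (eoff K) ds). wf_graph (snd p) \<and> length (gext (snd p)) = length (gatt (repl K e (dtg N D d0)) (fst p))"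
    "set (map fst ds) \<subseteq> gE (dtg N D d0)"
proof -
  note F = dtg_facts[OF wfd d0]
  show l: "length (gext (dtg N D d0)) = length (gatt K e)"
    using F(4,7) wf_seqD(3)[OF K e] lab by simp
  show c: "\<forall>p\<in>set ds. wf_graph (snd p) \<and> length (gext (snd p)) = length (gatt (dtg N D d0) (fst p))"
  proof
    fix p assume "p \<in> set ds"
    then obtain i where i: "i < length ds" "p = ds ! i" by (metis in_set_conv_nth)
    have w: "wf_seq ar (snd p) (the (glab D (fst p)))" using deriv_wf ders i by blast
    have "fst p \<in> gE D - {d0}" using ids i by (metis nth_mem length_map nth_map)
    then show "wf_graph (snd p) \<and> length (gext (snd p)) = length (gatt (dtg N D d0) (fst p))"
      using wf_seqD(1,5)[OF w] F(3,8) by simp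
  qed
  show "wf_graph (repl K e (dtg N D d0))" by (rule wf_graph_repl[OF wf_seqD(1)[OF K] e F(1) l])
  show "distinct (map fst (shift (eoff K) ds))" by (rule distinct_shift[OF dis])
  show "set (map fst (shift (eoff K) ds)) \<subseteq> gE (repl K e (dtg N D d0))" using ids F(2) by auto
  show "\<forall>p\<in>set (shift (eoff K) ds). wf_graph (snd p) \<and> length (gext (snd p)) = length (gatt (repl K e (dtg N D d0)) (fst p))"
    using c by auto
  show "set (map fst ds) \<subseteq> gE (dtg N D d0)" using ids F(2) by auto
qed

lemma shift_update: "shift k (ds[j := (a, b)]) = (shift k ds)[j := (k + a, b)]"
  by (simp add: map_update)

lemma repls_lab_base:
  assumes "wf_graph B" "distinct (map fst ds)" "set (map fst ds) \<subseteq> gE B"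
    "\<forall>p\<in>set ds. wf_graph (snd p) \<and> length (gext (snd p)) = length (gatt B (fst p))"
    "e0 \<in> gE B - set (map fst ds)"
  shows "glab (repls B ds) e0 = glab B e0"
proof -
  obtain iG iH jH where G: "is_sr (=) B (set (map fst ds)) (ovr (\<lambda>_. B) ds) (repls B ds) iG iH id jH"
    using repls_sr[OF assms(1-4)] by blast
  show ?thesis using is_srD(17)[OF G assms(5)] by simp
qed

lemma RI:
  fixes ar :: "'p \<Rightarrow> nat" and A A1 :: "'p tp" and H :: "'p tp hgraph"
  assumes wfA: "wf_tp ar A" and nP: "\<forall>p. A \<noteq> Prim p" and HH: "HL ar H A1" and eqA: "tp_eq A A1"
    and PD: "\<And>K e N D d0 ds B. HL ar K B \<Longrightarrow> e \<in> gE K \<Longrightarrow> glab K e = N \<Longrightarrow> wf_tp ar (Div N D) \<Longrightarrow> d0 \<in> gE D \<Longrightarrow> glab D d0 = None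
       \<Longrightarrow> distinct (map fst ds) \<Longrightarrow> set (map fst ds) = gE D - {d0} \<Longrightarrow> (\<forall>i<length ds. HL ar (snd (ds ! i)) (the (glab D (fst (ds ! i)))))
       \<Longrightarrow> wf_seq ar (repls (repl K e (dtg N D d0)) (shift (eoff K) ds)) B \<Longrightarrow> tp_eq A (Div N D)
       \<Longrightarrow> HL ar (repl (repls (repl K e (dtg N D d0)) (shift (eoff K) ds)) (eoff K + d0) H) B"
    and PT: "\<And>G e0 F B. HL ar (repl G e0 F) B \<Longrightarrow> e0 \<in> gE G \<Longrightarrow> glab G e0 = Times F \<Longrightarrow> wf_seq ar G B \<Longrightarrow> tp_eq A (Times F)
       \<Longrightarrow> HL ar (repl G e0 H) B"
  shows "HL ar G B \<Longrightarrow> \<forall>e0. e0 \<in> gE G \<longrightarrow> tp_eq A (glab G e0) \<longrightarrow> HL ar (repl G e0 H) B"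
proof -
  have wH: "wf_seq ar H A1" by (rule deriv_wf[OF HH])
  have wfH: "wf_graph H" by (rule wf_seqD(1)[OF wH])
  have lenHG: "\<And>G B e0. wf_seq ar G B \<Longrightarrow> e0 \<in> gE G \<Longrightarrow> tp_eq A (glab G e0) \<Longrightarrow> length (gext H) = length (gatt G e0)"
    using wf_seqD(5)[OF wH] wf_seqD(3) len_match[OF wfA eqA] by metis
  have wfR: "\<And>G B e0. wf_seq ar G B \<Longrightarrow> e0 \<in> gE G \<Longrightarrow> tp_eq A (glab G e0) \<Longrightarrow> wf_seq ar (repl G e0 H) B"
    using wf_seq_repl[OF _ _ wH] len_match[OF wfA eqA] wf_seqD(3) by metis
  have isoH: "iso_via tp_eq id id H H" by (rule iso_via_id[OF wfH]) (rule tp_eq_refl)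
  have isoE_wf: "\<And>X Y B. isoE X Y \<Longrightarrow> wf_seq ar X B \<Longrightarrow> wf_seq ar Y B"
    using wf_seq_iso isoE_giso unfolding giso_rel_iff by blast
  show "HL ar G B \<Longrightarrow> \<forall>e0. e0 \<in> gE G \<longrightarrow> tp_eq A (glab G e0) \<longrightarrow> HL ar (repl G e0 H) B"
  proof (induction rule: deriv.induct)
    case (ax p)
    show ?case
    proof (intro allI impI)
      fix e0 assume "e0 \<in> gE (handle (Prim p) (ar p))" "tp_eq A (glab (handle (Prim p) (ar p)) e0)"
      then have "tp_eq A (Prim p)" by simp
      then show "HL ar (repl (handle (Prim p) (ar p)) e0 H) (Prim p)" using nP by (auto elim: tp_eq_PrimE2)
    qed
  next
    case (iso G0 B0 G B)
    show ?case
    proof (intro allI impI)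
      fix e0 assume e0: "e0 \<in> gE G" and t: "tp_eq A (glab G e0)"
      obtain f g where iso: "iso_via tp_eq f g G0 G" using iso.hyps(2) unfolding giso_rel_iff by blast
      obtain e0' where e0': "e0' \<in> gE G0" "e0 = g e0'" using iso_via_edge_inv[OF iso e0] by blast
      have w0: "wf_seq ar G0 B0" by (rule deriv_wf[OF iso.hyps(1)])
      have r: "tp_eq (glab G0 e0') (glab G e0)" using iso_via_lab[OF iso e0'(1)] e0' by simp
      have "tp_eq (glab G e0) (glab G0 e0')" by (rule tp_eq_sym[OF r wf_seqD(2)[OF w0 e0'(1)]])
      then have t': "tp_eq A (glab G0 e0')" using t tp_eq_trans by blast
      have d: "HL ar (repl G0 e0' H) B0" using iso.IH e0'(1) t' by blast
      have "giso_rel tp_eq (repl G0 e0' H) (repl G (g e0') H)"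
        by (rule L_cong[OF iso wf_seqD(1)[OF w0] e0'(1) isoH wfH lenHG[OF w0 e0'(1) t']])
      then show "HL ar (repl G e0 H) B" using deriv_giso[OF d _ iso.hyps(3)] e0'(2) by simp
    qed
  next
    case (div_left K B e N D d0 ds G)
    define Dt where "Dt = dtg N D d0"
    define B0 where "B0 = repl K e Dt"
    define ds' where "ds' = shift (eoff K) ds"
    have Geq: "G = repls B0 ds'" unfolding B0_def ds'_def Dt_def dtg_def using div_left.hyps(9) by (simp add: div_left_norm)
    have wK: "wf_seq ar K B" by (rule deriv_wf[OF div_left.hyps(1)])
    have dersi: "\<forall>i<length ds. deriv ar False (snd (ds ! i)) (the (glab D (fst (ds ! i))))" using div_left.IH(2) by blast
    note S = dl_setup[OF wK div_left.hyps(2) div_left.hyps(3) div_left.hyps(4) div_left.hyps(5) div_left.hyps(6) div_left.hyps(7) div_left.hyps(8) dersi, folded Dt_def B0_def ds'_def]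
    note F = dtg_facts[OF div_left.hyps(4) div_left.hyps(5) div_left.hyps(6), folded Dt_def]
    have fEK: "finite (gE K)" using wf_seqD(1)[OF wK] unfolding wf_graph_def by blast
    show ?case
    proof (intro allI impI)
      fix e0 assume e0: "e0 \<in> gE G" and t: "tp_eq A (glab G e0)"
      have wR: "wf_seq ar (repl G e0 H) B" by (rule wfR[OF div_left.hyps(10) e0 t])
      note RC = repls_cases[OF S(3,4,5,6) e0[unfolded Geq]]
      show "HL ar (repl G e0 H) B"
      proof (cases "e0 \<in> gE B0 - set (map fst ds')")
        case True
        have lab0: "glab G e0 = glab B0 e0" unfolding Geq by (rule repls_lab_base[OF S(3,4,5,6) True])
        have isoc: "\<And>H'. wf_graph H' \<Longrightarrow> length (gext H') = length (gatt B0 e0) \<Longrightarrow> isoE (repl G e0 H') (repls (repl B0 e0 H') ds')"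
          unfolding Geq by (rule repls_case_base[OF S(3,4,5,6)]) (use True in auto)
        consider (k) "e0 \<in> gE K - {e}" | (p) d where "d \<in> gE D" "e0 = eoff K + d"
          using True unfolding B0_def using F(2) by auto
        then show ?thesis
        proof cases
          case k
          have labK: "glab G e0 = glab K e0" using lab0 k fEK unfolding B0_def by simp
          have lenK: "length (gext H) = length (gatt K e0)" by (rule lenHG[OF wK]) (use k t labK in auto)
          have dK: "HL ar (repl K e0 H) B" using div_left.IH(1) k t labK by auto
          define K' where "K' = repl K e0 H"
          have wK': "wf_seq ar K' B" unfolding K'_def by (rule wfR[OF wK]) (use k t labK in auto)
          have lenB0: "length (gext H) = length (gatt B0 e0)" using lenK k fEK unfolding B0_def by simp
          have i1: "isoE (repl G e0 H) (repls (repl B0 e0 H) ds')" by (rule isoc[OF wfH lenB0])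
          have i2: "isoE (repls (repl B0 e0 H) ds') (repls (repl K' e Dt) (shift (eoff K') ds))"
            unfolding B0_def ds'_def K'_def
            by (rule L_divleft_K[OF wf_seqD(1)[OF wK] div_left.hyps(2) F(1) S(1) div_left.hyps(7) S(7) S(2) _ _ wfH lenK])
               (use k in auto)
          have iso12: "isoE (repl G e0 H) (repls (repl K' e Dt) (shift (eoff K') ds))" by (rule isoE_trans[OF i1 i2])
          have eK': "e \<in> gE K'" "glab K' e = N" unfolding K'_def using div_left.hyps(2) div_left.hyps(3) k fEK by auto
          have "HL ar (repls (repl K' e Dt) (shift (eoff K') ds)) B"
            unfolding Dt_def
            by (rule div_left_n[OF dK[folded K'_def] eK' div_left.hyps(4) div_left.hyps(5) div_left.hyps(6) div_left.hyps(7) div_left.hyps(8) dersi])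
               (rule isoE_wf[OF iso12 wR, unfolded Dt_def])
          then show ?thesis using deriv_isoE isoE_sym[OF iso12] by blast
        next
          case (p d)
          have "eoff K + d \<notin> set (map fst ds')" using True p by simp
          then have "d \<notin> set (map fst ds)" unfolding ds'_def by auto
          then have dd: "d = d0" using p(1) div_left.hyps(8) by blast
          have labG: "glab G e0 = Div N D" using lab0 p dd F(5) unfolding B0_def by simp
          have "HL ar (repl (repls (repl K e (dtg N D d0)) (shift (eoff K) ds)) (eoff K + d0) H) B"
            by (rule PD[OF div_left.hyps(1) div_left.hyps(2) div_left.hyps(3) div_left.hyps(4) div_left.hyps(5) div_left.hyps(6) div_left.hyps(7) div_left.hyps(8) dersi])
               (use div_left.hyps(10) Geq t labG in \<open>auto simp: B0_def ds'_def Dt_def\<close>)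
          then show ?thesis using Geq p dd unfolding B0_def ds'_def Dt_def by simp
        qed
      next
        case False
        then obtain j y where j: "j < length ds'" and y: "y \<in> gE (snd (ds' ! j))"
          and labj: "glab (repls B0 ds') e0 = glab (snd (ds' ! j)) y"
          and isoj: "\<And>H'. wf_graph H' \<Longrightarrow> length (gext H') = length (gatt (snd (ds' ! j)) y) \<Longrightarrow>
             isoE (repl (repls B0 ds') e0 H') (repls B0 (ds'[j := (fst (ds' ! j), repl (snd (ds' ! j)) y H')]))"
          using RC by blast
        have jj: "j < length ds" using j unfolding ds'_def by simp
        have sj: "snd (ds' ! j) = snd (ds ! j)" "fst (ds' ! j) = eoff K + fst (ds ! j)" using jj unfolding ds'_def by simp_all
        have dj: "deriv ar False (snd (ds ! j)) (the (glab D (fst (ds ! j))))" using dersi jj by blast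
        have IHj: "\<forall>e0. e0 \<in> gE (snd (ds ! j)) \<longrightarrow> tp_eq A (glab (snd (ds ! j)) e0) \<longrightarrow> HL ar (repl (snd (ds ! j)) e0 H) (the (glab D (fst (ds ! j))))"
          using div_left.IH(2) jj by blast
        have tj: "tp_eq A (glab (snd (ds ! j)) y)" using t labj sj Geq by simp
        have dnew: "HL ar (repl (snd (ds ! j)) y H) (the (glab D (fst (ds ! j))))" using IHj y sj tj by auto
        define ds2 where "ds2 = ds[j := (fst (ds ! j), repl (snd (ds ! j)) y H)]"
        have lenj: "length (gext H) = length (gatt (snd (ds ! j)) y)"
          by (rule lenHG[OF deriv_wf[OF dj]]) (use y sj tj in auto)
        have iso2: "isoE (repl G e0 H) (repls B0 (shift (eoff K) ds2))"
          using isoj[OF wfH] lenj sj Geq unfolding ds2_def ds'_def by (simp add: shift_update)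
        have mf: "map fst ds2 = map fst ds" unfolding ds2_def by (rule map_fst_update[OF jj])
        have ders2: "\<forall>i<length ds2. deriv ar False (snd (ds2 ! i)) (the (glab D (fst (ds2 ! i))))"
          unfolding ds2_def using dersi dnew jj by (auto simp: nth_list_update)
        have "HL ar (repls (repl K e (dtg N D d0)) (shift (eoff K) ds2)) B"
          by (rule div_left_n[OF div_left.hyps(1) div_left.hyps(2) div_left.hyps(3) div_left.hyps(4) div_left.hyps(5) div_left.hyps(6) _ _ ders2])
             (use mf div_left.hyps(8) div_left.hyps(7) isoE_wf[OF iso2 wR] in \<open>auto simp: B0_def Dt_def\<close>)
        then show ?thesis using deriv_isoE isoE_sym[OF iso2] unfolding B0_def Dt_def by blast
      qed
    qed
  next
    case (div_right D d0 F N)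
    define Dm where "Dm = map_hgraph the D"
    have P: "deriv ar False (repl Dm d0 F) N" using div_right.hyps(1) unfolding Dm_def div_right_norm .
    have IH: "\<forall>e0. e0 \<in> gE (repl Dm d0 F) \<longrightarrow> tp_eq A (glab (repl Dm d0 F) e0) \<longrightarrow> HL ar (repl (repl Dm d0 F) e0 H) N"
      using div_right.IH unfolding Dm_def div_right_norm .
    have wfD: "wf_graph D" using div_right.hyps(2) by (rule wf_DivE) blast
    have lenF: "length (gext F) = length (gatt Dm d0)"
      using wf_seqD(5)[OF div_right.hyps(5)] div_d0(1)[OF div_right.hyps(2,3,4)] unfolding Dm_def by simp
    show ?case
    proof (intro allI impI)
      fix e0 assume e0: "e0 \<in> gE F" and t: "tp_eq A (glab F e0)"
      have "HL ar (repl (repl Dm d0 F) (eoff Dm + e0) H) N" using IH e0 t div_right.hyps(3) by auto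
      moreover have "isoE (repl (repl Dm d0 F) (eoff Dm + e0) H) (repl Dm d0 (repl F e0 H))"
        by (rule L_assoc) (use wfD div_right.hyps(3) wf_seqD(1)[OF div_right.hyps(5)] lenF e0 wfH lenHG[OF div_right.hyps(5) e0 t] in \<open>auto simp: Dm_def\<close>)
      ultimately have "HL ar (repl Dm d0 (repl F e0 H)) N" by (rule deriv_isoE)
      then show "HL ar (repl F e0 H) (Div N D)"
        by (rule div_right_n[OF _ div_right.hyps(2,3,4) wfR[OF div_right.hyps(5) e0 t], folded Dm_def])
    qed
  next
    case (times_left G e F B)
    have wfF: "wf_graph F" and lenF: "length (gext F) = length (gatt G e)"
      using wf_seqD(2,3)[OF times_left.hyps(4) times_left.hyps(2)] times_left.hyps(3)
      by (auto elim: wf_TimesE)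
    have fE: "finite (gE G)" using wf_seqD(1)[OF times_left.hyps(4)] unfolding wf_graph_def by blast
    show ?case
    proof (intro allI impI)
      fix e0 assume e0: "e0 \<in> gE G" and t: "tp_eq A (glab G e0)"
      show "HL ar (repl G e0 H) B"
      proof (cases "e0 = e")
        case True
        then show ?thesis using PT[OF times_left.hyps(1,2,3,4)] t times_left.hyps(3) by simp
      next
        case False
        have "HL ar (repl (repl G e F) e0 H) B" using times_left.IH e0 False t fE by auto
        moreover have "isoE (repl (repl G e F) e0 H) (repl (repl G e0 H) e F)"
          by (rule L_comm[OF wf_seqD(1)[OF times_left.hyps(4)] times_left.hyps(2) e0 _ wfF lenF wfH lenHG[OF times_left.hyps(4) e0 t]])
             (use False in auto)
        ultimately have d: "HL ar (repl (repl G e0 H) e F) B" by (rule deriv_isoE)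
        show ?thesis
          by (rule deriv.times_left[OF d]) (use times_left.hyps(2,3) False fE wfR[OF times_left.hyps(4) e0 t] in auto)
      qed
    qed
  next
    case (times_right ms M G)
    have wfM: "wf_graph M" and labM: "\<forall>m\<in>gE M. wf_tp ar (glab M m) \<and> tp_type ar (glab M m) = length (gatt M m)"
      using times_right.hyps(3) by (rule wf_TimesE, blast)+
    have dersi: "\<forall>i<length ms. deriv ar False (snd (ms ! i)) (glab M (fst (ms ! i)))" using times_right.IH by blast
    have comp: "\<forall>p\<in>set ms. wf_graph (snd p) \<and> length (gext (snd p)) = length (gatt M (fst p))"
    proof
      fix p assume "p \<in> set ms"
      then obtain i where i: "i < length ms" "p = ms ! i" by (metis in_set_conv_nth)
      have w: "wf_seq ar (snd p) (glab M (fst p))" using deriv_wf dersi i by blast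
      have "fst p \<in> gE M" using times_right.hyps(2) i by (metis nth_mem length_map nth_map)
      then show "wf_graph (snd p) \<and> length (gext (snd p)) = length (gatt M (fst p))"
        using wf_seqD(1,5)[OF w] labM by simp
    qed
    show ?case
    proof (intro allI impI)
      fix e0 assume e0: "e0 \<in> gE G" and t: "tp_eq A (glab G e0)"
      have wR: "wf_seq ar (repl G e0 H) (Times M)" by (rule wfR[OF times_right.hyps(5) e0 t])
      note RC = repls_cases[OF wfM times_right.hyps(1) _ comp e0[unfolded times_right.hyps(4)]]
      obtain j y where j: "j < length ms" and y: "y \<in> gE (snd (ms ! j))"
          and labj: "glab (repls M ms) e0 = glab (snd (ms ! j)) y"
          and isoj: "\<And>H'. wf_graph H' \<Longrightarrow> length (gext H') = length (gatt (snd (ms ! j)) y) \<Longrightarrow>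
             isoE (repl (repls M ms) e0 H') (repls M (ms[j := (fst (ms ! j), repl (snd (ms ! j)) y H')]))"
        using RC times_right.hyps(2) by auto
      have dj: "deriv ar False (snd (ms ! j)) (glab M (fst (ms ! j)))" using dersi j by blast
      have IHj: "\<forall>e0. e0 \<in> gE (snd (ms ! j)) \<longrightarrow> tp_eq A (glab (snd (ms ! j)) e0) \<longrightarrow> HL ar (repl (snd (ms ! j)) e0 H) (glab M (fst (ms ! j)))"
        using times_right.IH j by blast
      have tj: "tp_eq A (glab (snd (ms ! j)) y)" using t labj times_right.hyps(4) by simp
      have dnew: "HL ar (repl (snd (ms ! j)) y H) (glab M (fst (ms ! j)))" using IHj y tj by auto
      define ms2 where "ms2 = ms[j := (fst (ms ! j), repl (snd (ms ! j)) y H)]"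
      have lenj: "length (gext H) = length (gatt (snd (ms ! j)) y)"
        by (rule lenHG[OF deriv_wf[OF dj]]) (use y tj in auto)
      have iso2: "isoE (repl G e0 H) (repls M ms2)"
        using isoj[OF wfH lenj] times_right.hyps(4) unfolding ms2_def by simp
      have mf: "map fst ms2 = map fst ms" unfolding ms2_def by (rule map_fst_update[OF j])
      have ders2: "\<forall>i<length ms2. deriv ar False (snd (ms2 ! i)) (glab M (fst (ms2 ! i)))"
        unfolding ms2_def using dersi dnew j by (auto simp: nth_list_update)
      have "HL ar (repls M ms2) (Times M)"
        by (rule deriv.times_right[OF _ _ ders2 times_right.hyps(3) refl]) (use mf times_right.hyps(1) times_right.hyps(2) isoE_wf[OF iso2 wR] in auto)
      then show "HL ar (repl G e0 H) (Times M)" using deriv_isoE isoE_sym[OF iso2] by blast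
    qed
  next
    case (cut_rule H A G B e0)
    then show ?case by simp
  qed
qed


lemma princ_div:
  fixes ar :: "'p \<Rightarrow> nat"
  assumes wfA: "wf_tp ar A" and HD: "\<forall>N D. A = Div N D \<longrightarrow> cutP ar N \<and> (\<forall>d\<in>gE D. \<forall>t. glab D d = Some t \<longrightarrow> cutP ar t)"
    and eqA: "tp_eq A (Div N1 D1)" and wfD1: "wf_tp ar (Div N1 D1)" and d1: "d1 \<in> gE D1" "glab D1 d1 = None"
    and P1: "HL ar (repl (map_hgraph the D1) d1 F) N1" and wF: "wf_seq ar F (Div N1 D1)"
    and dK: "HL ar K B" and e: "e \<in> gE K" and labK: "glab K e = N" and wfd: "wf_tp ar (Div N D)"
    and d0: "d0 \<in> gE D" "glab D d0 = None" and dis: "distinct (map fst ds)" and ids: "set (map fst ds) = gE D - {d0}"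
    and dersi: "\<forall>i<length ds. HL ar (snd (ds ! i)) (the (glab D (fst (ds ! i))))"
    and wG: "wf_seq ar (repls (repl K e (dtg N D d0)) (shift (eoff K) ds)) B" and tA: "tp_eq A (Div N D)"
  shows "HL ar (repl (repls (repl K e (dtg N D d0)) (shift (eoff K) ds)) (eoff K + d0) F) B"
proof -
  define Dt where "Dt = dtg N D d0"
  have wK: "wf_seq ar K B" by (rule deriv_wf[OF dK])
  note S = dl_setup[OF wK e labK wfd d0 dis ids dersi, folded Dt_def]
  note FF = dtg_facts[OF wfd d0, folded Dt_def]
  obtain Na Da where Aeq: "A = Div Na Da" and tNa: "tp_eq Na N" and gDa: "giso_rel (rel_option tp_eq) Da D"
    using tA by (rule tp_eq_DivE2) blast
  have cNa: "cutP ar Na" and cDa: "\<forall>d\<in>gE Da. \<forall>t. glab Da d = Some t \<longrightarrow> cutP ar t" using HD Aeq by blast+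
  have cN: "cutP ar N" by (rule cutP_eq[OF cNa tNa])
  obtain fa ga where isoa: "iso_via (rel_option tp_eq) fa ga Da D" using gDa unfolding giso_rel_iff by blast
  have cD: "\<And>d. d \<in> gE D - {d0} \<Longrightarrow> cutP ar (the (glab D d))"
  proof -
    fix d assume d: "d \<in> gE D - {d0}"
    have "glab D d \<noteq> None" using div_d0(2)[OF wfd d0] d by blast
    then obtain t where t: "glab D d = Some t" by blast
    obtain da where da: "da \<in> gE Da" "d = ga da" using iso_via_edge_inv[OF isoa] d by blast
    have r: "rel_option tp_eq (glab Da da) (Some t)" using iso_via_lab[OF isoa da(1)] da t by simp
    then obtain ta where ta: "glab Da da = Some ta" "tp_eq ta t" by (cases "glab Da da") auto
    have "cutP ar ta" using cDa da ta by blast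
    then show "cutP ar (the (glab D d))" using cutP_eq ta t by simp
  qed
  have "tp_eq (Div N1 D1) A" by (rule tp_eq_sym[OF eqA wfA])
  then have t2: "tp_eq (Div N1 D1) (Div N D)" using tA tp_eq_trans by blast
  obtain tN1 where tN1: "tp_eq N1 N" and gD1: "giso_rel (rel_option tp_eq) D1 D"
    using t2 by (rule tp_eq_DivE1) blast
  obtain f g where iso1: "iso_via (rel_option tp_eq) f g D1 D" using gD1 unfolding giso_rel_iff by blast
  have gd1: "g d1 = d0"
  proof -
    have "g d1 \<in> gE D" by (rule iso_via_edge[OF iso1 d1(1)])
    moreover have "glab D (g d1) = None" using iso_via_lab[OF iso1 d1(1)] d1(2) by (cases "glab D (g d1)") auto
    ultimately show ?thesis using div_d0(2)[OF wfd d0] by blast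
  qed
  have some: "\<forall>x\<in>gE D1 - {d1}. glab D1 x \<noteq> None" using div_d0(2)[OF wfD1 d1] by blast
  define D1r where "D1r = relab (map_hgraph the D1) d1 (Div N D)"
  have iso3: "iso_via tp_eq f g D1r Dt"
    unfolding D1r_def Dt_def dtg_def by (rule iso_the_relab[OF iso1 d1(1) gd1 some])
  have wfD1g: "wf_graph D1" using wfD1 by (rule wf_DivE) blast
  have fE1: "finite (gE D1)" using wfD1g unfolding wf_graph_def by blast
  have agree: "iso_via (=) id id (repl (map_hgraph the D1) d1 F) (repl D1r d1 F)"
  proof (rule iso_agree)
    fix x assume x: "x \<in> gE (repl (map_hgraph the D1) d1 F)"
    show "gatt (repl (map_hgraph the D1) d1 F) x = gatt (repl D1r d1 F) x \<and> glab (repl (map_hgraph the D1) d1 F) x = glab (repl D1r d1 F) x"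
    proof (cases "x < eoff D1")
      case True
      then have "x \<noteq> d1" using x by auto
      then show ?thesis using True unfolding D1r_def by (simp add: gatt_repl glab_repl)
    next
      case False then show ?thesis unfolding D1r_def by (simp add: gatt_repl glab_repl)
    qed
  qed (simp_all add: D1r_def)
  have P1': "HL ar (repl D1r d1 F) N1"
    using deriv_giso[OF P1 _ tp_eq_refl] agree iso_via_mono[OF agree, of tp_eq] tp_eq_refl unfolding giso_rel_iff by metis
  have wfFg: "wf_graph F" by (rule wf_seqD(1)[OF wF])
  have isoF: "iso_via tp_eq id id F F" by (rule iso_via_id[OF wfFg]) (rule tp_eq_refl)
  have lenF1: "length (gext F) = length (gatt D1r d1)"
    using wf_seqD(5)[OF wF] div_d0(1)[OF wfD1 d1] unfolding D1r_def by simp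
  have wfD1r: "wf_graph D1r" using wfD1g unfolding D1r_def by simp
  have "giso_rel tp_eq (repl D1r d1 F) (repl Dt (g d1) F)"
    by (rule L_cong[OF iso3 wfD1r _ isoF wfFg lenF1]) (use d1 in \<open>simp add: D1r_def\<close>)
  then have W0: "HL ar (repl Dt d0 F) N" using deriv_giso[OF P1' _ tN1] gd1 by simp
  have fEt: "finite (gE Dt)" using FF(1) unfolding wf_graph_def by blast
  have W: "HL ar (repls (repl Dt d0 F) ds) N"
  proof (rule seq_cut[OF W0 dis])
    show "set (map fst ds) \<subseteq> gE (repl Dt d0 F)" using S(7) ids by auto
    show "\<forall>i<length ds. HL ar (snd (ds ! i)) (glab (repl Dt d0 F) (fst (ds ! i))) \<and> cutP ar (glab (repl Dt d0 F) (fst (ds ! i)))"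
    proof (intro allI impI)
      fix i assume i: "i < length ds"
      have di: "fst (ds ! i) \<in> gE D - {d0}" using ids i by (metis nth_mem length_map nth_map)
      have "glab (repl Dt d0 F) (fst (ds ! i)) = the (glab D (fst (ds ! i)))"
        using di FF(2,6) fEt by simp
      then show "HL ar (snd (ds ! i)) (glab (repl Dt d0 F) (fst (ds ! i))) \<and> cutP ar (glab (repl Dt d0 F) (fst (ds ! i)))"
        using dersi i cD[OF di] by simp
    qed
  qed
  have R: "HL ar (repl K e (repls (repl Dt d0 F) ds)) B"
    by (rule cutP_use[OF cN W tp_eq_refl dK e]) (simp add: labK tp_eq_refl)
  have t12: "tp_type ar (Div N1 D1) = tp_type ar (Div N D)" using tp_eq_wf[OF t2 wfD1] by simp
  have lenF: "length (gext F) = length (gatt Dt d0)"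
    using wf_seqD(5)[OF wF] t12 div_d0(1)[OF wfd d0] FF(3) by simp
  have e0B: "eoff K + d0 \<in> gE (repl K e Dt)" "eoff K + d0 \<notin> set (map fst (shift (eoff K) ds))"
    using d0 FF(2) ids by (auto, force)
  have lenB: "length (gext F) = length (gatt (repl K e Dt) (eoff K + d0))" using lenF by simp
  have i1: "isoE (repl (repls (repl K e Dt) (shift (eoff K) ds)) (eoff K + d0) F) (repls (repl (repl K e Dt) (eoff K + d0) F) (shift (eoff K) ds))"
    by (rule repls_case_base[OF S(3,4,5,6) e0B wfFg lenB])
  have i2: "isoE (repls (repl (repl K e Dt) (eoff K + d0) F) (shift (eoff K) ds)) (repl K e (repls (repl Dt d0 F) ds))"
    by (rule L_divleft_princ[OF wf_seqD(1)[OF wK] e FF(1) S(1) _ dis _ S(2) wfFg lenF]) (use d0 FF(2) ids in auto)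
  show ?thesis using deriv_isoE[OF R isoE_sym[OF isoE_trans[OF i1 i2]]] unfolding Dt_def .
qed

lemma princ_times:
  fixes ar :: "'p \<Rightarrow> nat"
  assumes wfA: "wf_tp ar A" and HT: "\<forall>M. A = Times M \<longrightarrow> (\<forall>m\<in>gE M. cutP ar (glab M m))"
    and eqA: "tp_eq A (Times M1)" and wfM1: "wf_tp ar (Times M1)"
    and dis: "distinct (map fst ms)" and ids: "set (map fst ms) = gE M1"
    and dersi: "\<forall>i<length ms. HL ar (snd (ms ! i)) (glab M1 (fst (ms ! i)))"
    and dG: "HL ar (repl G e0 F) B" and e0: "e0 \<in> gE G" and lab: "glab G e0 = Times F" and wG: "wf_seq ar G B"
    and tA: "tp_eq A (Times F)"
  shows "HL ar (repl G e0 (repls M1 ms)) B"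
proof -
  obtain Ma where Aeq: "A = Times Ma" and gMa: "giso_rel tp_eq Ma M1" using eqA by (rule tp_eq_TimesE2) blast
  obtain fa ga where isoa: "iso_via tp_eq fa ga Ma M1" using gMa unfolding giso_rel_iff by blast
  have cM: "\<And>m. m \<in> gE M1 \<Longrightarrow> cutP ar (glab M1 m)"
  proof -
    fix m assume m: "m \<in> gE M1"
    obtain ma where ma: "ma \<in> gE Ma" "m = ga ma" using iso_via_edge_inv[OF isoa m] by blast
    have "cutP ar (glab Ma ma)" using HT Aeq ma by blast
    then show "cutP ar (glab M1 m)" using cutP_eq iso_via_lab[OF isoa ma(1)] ma by simp
  qed
  have "tp_eq (Times F) A" by (rule tp_eq_sym[OF tA wfA])
  then have t2: "tp_eq (Times F) (Times M1)" using eqA tp_eq_trans by blast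
  obtain gF where gF: "giso_rel tp_eq F M1" using t2 by (rule tp_eq_TimesE1) blast
  obtain \<phi> \<psi> where isoF: "iso_via tp_eq \<phi> \<psi> F M1" using gF unfolding giso_rel_iff by blast
  have wfTF: "wf_tp ar (Times F)" using wf_seqD(2)[OF wG e0] lab by simp
  have wfF: "wf_graph F" using wfTF by (rule wf_TimesE) blast
  have lenF: "length (gext F) = length (gatt G e0)" using wf_seqD(3)[OF wG e0] lab by simp
  have wfG: "wf_graph G" by (rule wf_seqD(1)[OF wG])
  have isoG: "iso_via tp_eq id id G G" by (rule iso_via_id[OF wfG]) (rule tp_eq_refl)
  have "giso_rel tp_eq (repl G e0 F) (repl G (id e0) M1)" by (rule L_cong[OF isoG wfG e0 isoF wfF lenF])
  then have dM: "HL ar (repl G e0 M1) B" using deriv_giso[OF dG _ tp_eq_refl] by simp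
  have fEG: "finite (gE G)" using wfG unfolding wf_graph_def by blast
  have R: "HL ar (repls (repl G e0 M1) (shift (eoff G) ms)) B"
  proof (rule seq_cut[OF dM distinct_shift[OF dis]])
    show "set (map fst (shift (eoff G) ms)) \<subseteq> gE (repl G e0 M1)" using ids by auto
    show "\<forall>i<length (shift (eoff G) ms). HL ar (snd (shift (eoff G) ms ! i)) (glab (repl G e0 M1) (fst (shift (eoff G) ms ! i)))
        \<and> cutP ar (glab (repl G e0 M1) (fst (shift (eoff G) ms ! i)))"
    proof (intro allI impI)
      fix i assume i: "i < length (shift (eoff G) ms)"
      then have i': "i < length ms" by simp
      have mi: "fst (ms ! i) \<in> gE M1" using ids i' by (metis nth_mem length_map nth_map)
      show "HL ar (snd (shift (eoff G) ms ! i)) (glab (repl G e0 M1) (fst (shift (eoff G) ms ! i)))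
        \<and> cutP ar (glab (repl G e0 M1) (fst (shift (eoff G) ms ! i)))"
        using dersi i' cM[OF mi] by simp
    qed
  qed
  have wfM1g: "wf_graph M1" and labM: "\<forall>m\<in>gE M1. wf_tp ar (glab M1 m) \<and> tp_type ar (glab M1 m) = length (gatt M1 m)"
    using wfM1 by (rule wf_TimesE, blast)+
  have lenM1: "length (gext M1) = length (gatt G e0)"
    using tp_eq_wf[OF t2 wfTF] lenF by simp
  have comp: "\<forall>p\<in>set ms. wf_graph (snd p) \<and> length (gext (snd p)) = length (gatt M1 (fst p))"
  proof
    fix p assume "p \<in> set ms"
    then obtain i where i: "i < length ms" "p = ms ! i" by (metis in_set_conv_nth)
    have w: "wf_seq ar (snd p) (glab M1 (fst p))" using deriv_wf dersi i by blast
    have "fst p \<in> gE M1" using ids i by (metis nth_mem length_map nth_map)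
    then show "wf_graph (snd p) \<and> length (gext (snd p)) = length (gatt M1 (fst p))"
      using wf_seqD(1,5)[OF w] labM by simp
  qed
  have "isoE (repls (repl G e0 M1) (shift (eoff G) ms)) (repl G e0 (repls M1 ms))"
    by (rule L_times_princ[OF wfG e0 wfM1g lenM1 dis _ comp]) (use ids in simp)
  then show ?thesis using deriv_isoE[OF R] by blast
qed


lemma cut_step:
  fixes ar :: "'p \<Rightarrow> nat"
  assumes wfA: "wf_tp ar A"
    and HD: "\<And>N D. A = Div N D \<Longrightarrow> cutP ar N \<and> (\<forall>d\<in>gE D. \<forall>t. glab D d = Some t \<longrightarrow> cutP ar t)"
    and HT: "\<And>M. A = Times M \<Longrightarrow> \<forall>m\<in>gE M. cutP ar (glab M m)"
  shows "cutP ar A"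
proof -
  have HD': "\<forall>N D. A = Div N D \<longrightarrow> cutP ar N \<and> (\<forall>d\<in>gE D. \<forall>t. glab D d = Some t \<longrightarrow> cutP ar t)" using HD by blast
  have HT': "\<forall>M. A = Times M \<longrightarrow> (\<forall>m\<in>gE M. cutP ar (glab M m))" using HT by blast
  have main: "HL ar H A1 \<Longrightarrow> \<forall>G B e0. tp_eq A A1 \<longrightarrow> HL ar G B \<longrightarrow> e0 \<in> gE G \<longrightarrow> tp_eq A (glab G e0) \<longrightarrow> HL ar (repl G e0 H) B"
    for H A1
  proof (induction rule: deriv.induct)
    case (ax p)
    show ?case
    proof (intro allI impI)
      fix G B e0 assume t1: "tp_eq A (Prim p)" and dG: "HL ar G B" and e0: "e0 \<in> gE G" and t2: "tp_eq A (glab G e0)"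
      have "A = Prim p" using t1 by (rule tp_eq_PrimE2) simp
      then have lab: "glab G e0 = Prim p" using t2 by (auto elim: tp_eq_PrimE1)
      have wG: "wf_seq ar G B" by (rule deriv_wf[OF dG])
      have len: "length (gatt G e0) = ar p" using wf_seqD(3)[OF wG e0] lab by simp
      show "HL ar (repl G e0 (handle (Prim p) (ar p))) B"
        by (rule deriv_isoE[OF dG L_ax[OF wf_seqD(1)[OF wG] e0 lab len]])
    qed
  next
    case (iso H0 A0 H A1)
    show ?case
    proof (intro allI impI)
      fix G B e0 assume t1: "tp_eq A A1" and dG: "HL ar G B" and e0: "e0 \<in> gE G" and t2: "tp_eq A (glab G e0)"
      have w0: "wf_seq ar H0 A0" by (rule deriv_wf[OF iso.hyps(1)])
      have "tp_eq A1 A0" by (rule tp_eq_sym[OF iso.hyps(3) wf_seqD(4)[OF w0]])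
      then have t0: "tp_eq A A0" using t1 tp_eq_trans by blast
      have d0: "HL ar (repl G e0 H0) B" using iso.IH t0 dG e0 t2 by blast
      have wG: "wf_seq ar G B" by (rule deriv_wf[OF dG])
      have wfG: "wf_graph G" by (rule wf_seqD(1)[OF wG])
      have isoG: "iso_via tp_eq id id G G" by (rule iso_via_id[OF wfG]) (rule tp_eq_refl)
      obtain f g where isoH: "iso_via tp_eq f g H0 H" using iso.hyps(2) unfolding giso_rel_iff by blast
      have len: "length (gext H0) = length (gatt G e0)"
        using wf_seqD(5)[OF w0] len_match[OF wfA t0 t2] wf_seqD(3)[OF wG e0] by simp
      have "giso_rel tp_eq (repl G e0 H0) (repl G (id e0) H)"
        by (rule L_cong[OF isoG wfG e0 isoH wf_seqD(1)[OF w0] len])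
      then show "HL ar (repl G e0 H) B" using deriv_giso[OF d0 _ tp_eq_refl] by simp
    qed
  next
    case (div_left K A1 e N D d0 ds H)
    define Dt where "Dt = dtg N D d0"
    have Heq: "H = repls (repl K e Dt) (shift (eoff K) ds)"
      unfolding Dt_def dtg_def using div_left.hyps(9) by (simp add: div_left_norm)
    have wK: "wf_seq ar K A1" by (rule deriv_wf[OF div_left.hyps(1)])
    have dersi: "\<forall>i<length ds. deriv ar False (snd (ds ! i)) (the (glab D (fst (ds ! i))))" using div_left.IH(2) by blast
    note S = dl_setup[OF wK div_left.hyps(2) div_left.hyps(3) div_left.hyps(4) div_left.hyps(5) div_left.hyps(6) div_left.hyps(7) div_left.hyps(8) dersi, folded Dt_def]
    note FF = dtg_facts[OF div_left.hyps(4) div_left.hyps(5) div_left.hyps(6), folded Dt_def]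
    show ?case
    proof (intro allI impI)
      fix G B e0 assume t1: "tp_eq A A1" and dG: "HL ar G B" and e0: "e0 \<in> gE G" and t2: "tp_eq A (glab G e0)"
      have wG: "wf_seq ar G B" by (rule deriv_wf[OF dG])
      have dK: "HL ar (repl G e0 K) B" using div_left.IH(1) t1 dG e0 t2 by blast
      have lenK: "length (gext K) = length (gatt G e0)"
        using wf_seqD(5)[OF wK] len_match[OF wfA t1 t2] wf_seqD(3)[OF wG e0] by simp
      define K' where "K' = repl G e0 K"
      have wR: "wf_seq ar (repl G e0 H) B"
        by (rule wf_seq_repl[OF wG e0 div_left.hyps(10)]) (use len_match[OF wfA t1 t2] wf_seqD(3)[OF wG e0] in simp)
      have i1: "isoE (repl G e0 H) (repls (repl K' (eoff G + e) Dt) (shift (eoff K') ds))"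
        unfolding Heq K'_def
        by (rule L_divleft_left[OF wf_seqD(1)[OF wG] e0 wf_seqD(1)[OF wK] lenK div_left.hyps(2) FF(1) S(1) div_left.hyps(7) S(7) S(2)])
      have wX: "wf_seq ar (repls (repl K' (eoff G + e) Dt) (shift (eoff K') ds)) B"
        using wf_seq_iso isoE_giso[OF i1] wR unfolding giso_rel_iff by blast
      have eK': "eoff G + e \<in> gE K'" "glab K' (eoff G + e) = N" unfolding K'_def using div_left.hyps(2,3) by auto
      have "HL ar (repls (repl K' (eoff G + e) Dt) (shift (eoff K') ds)) B"
        unfolding Dt_def
        by (rule div_left_n[OF dK[folded K'_def] eK' div_left.hyps(4) div_left.hyps(5) div_left.hyps(6) div_left.hyps(7) div_left.hyps(8) dersi])
           (rule wX[unfolded Dt_def])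
      then show "HL ar (repl G e0 H) B" using deriv_isoE isoE_sym[OF i1] by blast
    qed
  next
    case (div_right D1 d1 F N1)
    have P1: "HL ar (repl (map_hgraph the D1) d1 F) N1" using div_right.hyps(1) unfolding div_right_norm .
    show ?case
    proof (intro allI impI)
      fix G B e0 assume t1: "tp_eq A (Div N1 D1)" and dG: "HL ar G B" and e0: "e0 \<in> gE G" and t2: "tp_eq A (glab G e0)"
      have nP: "\<forall>p. A \<noteq> Prim p" using t1 by (auto elim: tp_eq_DivE2)
      have HF: "HL ar F (Div N1 D1)" by (rule deriv.div_right[OF div_right.hyps])
      have PDf: "\<And>K e N D d0 ds B. HL ar K B \<Longrightarrow> e \<in> gE K \<Longrightarrow> glab K e = N \<Longrightarrow> wf_tp ar (Div N D) \<Longrightarrow> d0 \<in> gE D \<Longrightarrow> glab D d0 = None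
       \<Longrightarrow> distinct (map fst ds) \<Longrightarrow> set (map fst ds) = gE D - {d0} \<Longrightarrow> (\<forall>i<length ds. HL ar (snd (ds ! i)) (the (glab D (fst (ds ! i)))))
       \<Longrightarrow> wf_seq ar (repls (repl K e (dtg N D d0)) (shift (eoff K) ds)) B \<Longrightarrow> tp_eq A (Div N D)
       \<Longrightarrow> HL ar (repl (repls (repl K e (dtg N D d0)) (shift (eoff K) ds)) (eoff K + d0) F) B"
        by (rule princ_div[OF wfA HD' t1 div_right.hyps(2,3,4) P1 div_right.hyps(5)])
      have PTf: "\<And>G e0 F' B. HL ar (repl G e0 F') B \<Longrightarrow> e0 \<in> gE G \<Longrightarrow> glab G e0 = Times F' \<Longrightarrow> wf_seq ar G B \<Longrightarrow> tp_eq A (Times F')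
       \<Longrightarrow> HL ar (repl G e0 F) B"
        using t1 by (auto elim!: tp_eq_TimesE2 tp_eq_DivE2)
      show "HL ar (repl G e0 F) B"
        apply (rule RI[OF wfA nP HF t1, rule_format])
        subgoal by (rule PDf) auto
        subgoal by (rule PTf)
        using dG e0 t2 by auto
    qed
  next
    case (times_left H e F A1)
    have wH: "wf_seq ar H A1" by (rule times_left.hyps(4))
    have wfTF: "wf_tp ar (Times F)" using wf_seqD(2)[OF wH times_left.hyps(2)] times_left.hyps(3) by simp
    have wfF: "wf_graph F" using wfTF by (rule wf_TimesE) blast
    have lenF: "length (gext F) = length (gatt H e)" using wf_seqD(3)[OF wH times_left.hyps(2)] times_left.hyps(3) by simp
    show ?case
    proof (intro allI impI)
      fix G B e0 assume t1: "tp_eq A A1" and dG: "HL ar G B" and e0: "e0 \<in> gE G" and t2: "tp_eq A (glab G e0)"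
      have wG: "wf_seq ar G B" by (rule deriv_wf[OF dG])
      have d1: "HL ar (repl G e0 (repl H e F)) B" using times_left.IH t1 dG e0 t2 by blast
      have lenH: "length (gext H) = length (gatt G e0)"
        using wf_seqD(5)[OF wH] len_match[OF wfA t1 t2] wf_seqD(3)[OF wG e0] by simp
      have i: "isoE (repl (repl G e0 H) (eoff G + e) F) (repl G e0 (repl H e F))"
        by (rule L_assoc[OF wf_seqD(1)[OF wG] e0 wf_seqD(1)[OF wH] lenH times_left.hyps(2) wfF lenF])
      have d2: "HL ar (repl (repl G e0 H) (eoff G + e) F) B" by (rule deriv_isoE[OF d1 isoE_sym[OF i]])
      have wR: "wf_seq ar (repl G e0 H) B"
        by (rule wf_seq_repl[OF wG e0 wH]) (use len_match[OF wfA t1 t2] wf_seqD(3)[OF wG e0] in simp)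
      show "HL ar (repl G e0 H) B"
        by (rule deriv.times_left[OF d2 _ _ wR]) (use times_left.hyps(2,3) in auto)
    qed
  next
    case (times_right ms M1 H)
    have dersi: "\<forall>i<length ms. HL ar (snd (ms ! i)) (glab M1 (fst (ms ! i)))"
    proof (intro allI impI)
      fix i assume "i < length ms"
      then show "HL ar (snd (ms ! i)) (glab M1 (fst (ms ! i)))" using times_right.IH by auto
    qed
    show ?case
    proof (intro allI impI)
      fix G B e0 assume t1: "tp_eq A (Times M1)" and dG: "HL ar G B" and e0: "e0 \<in> gE G" and t2: "tp_eq A (glab G e0)"
      have nP: "\<forall>p. A \<noteq> Prim p" using t1 by (auto elim: tp_eq_TimesE2)
      have HH: "HL ar H (Times M1)" by (rule deriv.times_right[OF times_right.hyps(1,2) dersi times_right.hyps(3,4,5)])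
      have PDf: "\<And>K e N D d0 ds B. HL ar K B \<Longrightarrow> e \<in> gE K \<Longrightarrow> glab K e = N \<Longrightarrow> wf_tp ar (Div N D) \<Longrightarrow> d0 \<in> gE D \<Longrightarrow> glab D d0 = None
       \<Longrightarrow> distinct (map fst ds) \<Longrightarrow> set (map fst ds) = gE D - {d0} \<Longrightarrow> (\<forall>i<length ds. HL ar (snd (ds ! i)) (the (glab D (fst (ds ! i)))))
       \<Longrightarrow> wf_seq ar (repls (repl K e (dtg N D d0)) (shift (eoff K) ds)) B \<Longrightarrow> tp_eq A (Div N D)
       \<Longrightarrow> HL ar (repl (repls (repl K e (dtg N D d0)) (shift (eoff K) ds)) (eoff K + d0) H) B"
        using t1 by (auto elim!: tp_eq_TimesE2 tp_eq_DivE2)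
      have PTf: "\<And>G e0 F B. HL ar (repl G e0 F) B \<Longrightarrow> e0 \<in> gE G \<Longrightarrow> glab G e0 = Times F \<Longrightarrow> wf_seq ar G B \<Longrightarrow> tp_eq A (Times F)
       \<Longrightarrow> HL ar (repl G e0 H) B"
        unfolding times_right.hyps(4)
        by (rule princ_times[OF wfA HT' t1 times_right.hyps(3,1,2) dersi])
      show "HL ar (repl G e0 H) B"
        apply (rule RI[OF wfA nP HH t1, rule_format])
        subgoal by (rule PDf) auto
        subgoal by (rule PTf)
        using dG e0 t2 by auto
    qed
  next
    case (cut_rule H A G B e0)
    then show ?case by simp
  qed
  show ?thesis unfolding cutP_def using main by blast
qed

lemma cut_adm: "wf_tp ar A \<Longrightarrow> cutP ar A"
proof (induction A)
  case (Prim p)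
  show ?case by (rule cut_step[OF Prim.prems]) auto
next
  case (Div N D)
  obtain d0 where d0: "d0 \<in> gE D" "glab D d0 = None" and wfN: "wf_tp ar N"
    and oth: "\<forall>d\<in>gE D - {d0}. \<exists>t. glab D d = Some t \<and> wf_tp ar t \<and> tp_type ar t = length (gatt D d)"
    using Div.prems by (rule wf_DivE) blast
  show ?case
  proof (rule cut_step[OF Div.prems])
    fix N' D' assume eq: "Div N D = Div N' D'"
    have "cutP ar N" using Div.IH(1) wfN by blast
    moreover have "\<forall>d\<in>gE D. \<forall>t. glab D d = Some t \<longrightarrow> cutP ar t"
    proof (intro ballI allI impI)
      fix d t assume d: "d \<in> gE D" and t: "glab D d = Some t"
      have "d \<noteq> d0" using d0 t by auto
      then obtain t' where "glab D d = Some t'" "wf_tp ar t'" using oth d by blast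
      then have "wf_tp ar t" using t by simp
      moreover have "Some t \<in> set_hgraph D" using t by (cases D) (auto simp: image_iff, metis)
      ultimately show "cutP ar t" using Div.IH(2) by auto
    qed
    ultimately show "cutP ar N' \<and> (\<forall>d\<in>gE D'. \<forall>t. glab D' d = Some t \<longrightarrow> cutP ar t)" using eq by simp
  qed simp
next
  case (Times M)
  have oth: "\<forall>m\<in>gE M. wf_tp ar (glab M m) \<and> tp_type ar (glab M m) = length (gatt M m)"
    using Times.prems by (rule wf_TimesE) blast
  show ?case
  proof (rule cut_step[OF Times.prems])
    fix M' assume eq: "Times M = Times M'"
    have "\<forall>m\<in>gE M. cutP ar (glab M m)"
    proof
      fix m assume m: "m \<in> gE M"
      have "glab M m \<in> set_hgraph M" by (cases M) auto
      then show "cutP ar (glab M m)" using Times.IH oth m by blast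
    qed
    then show "\<forall>m\<in>gE M'. cutP ar (glab M' m)" using eq by simp
  qed simp
qed

lemma cut_elim: "deriv ar c F B \<Longrightarrow> HL ar F B"
proof (induction rule: deriv.induct)
  case (ax p) then show ?case by (rule deriv.ax)
next
  case (iso H A H' A') show ?case by (rule deriv.iso[OF iso.IH iso.hyps(2,3,4)])
next
  case (div_left H A e N D d0 ds G)
  have "\<forall>i<length ds. HL ar (snd (ds ! i)) (the (glab D (fst (ds ! i))))" using div_left.IH(2) by blast
  then show ?case by (rule deriv.div_left[OF div_left.IH(1) div_left.hyps(2-8) _ div_left.hyps(9,10)])
next
  case (div_right D d0 F N) show ?case by (rule deriv.div_right[OF div_right.IH div_right.hyps(2-5)])
next
  case (times_left G e F A) show ?case by (rule deriv.times_left[OF times_left.IH times_left.hyps(2-4)])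
next
  case (times_right ms M G)
  have "\<forall>i<length ms. HL ar (snd (ms ! i)) (glab M (fst (ms ! i)))" using times_right.IH by blast
  then show ?case by (rule deriv.times_right[OF times_right.hyps(1,2) _ times_right.hyps(3-5)])
next
  case (cut_rule H A G B e0)
  have "cutP ar A" by (rule cut_adm[OF wf_seqD(4)[OF deriv_wf[OF cut_rule.IH(1)]]])
  then show ?case using cutP_use[OF _ cut_rule.IH(1) tp_eq_refl cut_rule.IH(2) cut_rule.hyps(4)] cut_rule.hyps(5) tp_eq_refl by blast
qed

theorem theorem6:
  fixes ar :: "'p \<Rightarrow> nat" and F :: "'p tp hgraph" and B :: "'p tp"
  assumes "\<forall>n. infinite {p. ar p = n}"
    and "wf_seq ar F B"
    and "HL_cut ar F B"
  shows "HL ar F B"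
  by (rule cut_elim[OF assms(3)])


end
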